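(* Consider the single-camp, two-phase problem with bias-dependent camp weights described in the context: maximize $\sum_i v_i^{(2)}$ over nonnegative vectors $\mathbf{x^{(1)}},\mathbf{x^{(2)}}\in\mathbb{R}^n$ with $\sum_i x_i^{(1)}+\sum_i x_i^{(2)}\le k_g$. There is an algorithm running in time polynomial in $n$ that computes an optimal solution, i.e., an optimal split of the budget between the two phases together with optimal investments on the nodes in each phase.
   Context: A social network has node set $N=\{1,\dots,n\}$ and a real $n\times n$ matrix $\mathbf{w}=(w_{ij})$ with $\sum_j|w_{ij}|<1$ for every $i$; write $\Delta=(\mathbf{I}-\mathbf{w})^{-1}$. Each node $i$ has an initial opinion $v_i^0$, a bias weight $w_{ii}^0$, and a total camp weight $\theta_i$. There is a single (good) camp with budget $k_g\ge 0$ choosing investments $\mathbf{x^{(1)}},\mathbf{x^{(2)}}\ge 0$ in phases 1 and 2. Opinions evolve by $\mathbf{v^{(0)}}=\mathbf{v^0}$ and for $p=1,2$: $\mathbf{v^{(p)}}=\Delta(\mathbf{w^0}\circ\mathbf{v^{(p-1)}}+\mathbf{w_g^{(p)}}\circ\mathbf{x^{(p)}})$, where $\circ$ is the entrywise product, $\mathbf{w^0}=(w_{ii}^0)_i$, and $w_{ig}^{(p)}=\theta_i\frac{1+w_{ii}^0 v_i^{(p-1)}}{2}$. The input data are $\mathbf{w},\mathbf{w^0},\mathbf{v^0},(\theta_i)_i,k_g$, and running time is measured in arithmetic operations. *)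

theory Defs
  imports Complex_Main
begin

definition matinv :: "nat \<Rightarrow> (nat \<Rightarrow> nat \<Rightarrow> real) \<Rightarrow> (nat \<Rightarrow> nat \<Rightarrow> real)" where
  "matinv n A = (THE B. (\<forall>i j. (n \<le> i \<or> n \<le> j) \<longrightarrow> B i j = 0)
      \<and> (\<forall>i<n. \<forall>j<n. (\<Sum>k<n. A i k * B k j) = (if i = j then 1 else 0))
      \<and> (\<forall>i<n. \<forall>j<n. (\<Sum>k<n. B i k * A k j) = (if i = j then 1 else 0)))"

definition Delta :: "nat \<Rightarrow> (nat \<Rightarrow> nat \<Rightarrow> real) \<Rightarrow> (nat \<Rightarrow> nat \<Rightarrow> real)" where
  "Delta n w = matinv n (\<lambda>i j. (if i = j then 1 else 0) - w i j)"

definition camp_weight :: "(nat \<Rightarrow> real) \<Rightarrow> (nat \<Rightarrow> real) \<Rightarrow> (nat \<Rightarrow> real) \<Rightarrow> nat \<Rightarrow> real" where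
  "camp_weight w0 theta v i = theta i * (1 + w0 i * v i) / 2"

definition phase :: "nat \<Rightarrow> (nat \<Rightarrow> nat \<Rightarrow> real) \<Rightarrow> (nat \<Rightarrow> real) \<Rightarrow> (nat \<Rightarrow> real)
    \<Rightarrow> (nat \<Rightarrow> real) \<Rightarrow> (nat \<Rightarrow> real) \<Rightarrow> (nat \<Rightarrow> real)" where
  "phase n w w0 theta v x = (\<lambda>i. \<Sum>j<n. Delta n w i j * (w0 j * v j + camp_weight w0 theta v j * x j))"

definition opinions2 :: "nat \<Rightarrow> (nat \<Rightarrow> nat \<Rightarrow> real) \<Rightarrow> (nat \<Rightarrow> real) \<Rightarrow> (nat \<Rightarrow> real)
    \<Rightarrow> (nat \<Rightarrow> real) \<Rightarrow> (nat \<Rightarrow> real) \<Rightarrow> (nat \<Rightarrow> real) \<Rightarrow> (nat \<Rightarrow> real)" where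
  "opinions2 n w w0 v0 theta x1 x2 = phase n w w0 theta (phase n w w0 theta v0 x1) x2"

definition objective :: "nat \<Rightarrow> (nat \<Rightarrow> nat \<Rightarrow> real) \<Rightarrow> (nat \<Rightarrow> real) \<Rightarrow> (nat \<Rightarrow> real)
    \<Rightarrow> (nat \<Rightarrow> real) \<Rightarrow> (nat \<Rightarrow> real) \<Rightarrow> (nat \<Rightarrow> real) \<Rightarrow> real" where
  "objective n w w0 v0 theta x1 x2 = (\<Sum>i<n. opinions2 n w w0 v0 theta x1 x2 i)"

definition feasible :: "nat \<Rightarrow> real \<Rightarrow> (nat \<Rightarrow> real) \<Rightarrow> (nat \<Rightarrow> real) \<Rightarrow> bool" where
  "feasible n k x1 x2 \<longleftrightarrow> (\<forall>i<n. 0 \<le> x1 i \<and> 0 \<le> x2 i)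
      \<and> (\<Sum>i<n. x1 i) + (\<Sum>i<n. x2 i) \<le> k"

definition optimal :: "nat \<Rightarrow> (nat \<Rightarrow> nat \<Rightarrow> real) \<Rightarrow> (nat \<Rightarrow> real) \<Rightarrow> (nat \<Rightarrow> real)
    \<Rightarrow> (nat \<Rightarrow> real) \<Rightarrow> real \<Rightarrow> (nat \<Rightarrow> real) \<Rightarrow> (nat \<Rightarrow> real) \<Rightarrow> bool" where
  "optimal n w w0 v0 theta k x1 x2 \<longleftrightarrow> feasible n k x1 x2 \<and>
     (\<forall>y1 y2. feasible n k y1 y2 \<longrightarrow>
        objective n w w0 v0 theta y1 y2 \<le> objective n w w0 v0 theta x1 x2)"

text \<open>Memory cells hold reals. Integer constants, the four field operations
  (division by zero is an error), comparison-based jumps, and indirect addressing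
  (only through cells holding natural numbers).\<close>
datatype instr =
    Const nat int
  | Add nat nat nat
  | Sub nat nat nat
  | Mul nat nat nat
  | Div nat nat nat
  | Load nat nat      (* m[i] := m[m[j]] *)
  | Store nat nat     (* m[m[j]] := m[i] *)
  | JmpLess nat nat nat  (* if m[j] < m[k] goto t *)
  | Jmp nat
  | Halt

type_synonym config = "nat \<times> (nat \<Rightarrow> real)"

definition step :: "instr list \<Rightarrow> config \<Rightarrow> config option" where
  "step P c = (case c of (pc, m) \<Rightarrow>
     if pc < length P then
       (case P ! pc of
          Const i z \<Rightarrow> Some (Suc pc, m(i := of_int z))
        | Add i j k \<Rightarrow> Some (Suc pc, m(i := m j + m k))
        | Sub i j k \<Rightarrow> Some (Suc pc, m(i := m j - m k))
        | Mul i j k \<Rightarrow> Some (Suc pc, m(i := m j * m k))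
        | Div i j k \<Rightarrow> (if m k = 0 then None else Some (Suc pc, m(i := m j / m k)))
        | Load i j \<Rightarrow> (if m j \<in> \<nat> then Some (Suc pc, m(i := m (nat \<lfloor>m j\<rfloor>))) else None)
        | Store i j \<Rightarrow> (if m j \<in> \<nat> then Some (Suc pc, m(nat \<lfloor>m j\<rfloor> := m i)) else None)
        | JmpLess j k t \<Rightarrow> Some (if m j < m k then t else Suc pc, m)
        | Jmp t \<Rightarrow> Some (t, m)
        | Halt \<Rightarrow> Some (pc, m))
     else None)"

fun exec :: "instr list \<Rightarrow> nat \<Rightarrow> config \<Rightarrow> config option" where
  "exec P 0 c = Some c"
| "exec P (Suc t) c = (case step P c of None \<Rightarrow> None | Some c' \<Rightarrow> exec P t c')"

definition halts_within :: "instr list \<Rightarrow> (nat \<Rightarrow> real) \<Rightarrow> nat \<Rightarrow> (nat \<Rightarrow> real) \<Rightarrow> bool" where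
  "halts_within P m0 T m \<longleftrightarrow> (\<exists>s\<le>T. \<exists>pc. exec P s (0, m0) = Some (pc, m)
       \<and> pc < length P \<and> P ! pc = Halt)"

definition init_mem :: "nat \<Rightarrow> real \<Rightarrow> (nat \<Rightarrow> nat \<Rightarrow> real) \<Rightarrow> (nat \<Rightarrow> real) \<Rightarrow> (nat \<Rightarrow> real)
    \<Rightarrow> (nat \<Rightarrow> real) \<Rightarrow> (nat \<Rightarrow> real)" where
  "init_mem n k w w0 v0 theta = (\<lambda>a.
     if a = 0 then real n
     else if a = 1 then k
     else if a < 2 + n then v0 (a - 2)
     else if a < 2 + 2*n then w0 (a - (2 + n))
     else if a < 2 + 3*n then theta (a - (2 + 2*n))
     else if a < 2 + 3*n + n*n then w ((a - (2 + 3*n)) div n) ((a - (2 + 3*n)) mod n)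
     else 0)"

definition out1 :: "nat \<Rightarrow> nat \<Rightarrow> nat" where "out1 n i = 2 + 3*n + n*n + i"
definition out2 :: "nat \<Rightarrow> nat \<Rightarrow> nat" where "out2 n i = 2 + 4*n + n*n + i"

end

theory Submission
  imports Defs "Jordan_Normal_Form.Determinant"
begin


lemma left_inv_right_inv:
  fixes A B :: "nat \<Rightarrow> nat \<Rightarrow> real"
  assumes BA: "\<forall>i<n. \<forall>j<n. (\<Sum>k<n. B i k * A k j) = (if i = j then 1 else 0)"
  shows "\<forall>i<n. \<forall>j<n. (\<Sum>k<n. A i k * B k j) = (if i = j then 1 else 0)"
proof -
  let ?A = "mat n n (\<lambda>(i,j). A i j)" and ?B = "mat n n (\<lambda>(i,j). B i j)"
  have sp: "\<And>X Y i j. i < n \<Longrightarrow> j < n \<Longrightarrow> (mat n n (\<lambda>(i,j). X i j) * mat n n (\<lambda>(i,j). Y i j)) $$ (i,j)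
     = (\<Sum>k<n. X i k * Y k j)"
    by (simp add: scalar_prod_def lessThan_atLeast0)
  have "?B * ?A = 1\<^sub>m n"
  proof (rule eq_matI)
    fix i j assume dd: "i < dim_row (1\<^sub>m n :: real mat)" "j < dim_col (1\<^sub>m n :: real mat)"
    then show "(?B * ?A) $$ (i, j) = 1\<^sub>m n $$ (i, j)"
    proof -
      have ij: "i < n" "j < n" using dd by auto
      show ?thesis using BA ij by (simp del: index_mult_mat add: sp[OF ij])
    qed
  qed auto
  then have "?A * ?B = 1\<^sub>m n"
    by (rule mat_mult_left_right_inverse[of ?B n ?A, rotated 2]) simp_all
  show ?thesis
  proof (intro allI impI)
    fix i j assume ij: "i < n" "j < n"
    have "(\<Sum>k<n. A i k * B k j) = (?A * ?B) $$ (i,j)" by (rule sp[OF ij, symmetric])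
    also have "\<dots> = (if i = j then 1 else 0)" using \<open>?A * ?B = 1\<^sub>m n\<close> ij by simp
    finally show "(\<Sum>k<n. A i k * B k j) = (if i = j then 1 else 0)" .
  qed
qed

lemma matinv_eq:
  fixes A B :: "nat \<Rightarrow> nat \<Rightarrow> real"
  assumes Z: "\<forall>i j. (n \<le> i \<or> n \<le> j) \<longrightarrow> B i j = 0"
    and BA: "\<forall>i<n. \<forall>j<n. (\<Sum>k<n. B i k * A k j) = (if i = j then 1 else 0)"
  shows "matinv n A = B"
proof -
  have AB: "\<forall>i<n. \<forall>j<n. (\<Sum>k<n. A i k * B k j) = (if i = j then 1 else 0)"
    using left_inv_right_inv[OF BA] .
  show ?thesis unfolding matinv_def
  proof (rule the_equality)
    show "(\<forall>i j. (n \<le> i \<or> n \<le> j) \<longrightarrow> B i j = 0) \<and>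
      (\<forall>i<n. \<forall>j<n. (\<Sum>k<n. A i k * B k j) = (if i = j then 1 else 0)) \<and>
      (\<forall>i<n. \<forall>j<n. (\<Sum>k<n. B i k * A k j) = (if i = j then 1 else 0))"
      using Z AB BA by (intro conjI)
  next
    fix C assume C: "(\<forall>i j. (n \<le> i \<or> n \<le> j) \<longrightarrow> C i j = 0) \<and>
      (\<forall>i<n. \<forall>j<n. (\<Sum>k<n. A i k * C k j) = (if i = j then 1 else 0)) \<and>
      (\<forall>i<n. \<forall>j<n. (\<Sum>k<n. C i k * A k j) = (if i = j then 1 else 0))"
    show "C = B"
    proof (intro ext)
      fix i j
      show "C i j = B i j"
      proof (cases "i < n \<and> j < n")
        case False then show ?thesis using C Z by auto
      next
        case True
        have "C i j = (\<Sum>k<n. (if k = j then C i k else 0))"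
          using True by (simp add: sum.delta')
        also have "\<dots> = (\<Sum>k<n. C i k * (if k = j then 1 else 0))"
          by (intro sum.cong) auto
        also have "\<dots> = (\<Sum>k<n. C i k * (\<Sum>l<n. A k l * B l j))"
          using AB True by (intro sum.cong) auto
        also have "\<dots> = (\<Sum>l<n. (\<Sum>k<n. C i k * A k l) * B l j)"
          by (simp add: sum_distrib_left sum_distrib_right mult.assoc) (rule sum.swap)
        also have "\<dots> = (\<Sum>l<n. (if i = l then B l j else 0))"
          using C True by (intro sum.cong) auto
        also have "\<dots> = B i j" using True by (simp add: sum.delta)
        finally show ?thesis .
      qed
    qed
  qed
qed


definition A0 :: "(nat \<Rightarrow> nat \<Rightarrow> real) \<Rightarrow> nat \<Rightarrow> nat \<Rightarrow> real" where
  "A0 w i j = (if i = j then 1 else 0) - w i j"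

definition G0 :: "nat \<Rightarrow> (nat \<Rightarrow> nat \<Rightarrow> real) \<Rightarrow> nat \<Rightarrow> nat \<Rightarrow> real" where
  "G0 n w i c = (if c < n then A0 w i c else if c - n = i then 1 else 0)"

definition gstep :: "nat \<Rightarrow> (nat \<Rightarrow> nat \<Rightarrow> real) \<Rightarrow> nat \<Rightarrow> nat \<Rightarrow> real" where
  "gstep j G i c = (if i = j then G j c / G j j else G i c - G i j * (G j c / G j j))"

primrec gj :: "nat \<Rightarrow> (nat \<Rightarrow> nat \<Rightarrow> real) \<Rightarrow> nat \<Rightarrow> nat \<Rightarrow> nat \<Rightarrow> real" where
  "gj n w 0 = G0 n w"
| "gj n w (Suc j) = gstep j (gj n w j)"

definition inv_lin :: "nat \<Rightarrow> (nat \<Rightarrow> nat \<Rightarrow> real) \<Rightarrow> (nat \<Rightarrow> nat \<Rightarrow> real) \<Rightarrow> bool" where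
  "inv_lin n A G \<longleftrightarrow> (\<forall>i<n. \<forall>c<n. G i c = (\<Sum>l<n. G i (n+l) * A l c))"

definition inv_unit :: "nat \<Rightarrow> nat \<Rightarrow> (nat \<Rightarrow> nat \<Rightarrow> real) \<Rightarrow> bool" where
  "inv_unit n j G \<longleftrightarrow> (\<forall>i<n. \<forall>c<j. G i c = (if i = c then 1 else 0))"

definition inv_dom :: "nat \<Rightarrow> nat \<Rightarrow> (nat \<Rightarrow> nat \<Rightarrow> real) \<Rightarrow> bool" where
  "inv_dom n j G \<longleftrightarrow> (\<forall>i. j \<le> i \<longrightarrow> i < n \<longrightarrow> (\<Sum>c\<in>{j..<n}-{i}. \<bar>G i c\<bar>) < \<bar>G i i\<bar>)"

lemma step_lin:
  assumes "j < n" "inv_lin n A G"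
  shows "inv_lin n A (gstep j G)"
  unfolding inv_lin_def
proof (intro allI impI)
  fix i c assume ic: "i < n" "c < n"
  have Lj: "G j c = (\<Sum>l<n. G j (n+l) * A l c)" using assms ic unfolding inv_lin_def by auto
  have Li: "G i c = (\<Sum>l<n. G i (n+l) * A l c)" using assms ic unfolding inv_lin_def by auto
  show "gstep j G i c = (\<Sum>l<n. gstep j G i (n+l) * A l c)"
  proof (cases "i = j")
    case True
    then show ?thesis unfolding gstep_def using Lj
      by (simp add: sum_divide_distrib algebra_simps)
  next
    case False
    have "gstep j G i c = G i c - G i j * (G j c / G j j)" using False by (simp add: gstep_def)
    also have "\<dots> = (\<Sum>l<n. G i (n+l) * A l c) - G i j * ((\<Sum>l<n. G j (n+l) * A l c) / G j j)"
      using Li Lj by simp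
    also have "\<dots> = (\<Sum>l<n. (G i (n+l) - G i j * (G j (n+l) / G j j)) * A l c)"
      by (simp add: sum_divide_distrib sum_distrib_left sum_subtractf algebra_simps)
    also have "\<dots> = (\<Sum>l<n. gstep j G i (n+l) * A l c)"
      using False by (simp add: gstep_def)
    finally show ?thesis .
  qed
qed

lemma dom_piv:
  assumes "j < n" "inv_dom n j G"
  shows "G j j \<noteq> 0"
proof -
  have "(\<Sum>c\<in>{j..<n}-{j}. \<bar>G j c\<bar>) < \<bar>G j j\<bar>" using assms unfolding inv_dom_def by auto
  moreover have "0 \<le> (\<Sum>c\<in>{j..<n}-{j}. \<bar>G j c\<bar>)" by (intro sum_nonneg) auto
  ultimately show ?thesis by linarith
qed

lemma step_unit:
  assumes "j < n" "inv_unit n j G" "G j j \<noteq> 0"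
  shows "inv_unit n (Suc j) (gstep j G)"
  unfolding inv_unit_def
proof (intro allI impI)
  fix i c assume ic: "i < n" "c < Suc j"
  show "gstep j G i c = (if i = c then 1 else 0)"
  proof (cases "c = j")
    case True then show ?thesis using assms by (auto simp: gstep_def)
  next
    case False
    then have cj: "c < j" using ic by auto
    have "G j c = 0" using assms cj unfolding inv_unit_def by auto
    moreover have "G i c = (if i = c then 1 else 0)" using assms cj ic unfolding inv_unit_def by auto
    ultimately show ?thesis using cj by (auto simp: gstep_def)
  qed
qed

lemma step_dom:
  assumes jn: "j < n" and D: "inv_dom n j G"
  shows "inv_dom n (Suc j) (gstep j G)"
  unfolding inv_dom_def
proof (intro allI impI)
  fix i assume i1: "Suc j \<le> i" and i2: "i < n"
  let ?p = "G j j"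
  have p0: "?p \<noteq> 0" using dom_piv[OF jn D] .
  define Ri where "Ri = (\<Sum>c\<in>{j..<n}-{i}. \<bar>G i c\<bar>)"
  define Rj where "Rj = (\<Sum>c\<in>{j..<n}-{j}. \<bar>G j c\<bar>)"
  have Ri_lt: "Ri < \<bar>G i i\<bar>" using D i1 i2 unfolding inv_dom_def Ri_def by auto
  have Rj_lt: "Rj < \<bar>?p\<bar>" using D jn unfolding inv_dom_def Rj_def by auto
  let ?S = "{Suc j..<n}-{i}"
  have set1: "{j..<n}-{i} = insert j ?S" using i1 i2 jn by auto
  have set2: "{j..<n}-{j} = insert i ?S" using i1 i2 jn by auto
  have Ri_eq: "Ri = \<bar>G i j\<bar> + (\<Sum>c\<in>?S. \<bar>G i c\<bar>)"
    unfolding Ri_def set1 by (subst sum.insert) auto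
  have Rj_eq: "Rj = \<bar>G j i\<bar> + (\<Sum>c\<in>?S. \<bar>G j c\<bar>)"
    unfolding Rj_def set2 by (subst sum.insert) auto
  let ?f = "\<bar>G i j\<bar> / \<bar>?p\<bar>"
  have f0: "0 \<le> ?f" by simp
  have "(\<Sum>c\<in>?S. \<bar>gstep j G i c\<bar>) = (\<Sum>c\<in>?S. \<bar>G i c - G i j * (G j c / ?p)\<bar>)"
    using i1 by (intro sum.cong) (auto simp: gstep_def)
  also have "\<dots> \<le> (\<Sum>c\<in>?S. \<bar>G i c\<bar> + ?f * \<bar>G j c\<bar>)"
  proof (intro sum_mono)
    fix c
    have "\<bar>G i c - G i j * (G j c / ?p)\<bar> \<le> \<bar>G i c\<bar> + \<bar>G i j * (G j c / ?p)\<bar>" by (rule abs_triangle_ineq4)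
    also have "\<bar>G i j * (G j c / ?p)\<bar> = ?f * \<bar>G j c\<bar>" by (simp add: abs_mult)
    finally show "\<bar>G i c - G i j * (G j c / ?p)\<bar> \<le> \<bar>G i c\<bar> + ?f * \<bar>G j c\<bar>" .
  qed
  also have "\<dots> = (Ri - \<bar>G i j\<bar>) + ?f * (Rj - \<bar>G j i\<bar>)"
    using Ri_eq Rj_eq by (simp add: sum.distrib sum_distrib_left)
  also have "\<dots> \<le> (Ri - \<bar>G i j\<bar>) + ?f * (\<bar>?p\<bar> - \<bar>G j i\<bar>)"
    using Rj_lt f0 by (intro add_left_mono mult_left_mono) auto
  also have "\<dots> = Ri - \<bar>G i j\<bar> * \<bar>G j i\<bar> / \<bar>?p\<bar>"
    using p0 by (simp add: field_simps)
  also have "\<dots> < \<bar>G i i\<bar> - \<bar>G i j * (G j i / ?p)\<bar>"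
    using Ri_lt by (simp add: abs_mult)
  also have "\<dots> \<le> \<bar>G i i - G i j * (G j i / ?p)\<bar>" by (rule abs_triangle_ineq2)
  also have "\<dots> = \<bar>gstep j G i i\<bar>" using i1 by (simp add: gstep_def)
  finally show "(\<Sum>c\<in>{Suc j..<n}-{i}. \<bar>gstep j G i c\<bar>) < \<bar>gstep j G i i\<bar>" .
qed

lemma G0_lin: "inv_lin n (A0 w) (G0 n w)"
  unfolding inv_lin_def
proof (intro allI impI)
  fix i c assume ic: "i < n" "c < n"
  have "(\<Sum>l<n. G0 n w i (n+l) * A0 w l c) = (\<Sum>l<n. if l = i then A0 w l c else 0)"
    by (intro sum.cong) (auto simp: G0_def)
  also have "\<dots> = A0 w i c" using ic by (simp add: sum.delta')
  finally show "G0 n w i c = (\<Sum>l<n. G0 n w i (n+l) * A0 w l c)" using ic by (simp add: G0_def)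
qed

lemma G0_dom:
  assumes W: "\<forall>i<n. (\<Sum>j<n. \<bar>w i j\<bar>) < 1"
  shows "inv_dom n 0 (G0 n w)"
  unfolding inv_dom_def
proof (intro allI impI)
  fix i assume i: "0 \<le> i" "i < n"
  have "(\<Sum>j<n. \<bar>w i j\<bar>) = \<bar>w i i\<bar> + (\<Sum>j\<in>{..<n}-{i}. \<bar>w i j\<bar>)"
    using i by (simp add: sum.remove)
  then have "(\<Sum>j\<in>{..<n}-{i}. \<bar>w i j\<bar>) < 1 - \<bar>w i i\<bar>" using W i by auto
  also have "1 - \<bar>w i i\<bar> \<le> \<bar>G0 n w i i\<bar>" using i by (simp add: G0_def A0_def)
  finally have *: "(\<Sum>j\<in>{..<n}-{i}. \<bar>w i j\<bar>) < \<bar>G0 n w i i\<bar>" .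
  have "(\<Sum>c\<in>{0..<n}-{i}. \<bar>G0 n w i c\<bar>) = (\<Sum>j\<in>{..<n}-{i}. \<bar>w i j\<bar>)"
    by (intro sum.cong) (auto simp: G0_def A0_def)
  then show "(\<Sum>c\<in>{0..<n}-{i}. \<bar>G0 n w i c\<bar>) < \<bar>G0 n w i i\<bar>" using * by simp
qed

lemma gj_inv:
  assumes W: "\<forall>i<n. (\<Sum>j<n. \<bar>w i j\<bar>) < 1"
  shows "j \<le> n \<Longrightarrow> inv_lin n (A0 w) (gj n w j) \<and> inv_unit n j (gj n w j) \<and> inv_dom n j (gj n w j)"
proof (induction j)
  case 0
  then show ?case using G0_lin G0_dom[OF W] by (simp add: inv_unit_def)
next
  case (Suc j)
  then have jn: "j < n" by simp
  from Suc have IH: "inv_lin n (A0 w) (gj n w j)" "inv_unit n j (gj n w j)" "inv_dom n j (gj n w j)" by auto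
  show ?case using step_lin[OF jn IH(1)] step_unit[OF jn IH(2) dom_piv[OF jn IH(3)]] step_dom[OF jn IH(3)]
    by simp
qed

lemma gj_piv:
  assumes W: "\<forall>i<n. (\<Sum>j<n. \<bar>w i j\<bar>) < 1" and "j < n"
  shows "gj n w j j j \<noteq> 0"
  using gj_inv[OF W, of j] assms dom_piv by auto

lemma Delta_gj:
  assumes W: "\<forall>i<n. (\<Sum>j<n. \<bar>w i j\<bar>) < 1"
  shows "Delta n w = (\<lambda>i j. if i < n \<and> j < n then gj n w n i (n+j) else 0)"
  unfolding Delta_def
proof (rule matinv_eq)
  have I: "inv_lin n (A0 w) (gj n w n)" "inv_unit n n (gj n w n)" using gj_inv[OF W, of n] by auto
  show "\<forall>i<n. \<forall>j<n. (\<Sum>k<n. (if i < n \<and> k < n then gj n w n i (n+k) else 0) * ((if k = j then 1 else 0) - w k j)) = (if i = j then 1 else 0)"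
  proof (intro allI impI)
    fix i j assume ij: "i < n" "j < n"
    have "(\<Sum>k<n. (if i < n \<and> k < n then gj n w n i (n+k) else 0) * ((if k = j then 1 else 0) - w k j))
        = (\<Sum>k<n. gj n w n i (n+k) * A0 w k j)" using ij by (intro sum.cong) (auto simp: A0_def)
    also have "\<dots> = gj n w n i j" using I(1) ij unfolding inv_lin_def by auto
    also have "\<dots> = (if i = j then 1 else 0)" using I(2) ij unfolding inv_unit_def by auto
    finally show "(\<Sum>k<n. (if i < n \<and> k < n then gj n w n i (n+k) else 0) * ((if k = j then 1 else 0) - w k j)) = (if i = j then 1 else 0)" .
  qed
qed auto


lemma tri:
  fixes \<alpha> \<beta> \<gamma> k t r V :: real
  assumes t0: "0 \<le> t" and r0: "0 \<le> r" and tr: "t + r \<le> k"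
    and V0: "0 \<le> V" and Va: "\<alpha> * k \<le> V" and Vb: "\<beta> * k \<le> V"
    and H: "\<gamma> > 0 \<Longrightarrow> 0 < (\<alpha> - \<beta> + \<gamma> * k) / (2 * \<gamma>) \<Longrightarrow> (\<alpha> - \<beta> + \<gamma> * k) / (2 * \<gamma>) < k \<Longrightarrow>
        \<alpha> * ((\<alpha> - \<beta> + \<gamma> * k) / (2 * \<gamma>)) + \<beta> * (k - (\<alpha> - \<beta> + \<gamma> * k) / (2 * \<gamma>))
        + \<gamma> * ((\<alpha> - \<beta> + \<gamma> * k) / (2 * \<gamma>)) * (k - (\<alpha> - \<beta> + \<gamma> * k) / (2 * \<gamma>)) \<le> V"
  shows "\<alpha> * t + \<beta> * r + \<gamma> * t * r \<le> V"
proof -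
  define q where "q s = \<alpha> * s + \<beta> * (k - s) + \<gamma> * s * (k - s)" for s
  have k0: "0 \<le> k" using t0 r0 tr by linarith
  have A: "\<alpha> * t \<le> V"
  proof (cases "\<alpha> \<ge> 0")
    case True then have "\<alpha> * t \<le> \<alpha> * k" using tr r0 by (intro mult_left_mono) auto
    then show ?thesis using Va by linarith
  next
    case False then have "\<alpha> * t \<le> 0" using t0 by (simp add: mult_nonpos_nonneg)
    then show ?thesis using V0 by linarith
  qed
  have Q: "q t \<le> V"
  proof (cases "\<gamma> > 0")
    case False
    show ?thesis
    proof (cases "k = 0")
      case True then have "t = 0" using t0 r0 tr by linarith
      then show ?thesis using True V0 by (simp add: q_def)
    next
      case False
      then have kp: "k > 0" using k0 by linarith
      have tk: "0 \<le> k - t" using tr r0 by linarith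
      have "k * q t = t * (\<alpha> * k) + (k - t) * (\<beta> * k) + k * \<gamma> * (t * (k - t))"
        by (simp add: q_def algebra_simps)
      also have "\<dots> \<le> t * V + (k - t) * V + 0"
      proof (intro add_mono mult_left_mono)
        have "k * \<gamma> \<le> 0" using kp \<open>\<not> \<gamma> > 0\<close> by (simp add: mult_nonneg_nonpos)
        moreover have "0 \<le> t * (k - t)" using t0 tk by simp
        ultimately show "k * \<gamma> * (t * (k - t)) \<le> 0" by (simp add: mult_nonpos_nonneg)
      qed (use Va Vb t0 tk in auto)
      also have "\<dots> = k * V" by (simp add: algebra_simps)
      finally show ?thesis using kp by simp
    qed
  next
    case True
    define ts where "ts = (\<alpha> - \<beta> + \<gamma> * k) / (2 * \<gamma>)"
    have qid: "q s = q ts - \<gamma> * (s - ts)^2" for s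
      using True by (simp add: q_def ts_def field_simps power2_eq_square)
    show ?thesis
    proof (cases "ts \<le> 0")
      case True
      have "(0 - ts)^2 \<le> (t - ts)^2" using True t0 by (intro power_mono) auto
      then have "q t \<le> q 0" using qid[of t] qid[of 0] \<open>\<gamma> > 0\<close>
        by (smt (verit) mult_left_mono)
      also have "q 0 = \<beta> * k" by (simp add: q_def)
      finally show ?thesis using Vb by linarith
    next
      case False
      show ?thesis
      proof (cases "ts \<ge> k")
        case True
        have "(k - ts)^2 \<le> (t - ts)^2"
        proof -
          have "(ts - k)^2 \<le> (ts - t)^2" using True tr r0 by (intro power_mono) auto
          then show ?thesis by (simp add: power2_commute)
        qed
        then have "q t \<le> q k" using qid[of t] qid[of k] \<open>\<gamma> > 0\<close>
          by (smt (verit) mult_left_mono)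
        also have "q k = \<alpha> * k" by (simp add: q_def)
        finally show ?thesis using Va by linarith
      next
        case False
        have "q t \<le> q ts" using qid[of t] \<open>\<gamma> > 0\<close> by (simp add: mult_nonneg_nonneg)
        also have "q ts \<le> V" using H[OF \<open>\<gamma> > 0\<close>] \<open>\<not> ts \<le> 0\<close> False unfolding q_def ts_def by auto
        finally show ?thesis .
      qed
    qed
  qed
  show ?thesis
  proof (cases "\<beta> + \<gamma> * t \<ge> 0")
    case True
    have "\<alpha> * t + \<beta> * r + \<gamma> * t * r = \<alpha> * t + r * (\<beta> + \<gamma> * t)" by (simp add: algebra_simps)
    also have "\<dots> \<le> \<alpha> * t + (k - t) * (\<beta> + \<gamma> * t)" using True tr by (intro add_left_mono mult_right_mono) auto
    also have "\<dots> = q t" by (simp add: q_def algebra_simps)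
    finally show ?thesis using Q by linarith
  next
    case False
    have "\<alpha> * t + \<beta> * r + \<gamma> * t * r = \<alpha> * t + r * (\<beta> + \<gamma> * t)" by (simp add: algebra_simps)
    also have "\<dots> \<le> \<alpha> * t" using False r0 by (simp add: mult_nonneg_nonpos)
    finally show ?thesis using A by linarith
  qed
qed

lemma argmax_ex:
  fixes f :: "nat \<Rightarrow> real"
  assumes "0 < n"
  shows "\<exists>a<n. \<forall>a'<n. f a' \<le> f a"
proof -
  have fin: "finite (f ` {..<n})" and ne: "f ` {..<n} \<noteq> {}" using assms by auto
  obtain a where a: "a < n" "f a = Max (f ` {..<n})" using Max_in[OF fin ne] by auto
  then show ?thesis using Max_ge[OF fin] by auto
qed

lemma lin_le_max:
  fixes c y :: "nat \<Rightarrow> real"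
  assumes "\<forall>a<n. 0 \<le> y a" "\<forall>a'<n. c a' \<le> C"
  shows "(\<Sum>a<n. c a * y a) \<le> C * (\<Sum>a<n. y a)"
proof -
  have "(\<Sum>a<n. c a * y a) \<le> (\<Sum>a<n. C * y a)"
    using assms by (intro sum_mono mult_right_mono) auto
  then show ?thesis by (simp add: sum_distrib_left)
qed

lemma reduce:
  fixes al be :: "nat \<Rightarrow> real" and ga :: "nat \<Rightarrow> nat \<Rightarrow> real"
  assumes n: "0 < n" and y1: "\<forall>a<n. 0 \<le> y1 a" and y2: "\<forall>b<n. 0 \<le> y2 b"
  shows "\<exists>a<n. \<exists>b<n. (\<Sum>a<n. al a * y1 a) + (\<Sum>b<n. be b * y2 b) + (\<Sum>a<n. \<Sum>b<n. ga a b * y1 a * y2 b)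
     \<le> al a * (\<Sum>a<n. y1 a) + be b * (\<Sum>b<n. y2 b) + ga a b * (\<Sum>a<n. y1 a) * (\<Sum>b<n. y2 b)"
proof -
  define S1 where "S1 = (\<Sum>a<n. y1 a)"
  define S2 where "S2 = (\<Sum>b<n. y2 b)"
  define c where "c a = al a + (\<Sum>b<n. ga a b * y2 b)" for a
  obtain a where a: "a < n" "\<forall>a'<n. c a' \<le> c a" using argmax_ex[OF n, of c] by auto
  define d where "d b = be b + ga a b * S1" for b
  obtain b where b: "b < n" "\<forall>b'<n. d b' \<le> d b" using argmax_ex[OF n, of d] by auto
  have "(\<Sum>a<n. al a * y1 a) + (\<Sum>b<n. be b * y2 b) + (\<Sum>a<n. \<Sum>b<n. ga a b * y1 a * y2 b)
      = (\<Sum>a<n. c a * y1 a) + (\<Sum>b<n. be b * y2 b)"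
    by (simp add: c_def sum.distrib algebra_simps sum_distrib_left sum_distrib_right)
  also have "\<dots> \<le> c a * S1 + (\<Sum>b<n. be b * y2 b)"
    unfolding S1_def using lin_le_max[OF y1 a(2)] by simp
  also have "\<dots> = al a * S1 + (\<Sum>b<n. d b * y2 b)"
    by (simp add: c_def d_def S1_def sum.distrib algebra_simps sum_distrib_left sum_distrib_right)
  also have "\<dots> \<le> al a * S1 + d b * S2"
    unfolding S2_def using lin_le_max[OF y2 b(2)] by simp
  also have "\<dots> = al a * S1 + be b * S2 + ga a b * S1 * S2" by (simp add: d_def algebra_simps)
  finally show ?thesis unfolding S1_def S2_def using a b by blast
qed


definition "sv n w j = (\<Sum>i<n. Delta n w i j)"
definition "pv n w w0 v0 j = (\<Sum>a<n. Delta n w j a * (w0 a * v0 a))"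
definition "g1 w0 v0 theta a = theta a * (1 + w0 a * v0 a) / 2"
definition "zv n w w0 a = (\<Sum>j<n. sv n w j * w0 j * Delta n w j a)"
definition "al n w w0 v0 theta a = g1 w0 v0 theta a * zv n w w0 a"
definition "be n w w0 v0 theta b = sv n w b * theta b * (1 + w0 b * pv n w w0 v0 b) / 2"
definition "cc n w w0 theta b = sv n w b * theta b * w0 b / 2"
definition "ga n w w0 v0 theta a b = cc n w w0 theta b * Delta n w b a * g1 w0 v0 theta a"
definition "C0 n w w0 v0 = (\<Sum>j<n. sv n w j * w0 j * pv n w w0 v0 j)"

lemma obj_formula:
  "objective n w w0 v0 theta x1 x2 = C0 n w w0 v0 + (\<Sum>a<n. al n w w0 v0 theta a * x1 a)
     + (\<Sum>b<n. be n w w0 v0 theta b * x2 b) + (\<Sum>a<n. \<Sum>b<n. ga n w w0 v0 theta a b * x1 a * x2 b)"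
proof -
  let ?D = "Delta n w"
  define v1 where "v1 = phase n w w0 theta v0 x1"
  define q where "q j = (\<Sum>a<n. ?D j a * g1 w0 v0 theta a * x1 a)" for j
  have v1: "v1 j = pv n w w0 v0 j + q j" for j
    unfolding v1_def phase_def pv_def q_def camp_weight_def g1_def
    by (simp add: sum.distrib algebra_simps)
  have "objective n w w0 v0 theta x1 x2 = (\<Sum>i<n. \<Sum>j<n. ?D i j * (w0 j * v1 j + camp_weight w0 theta v1 j * x2 j))"
    unfolding objective_def opinions2_def v1_def phase_def by simp
  also have "\<dots> = (\<Sum>j<n. sv n w j * (w0 j * v1 j + camp_weight w0 theta v1 j * x2 j))"
    unfolding sv_def by (subst sum.swap) (simp add: sum_distrib_right)
  also have "\<dots> = (\<Sum>j<n. sv n w j * w0 j * pv n w w0 v0 j) + (\<Sum>j<n. sv n w j * w0 j * q j)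
       + (\<Sum>j<n. be n w w0 v0 theta j * x2 j) + (\<Sum>j<n. cc n w w0 theta j * q j * x2 j)"
    unfolding v1 camp_weight_def be_def cc_def by (simp add: sum.distrib[symmetric] algebra_simps add_divide_distrib)
  also have "(\<Sum>j<n. sv n w j * w0 j * q j) = (\<Sum>a<n. al n w w0 v0 theta a * x1 a)"
    unfolding q_def al_def zv_def
    by (simp add: sum_distrib_left sum_distrib_right algebra_simps) (rule sum.swap)
  also have "(\<Sum>j<n. cc n w w0 theta j * q j * x2 j) = (\<Sum>a<n. \<Sum>b<n. ga n w w0 v0 theta a b * x1 a * x2 b)"
    unfolding q_def ga_def
    by (simp add: sum_distrib_left sum_distrib_right algebra_simps) (rule sum.swap)
  finally show ?thesis unfolding C0_def by simp
qed


lemma sum_delta_at: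
  fixes t :: real and a n :: nat
  assumes "a < n" "\<forall>i<n. x i = (if i = a then t else 0)"
  shows "(\<Sum>i<n. f i * x i) = f a * t"
proof -
  have "(\<Sum>i<n. f i * x i) = (\<Sum>i<n. if i = a then f i * t else 0)"
    using assms by (intro sum.cong) auto
  also have "\<dots> = f a * t" using assms by (simp add: sum.delta)
  finally show ?thesis .
qed

lemma obj_cong:
  assumes "\<forall>i<n. x1 i = y1 i" "\<forall>i<n. x2 i = y2 i"
  shows "objective n w w0 v0 theta x1 x2 = objective n w w0 v0 theta y1 y2"
proof -
  have e1: "(\<Sum>a<n. al n w w0 v0 theta a * x1 a) = (\<Sum>a<n. al n w w0 v0 theta a * y1 a)"
    using assms by (intro sum.cong) auto
  have e2: "(\<Sum>a<n. be n w w0 v0 theta a * x2 a) = (\<Sum>a<n. be n w w0 v0 theta a * y2 a)"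
    using assms by (intro sum.cong) auto
  have e3: "(\<Sum>a<n. \<Sum>b<n. ga n w w0 v0 theta a b * x1 a * x2 b) = (\<Sum>a<n. \<Sum>b<n. ga n w w0 v0 theta a b * y1 a * y2 b)"
    using assms by (intro sum.cong) auto
  show ?thesis unfolding obj_formula e1 e2 e3 ..
qed

lemma optimal_from_search:
  fixes n :: nat and w :: "nat \<Rightarrow> nat \<Rightarrow> real" and w0 v0 theta :: "nat \<Rightarrow> real"
    and k t r V :: real
  defines "A \<equiv> al n w w0 v0 theta" and "B \<equiv> be n w w0 v0 theta" and "\<Gamma> \<equiv> ga n w w0 v0 theta"
  assumes n: "0 < n" and ab: "a < n" "b < n" and t0: "0 \<le> t" and r0: "0 \<le> r" and tr: "t + r \<le> k"
    and V: "V = A a * t + B b * r + \<Gamma> a b * t * r"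
    and cand: "\<forall>a'<n. \<forall>b'<n. 0 \<le> V \<and> A a' * k \<le> V \<and> B b' * k \<le> V \<and>
      (\<Gamma> a' b' > 0 \<longrightarrow> 0 < (A a' - B b' + \<Gamma> a' b' * k) / (2 * \<Gamma> a' b') \<longrightarrow>
        (A a' - B b' + \<Gamma> a' b' * k) / (2 * \<Gamma> a' b') < k \<longrightarrow>
        A a' * ((A a' - B b' + \<Gamma> a' b' * k) / (2 * \<Gamma> a' b'))
        + B b' * (k - (A a' - B b' + \<Gamma> a' b' * k) / (2 * \<Gamma> a' b'))
        + \<Gamma> a' b' * ((A a' - B b' + \<Gamma> a' b' * k) / (2 * \<Gamma> a' b')) * (k - (A a' - B b' + \<Gamma> a' b' * k) / (2 * \<Gamma> a' b')) \<le> V)"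
    and x1: "\<forall>i<n. x1 i = (if i = a then t else 0)"
    and x2: "\<forall>i<n. x2 i = (if i = b then r else 0)"
  shows "optimal n w w0 v0 theta k x1 x2"
proof -
  have s1: "(\<Sum>i<n. x1 i) = t" using sum_delta_at[OF ab(1) x1, of "\<lambda>_. 1"] by simp
  have s2: "(\<Sum>i<n. x2 i) = r" using sum_delta_at[OF ab(2) x2, of "\<lambda>_. 1"] by simp
  have feas: "feasible n k x1 x2" unfolding feasible_def using s1 s2 tr x1 x2 t0 r0 by auto
  have dd: "(\<Sum>a'<n. \<Sum>b'<n. \<Gamma> a' b' * x1 a' * x2 b') = \<Gamma> a b * t * r"
  proof -
    have "(\<Sum>a'<n. \<Sum>b'<n. \<Gamma> a' b' * x1 a' * x2 b') = (\<Sum>a'<n. (\<Sum>b'<n. \<Gamma> a' b' * x2 b') * x1 a')"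
      by (simp add: sum_distrib_left sum_distrib_right mult_ac)
    also have "\<dots> = (\<Sum>b'<n. \<Gamma> a b' * x2 b') * t" by (rule sum_delta_at[OF ab(1) x1])
    also have "(\<Sum>b'<n. \<Gamma> a b' * x2 b') = \<Gamma> a b * r" by (rule sum_delta_at[OF ab(2) x2])
    finally show ?thesis by simp
  qed
  have objx: "objective n w w0 v0 theta x1 x2 = C0 n w w0 v0 + V"
    unfolding obj_formula V A_def[symmetric] B_def[symmetric] \<Gamma>_def[symmetric]
    using sum_delta_at[OF ab(1) x1, of A] sum_delta_at[OF ab(2) x2, of B] dd by simp
  show ?thesis unfolding optimal_def
  proof (intro conjI feas allI impI)
    fix y1 y2 assume fy: "feasible n k y1 y2"
    have y1: "\<forall>a<n. 0 \<le> y1 a" and y2: "\<forall>b<n. 0 \<le> y2 b" and yk: "(\<Sum>i<n. y1 i) + (\<Sum>i<n. y2 i) \<le> k"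
      using fy unfolding feasible_def by auto
    obtain a' b' where ab': "a' < n" "b' < n" and
      le: "(\<Sum>a<n. A a * y1 a) + (\<Sum>b<n. B b * y2 b) + (\<Sum>a<n. \<Sum>b<n. \<Gamma> a b * y1 a * y2 b)
     \<le> A a' * (\<Sum>a<n. y1 a) + B b' * (\<Sum>b<n. y2 b) + \<Gamma> a' b' * (\<Sum>a<n. y1 a) * (\<Sum>b<n. y2 b)"
      using reduce[OF n y1 y2, of A B \<Gamma>] by blast
    have S0: "0 \<le> (\<Sum>a<n. y1 a)" "0 \<le> (\<Sum>a<n. y2 a)" using y1 y2 by (auto intro: sum_nonneg)
    have "A a' * (\<Sum>a<n. y1 a) + B b' * (\<Sum>b<n. y2 b) + \<Gamma> a' b' * (\<Sum>a<n. y1 a) * (\<Sum>b<n. y2 b) \<le> V"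
      using cand ab' by (intro tri[OF S0 yk]) auto
    have "objective n w w0 v0 theta y1 y2 = C0 n w w0 v0 + ((\<Sum>a<n. A a * y1 a) + (\<Sum>b<n. B b * y2 b) + (\<Sum>a<n. \<Sum>b<n. \<Gamma> a b * y1 a * y2 b))"
      unfolding obj_formula A_def \<Gamma>_def B_def by simp
    then show "objective n w w0 v0 theta y1 y2 \<le> objective n w w0 v0 theta x1 x2"
      unfolding objx using le \<open>_ \<le> V\<close> by linarith
  qed
qed


type_synonym mem = "nat \<Rightarrow> real"

definition astep :: "instr \<Rightarrow> mem \<Rightarrow> mem option" where
  "astep ins m = (case ins of
          Const i z \<Rightarrow> Some (m(i := of_int z))
        | Add i j k \<Rightarrow> Some (m(i := m j + m k))
        | Sub i j k \<Rightarrow> Some (m(i := m j - m k))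
        | Mul i j k \<Rightarrow> Some (m(i := m j * m k))
        | Div i j k \<Rightarrow> (if m k = 0 then None else Some (m(i := m j / m k)))
        | Load i j \<Rightarrow> (if m j \<in> \<nat> then Some (m(i := m (nat \<lfloor>m j\<rfloor>))) else None)
        | Store i j \<Rightarrow> (if m j \<in> \<nat> then Some (m(nat \<lfloor>m j\<rfloor> := m i)) else None)
        | JmpLess j k t \<Rightarrow> None
        | Jmp t \<Rightarrow> None
        | Halt \<Rightarrow> None)"

lemma astep_simps[simp]:
  "astep (Const i z) m = Some (m(i := of_int z))"
  "astep (Add i j k) m = Some (m(i := m j + m k))"
  "astep (Sub i j k) m = Some (m(i := m j - m k))"
  "astep (Mul i j k) m = Some (m(i := m j * m k))"
  "astep (Div i j k) m = (if m k = 0 then None else Some (m(i := m j / m k)))"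
  "astep (Load i j) m = (if m j \<in> \<nat> then Some (m(i := m (nat \<lfloor>m j\<rfloor>))) else None)"
  "astep (Store i j) m = (if m j \<in> \<nat> then Some (m(nat \<lfloor>m j\<rfloor> := m i)) else None)"
  "astep (JmpLess j k t) m = None"
  "astep (Jmp t) m = None"
  "astep Halt m = None"
  by (simp_all add: astep_def)

lemma step_atom:
  assumes "pc < length P" "P ! pc = ins" "astep ins m = Some m'"
  shows "step P (pc, m) = Some (Suc pc, m')"
  using assms by (cases ins) (auto simp: step_def astep_def split: if_splits)

lemma step_jmpless:
  assumes "pc < length P" "P ! pc = JmpLess j k t"
  shows "step P (pc, m) = Some (if m j < m k then t else Suc pc, m)"
  using assms by (simp add: step_def)

lemma step_jmp:
  assumes "pc < length P" "P ! pc = Jmp t"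
  shows "step P (pc, m) = Some (t, m)"
  using assms by (simp add: step_def)

lemma exec_add: "exec P (a + b) c = (case exec P a c of None \<Rightarrow> None | Some c' \<Rightarrow> exec P b c')"
proof (induction a arbitrary: c)
  case 0 then show ?case by simp
next
  case (Suc a) then show ?case by (simp split: option.splits)
qed

lemma exec_step_Some:
  assumes "step P c = Some c'" shows "exec P (Suc t) c = exec P t c'"
  using assms by simp

datatype com = Skip | Atom instr | Seq com com | While nat nat com | IfLess nat nat com com

fun clen :: "com \<Rightarrow> nat" where
  "clen Skip = 0"
| "clen (Atom i) = 1"
| "clen (Seq c1 c2) = clen c1 + clen c2"
| "clen (While a b c) = clen c + 3"
| "clen (IfLess a b c1 c2) = clen c1 + clen c2 + 2"

fun compile :: "nat \<Rightarrow> com \<Rightarrow> instr list" where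
  "compile p Skip = []"
| "compile p (Atom i) = [i]"
| "compile p (Seq c1 c2) = compile p c1 @ compile (p + clen c1) c2"
| "compile p (While a b c) = [JmpLess a b (p+2), Jmp (p + 3 + clen c)] @ compile (p+2) c @ [Jmp p]"
| "compile p (IfLess a b c1 c2) = [JmpLess a b (p + 2 + clen c2)] @ compile (p+1) c2
      @ [Jmp (p + 2 + clen c2 + clen c1)] @ compile (p + 2 + clen c2) c1"

lemma length_compile[simp]: "length (compile p c) = clen c"
  by (induction c arbitrary: p) auto

inductive bs :: "com \<Rightarrow> mem \<Rightarrow> nat \<Rightarrow> mem \<Rightarrow> bool" where
  bsSkip: "bs Skip m 0 m"
| bsAtom: "astep i m = Some m' \<Longrightarrow> bs (Atom i) m 1 m'"
| bsSeq: "bs c1 m t1 m1 \<Longrightarrow> bs c2 m1 t2 m2 \<Longrightarrow> bs (Seq c1 c2) m (t1 + t2) m2"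
| bsWF: "\<not> m a < m b \<Longrightarrow> bs (While a b c) m 2 m"
| bsWT: "m a < m b \<Longrightarrow> bs c m t1 m1 \<Longrightarrow> bs (While a b c) m1 t2 m2 \<Longrightarrow> bs (While a b c) m (t1 + t2 + 2) m2"
| bsIT: "m a < m b \<Longrightarrow> bs c1 m t m' \<Longrightarrow> bs (IfLess a b c1 c2) m (t + 1) m'"
| bsIF: "\<not> m a < m b \<Longrightarrow> bs c2 m t m' \<Longrightarrow> bs (IfLess a b c1 c2) m (t + 2) m'"

definition code_at :: "instr list \<Rightarrow> nat \<Rightarrow> instr list \<Rightarrow> bool" where
  "code_at P p xs \<longleftrightarrow> (\<forall>k<length xs. p + k < length P \<and> P ! (p + k) = xs ! k)"

lemma code_at_append: "code_at P p (xs @ ys) \<longleftrightarrow> code_at P p xs \<and> code_at P (p + length xs) ys"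
proof
  assume H: "code_at P p (xs @ ys)"
  show "code_at P p xs \<and> code_at P (p + length xs) ys"
    unfolding code_at_def
  proof (rule conjI; intro allI impI)
    fix k assume k: "k < length xs"
    then show "p + k < length P \<and> P ! (p + k) = xs ! k" using H[unfolded code_at_def, rule_format, of k]
      by (simp add: nth_append)
  next
    fix k assume k: "k < length ys"
    then show "p + length xs + k < length P \<and> P ! (p + length xs + k) = ys ! k"
      using H[unfolded code_at_def, rule_format, of "length xs + k"]
      by (simp add: nth_append add.assoc)
  qed
next
  assume H: "code_at P p xs \<and> code_at P (p + length xs) ys"
  show "code_at P p (xs @ ys)" unfolding code_at_def
  proof (intro allI impI)
    fix k assume k: "k < length (xs @ ys)"
    show "p + k < length P \<and> P ! (p + k) = (xs @ ys) ! k"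
    proof (cases "k < length xs")
      case True then show ?thesis using H unfolding code_at_def by (simp add: nth_append)
    next
      case False
      then obtain j where j: "k = length xs + j" by (metis le_add_diff_inverse not_less)
      then have "j < length ys" using k by simp
      then show ?thesis using H j unfolding code_at_def by (simp add: nth_append add.assoc)
    qed
  qed
qed

lemma code_at_Cons: "code_at P p (x # xs) \<longleftrightarrow> p < length P \<and> P ! p = x \<and> code_at P (Suc p) xs"
proof -
  have "code_at P p (x # xs) = code_at P p ([x] @ xs)" by simp
  also have "\<dots> \<longleftrightarrow> code_at P p [x] \<and> code_at P (Suc p) xs" using code_at_append[of P p "[x]" xs] by simp
  also have "code_at P p [x] \<longleftrightarrow> p < length P \<and> P ! p = x" by (simp add: code_at_def)
  finally show ?thesis by simp
qed

lemma code_at_Nil[simp]: "code_at P p []" by (simp add: code_at_def)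

lemma bs_exec:
  assumes "bs c m t m'" "code_at P p (compile p c)"
  shows "exec P t (p, m) = Some (p + clen c, m')"
  using assms
proof (induction arbitrary: p rule: bs.induct)
  case (bsSkip m) then show ?case by simp
next
  case (bsAtom i m m')
  then have "p < length P" "P ! p = i" by (auto simp: code_at_Cons)
  with bsAtom.hyps show ?case by (simp add: step_atom)
next
  case (bsSeq c1 m t1 m1 c2 t2 m2)
  from bsSeq.prems have C1: "code_at P p (compile p c1)" and C2: "code_at P (p + clen c1) (compile (p + clen c1) c2)"
    by (auto simp: code_at_append)
  show ?case using bsSeq.IH(1)[OF C1] bsSeq.IH(2)[OF C2] by (simp add: exec_add add.assoc)
next
  case (bsWF m a b c)
  then have "p < length P" "P ! p = JmpLess a b (p+2)" "Suc p < length P" "P ! Suc p = Jmp (p + 3 + clen c)"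
    by (auto simp: code_at_Cons)
  then show ?case using bsWF.hyps
    by (simp add: numeral_2_eq_2 step_jmpless step_jmp)
next
  case (bsWT m a b c t1 m1 t2 m2)
  from bsWT.prems have J: "p < length P" "P ! p = JmpLess a b (p+2)"
    and C: "code_at P (p+2) (compile (p+2) c)" and J2: "p + 2 + clen c < length P" "P ! (p + 2 + clen c) = Jmp p"
    by (auto simp: code_at_Cons code_at_append)
  have e1: "exec P 1 (p, m) = Some (p + 2, m)" using J bsWT.hyps(1) by (simp add: step_jmpless)
  have e2: "exec P t1 (p+2, m) = Some (p + 2 + clen c, m1)" using bsWT.IH(1)[OF C] by simp
  have e3: "exec P 1 (p + 2 + clen c, m1) = Some (p, m1)" using J2 by (simp add: step_jmp)
  have e4: "exec P t2 (p, m1) = Some (p + clen (While a b c), m2)" using bsWT.IH(2)[OF bsWT.prems] .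
  have "t1 + t2 + 2 = 1 + (t1 + (1 + t2))" by simp
  then show ?case using e1 e2 e3 e4 by (simp only: exec_add) simp
next
  case (bsIT m a b c1 t m' c2)
  from bsIT.prems have J: "p < length P" "P ! p = JmpLess a b (p + 2 + clen c2)"
    and C: "code_at P (p + 2 + clen c2) (compile (p + 2 + clen c2) c1)"
    by (auto simp: code_at_Cons code_at_append)
  have e1: "exec P 1 (p, m) = Some (p + 2 + clen c2, m)" using J bsIT.hyps(1) by (simp add: step_jmpless)
  have e2: "exec P t (p + 2 + clen c2, m) = Some (p + 2 + clen c2 + clen c1, m')" using bsIT.IH[OF C] .
  have "t + 1 = 1 + t" by simp
  then show ?case using e1 e2 by (simp only: exec_add) (simp add: algebra_simps)
next
  case (bsIF m a b c2 t m' c1)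
  from bsIF.prems have J: "p < length P" "P ! p = JmpLess a b (p + 2 + clen c2)"
    and C: "code_at P (p + 1) (compile (p + 1) c2)"
    and J2: "p + 1 + clen c2 < length P" "P ! (p + 1 + clen c2) = Jmp (p + 2 + clen c2 + clen c1)"
    by (auto simp: code_at_Cons code_at_append)
  have e1: "exec P 1 (p, m) = Some (p + 1, m)" using J bsIF.hyps(1) by (simp add: step_jmpless)
  have e2: "exec P t (p + 1, m) = Some (p + 1 + clen c2, m')" using bsIF.IH[OF C] .
  have e3: "exec P 1 (p + 1 + clen c2, m') = Some (p + 2 + clen c2 + clen c1, m')" using J2 by (simp add: step_jmp)
  have "t + 2 = 1 + (t + 1)" by simp
  then show ?case using e1 e2 e3 by (simp only: exec_add) (simp add: algebra_simps)
qed

definition ht :: "(mem \<Rightarrow> bool) \<Rightarrow> com \<Rightarrow> (mem \<Rightarrow> bool) \<Rightarrow> nat \<Rightarrow> bool" where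
  "ht P c Q T \<longleftrightarrow> (\<forall>m. P m \<longrightarrow> (\<exists>t m'. bs c m t m' \<and> t \<le> T \<and> Q m'))"

lemma ht_skip: "ht P Skip P 0"
  unfolding ht_def by (auto intro: bs.intros)

lemma ht_atom: "ht (\<lambda>m. \<exists>m'. astep i m = Some m' \<and> Q m') (Atom i) Q 1"
  unfolding ht_def using bsAtom by fastforce

lemma ht_seq: "ht P c1 R T1 \<Longrightarrow> ht R c2 Q T2 \<Longrightarrow> ht P (Seq c1 c2) Q (T1 + T2)"
  unfolding ht_def by (meson add_mono bsSeq)

lemma ht_conseq: "ht P' c Q' T' \<Longrightarrow> (\<And>m. P m \<Longrightarrow> P' m) \<Longrightarrow> (\<And>m. Q' m \<Longrightarrow> Q m) \<Longrightarrow> T' \<le> T \<Longrightarrow> ht P c Q T"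
  unfolding ht_def by (meson order_trans)

lemma ht_if: "ht (\<lambda>m. P m \<and> m a < m b) c1 Q T1 \<Longrightarrow> ht (\<lambda>m. P m \<and> \<not> m a < m b) c2 Q T2
   \<Longrightarrow> ht P (IfLess a b c1 c2) Q (max T1 T2 + 2)"
  unfolding ht_def
proof (intro allI impI)
  fix m assume H1: "\<forall>m. P m \<and> m a < m b \<longrightarrow> (\<exists>t m'. bs c1 m t m' \<and> t \<le> T1 \<and> Q m')"
    and H2: "\<forall>m. P m \<and> \<not> m a < m b \<longrightarrow> (\<exists>t m'. bs c2 m t m' \<and> t \<le> T2 \<and> Q m')" and P: "P m"
  show "\<exists>t m'. bs (IfLess a b c1 c2) m t m' \<and> t \<le> max T1 T2 + 2 \<and> Q m'"
  proof (cases "m a < m b")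
    case True
    then obtain t m' where "bs c1 m t m'" "t \<le> T1" "Q m'" using H1 P by blast
    then show ?thesis using True bsIT[of m a b c1 t m' c2] by (intro exI[of _ "t+1"] exI[of _ m']) auto
  next
    case False
    then obtain t m' where "bs c2 m t m'" "t \<le> T2" "Q m'" using H2 P by blast
    then show ?thesis using False bsIF[of m a b c2 t m' c1] by (intro exI[of _ "t+2"] exI[of _ m']) auto
  qed
qed

lemma ht_for_aux:
  assumes B: "\<And>i. i < N \<Longrightarrow> ht (\<lambda>m. I i m \<and> m a < m b) c (I (Suc i)) Tb"
    and C: "\<And>i m. i \<le> N \<Longrightarrow> I i m \<Longrightarrow> (m a < m b \<longleftrightarrow> i < N)"
  shows "i \<le> N \<Longrightarrow> ht (I i) (While a b c) (I N) ((N - i) * (Tb + 2) + 2)"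
proof (induction "N - i" arbitrary: i)
  case 0
  then have iN: "i = N" by simp
  show ?case unfolding ht_def
  proof (intro allI impI)
    fix m assume "I i m"
    then have "\<not> m a < m b" using C[of i m] iN by auto
    then show "\<exists>t m'. bs (While a b c) m t m' \<and> t \<le> (N - i) * (Tb + 2) + 2 \<and> I N m'"
      using \<open>I i m\<close> iN by (intro exI[of _ 2] exI[of _ m]) (auto intro: bs.intros)
  qed
next
  case (Suc x)
  then have iN: "i < N" by simp
  have IH: "ht (I (Suc i)) (While a b c) (I N) ((N - Suc i) * (Tb + 2) + 2)"
    using Suc.hyps(1)[of "Suc i"] Suc.hyps(2) iN by auto
  show ?case unfolding ht_def
  proof (intro allI impI)
    fix m assume Im: "I i m"
    then have lt: "m a < m b" using C[of i m] iN by auto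
    obtain t1 m1 where 1: "bs c m t1 m1" "t1 \<le> Tb" "I (Suc i) m1" using B[OF iN] Im lt unfolding ht_def by blast
    obtain t2 m2 where 2: "bs (While a b c) m1 t2 m2" "t2 \<le> (N - Suc i) * (Tb + 2) + 2" "I N m2"
      using IH 1(3) unfolding ht_def by blast
    have "t1 + t2 + 2 \<le> (N - i) * (Tb + 2) + 2"
    proof -
      have "N - i = Suc (N - Suc i)" using iN by simp
      then have "(N - i) * (Tb + 2) = (Tb + 2) + (N - Suc i) * (Tb + 2)" by simp
      then show ?thesis using 1(2) 2(2) by linarith
    qed
    then show "\<exists>t m'. bs (While a b c) m t m' \<and> t \<le> (N - i) * (Tb + 2) + 2 \<and> I N m'"
      using bsWT[OF lt 1(1) 2(1)] 2(3) by blast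
  qed
qed

lemma ht_for:
  assumes "\<And>i. i < N \<Longrightarrow> ht (\<lambda>m. I i m \<and> m a < m b) c (I (Suc i)) Tb"
    and "\<And>i m. i \<le> N \<Longrightarrow> I i m \<Longrightarrow> (m a < m b \<longleftrightarrow> i < N)"
  shows "ht (I 0) (While a b c) (I N) (N * (Tb + 2) + 2)"
proof -
  have "ht (I 0) (While a b c) (I N) ((N - 0) * (Tb + 2) + 2)"
    by (rule ht_for_aux) (use assms in auto)
  then show ?thesis by simp
qed

lemma ht_ex: "(\<And>x. ht (P x) c Q T) \<Longrightarrow> ht (\<lambda>m. \<exists>x. P x m) c Q T"
  unfolding ht_def by blast

lemma ht_pre_conj: "(R \<Longrightarrow> ht P c Q T) \<Longrightarrow> ht (\<lambda>m. R \<and> P m) c Q T"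
  unfolding ht_def by blast

fun block :: "instr list \<Rightarrow> com" where
  "block [] = Skip"
| "block (i # is) = Seq (Atom i) (block is)"

fun sl :: "instr list \<Rightarrow> mem \<Rightarrow> mem option" where
  "sl [] m = Some m"
| "sl (i # is) m = (case astep i m of None \<Rightarrow> None | Some m' \<Rightarrow> sl is m')"

lemma ht_block: "ht (\<lambda>m. \<exists>m'. sl is m = Some m' \<and> Q m') (block is) Q (length is)"
proof (induction "is" arbitrary: Q)
  case Nil then show ?case by (simp add: ht_skip)
next
  case (Cons i "is")
  have "ht (\<lambda>m. \<exists>m'. astep i m = Some m' \<and> (\<exists>m''. sl is m' = Some m'' \<and> Q m'')) (Atom i) (\<lambda>m. \<exists>m'. sl is m = Some m' \<and> Q m') 1"
    by (rule ht_atom)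
  from ht_seq[OF this Cons.IH] show ?case
    apply simp
    apply (erule ht_conseq)
    by (auto split: option.splits)
qed

lemma ht_block': "(\<And>m. P m \<Longrightarrow> \<exists>m'. sl is m = Some m' \<and> Q m') \<Longrightarrow> length is \<le> T \<Longrightarrow> ht P (block is) Q T"
  by (rule ht_conseq[OF ht_block]) auto

definition prog :: "com \<Rightarrow> instr list" where
  "prog c = compile 0 c @ [Halt]"

lemma ht_halts:
  assumes "ht P c Q T" "P m0"
  shows "\<exists>m. halts_within (prog c) m0 T m \<and> Q m"
proof -
  obtain t m' where 1: "bs c m0 t m'" "t \<le> T" "Q m'" using assms unfolding ht_def by blast
  have ca: "code_at (prog c) 0 (compile 0 c)" unfolding prog_def code_at_def by (auto simp: nth_append)
  have "exec (prog c) t (0, m0) = Some (clen c, m')" using bs_exec[OF 1(1) ca] by simp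
  moreover have "clen c < length (prog c)" "prog c ! clen c = Halt" unfolding prog_def by (auto simp: nth_append)
  ultimately show ?thesis unfolding halts_within_def using 1 by blast
qed


section \<open>Address layout\<close>

definition Aof :: "nat \<Rightarrow> nat" where "Aof n = 64 * n * n"
definition Lof :: "nat \<Rightarrow> nat" where "Lof n = 2 + 3*n + n*n"
definition Wof :: "nat \<Rightarrow> nat" where "Wof n = Aof n + Aof n"
definition rowM :: "nat \<Rightarrow> nat \<Rightarrow> nat" where "rowM n i = Wof n + i * (2*n)"
definition Sb :: "nat \<Rightarrow> nat" where "Sb n = Wof n + n * (2*n)"
definition vb :: "nat \<Rightarrow> nat \<Rightarrow> nat" where "vb n k = Sb n + k * n"
definition Qb :: "nat \<Rightarrow> nat" where "Qb n = Sb n + 6 * n"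
definition inW :: "nat \<Rightarrow> nat \<Rightarrow> nat" where "inW n i = Aof n + 2 + 3*n + i*n"
definition V0b :: "nat \<Rightarrow> nat" where "V0b n = Aof n + 2"
definition W0b :: "nat \<Rightarrow> nat" where "W0b n = Aof n + 2 + n"
definition THb :: "nat \<Rightarrow> nat" where "THb n = Aof n + 2 + 2*n"

lemma Aof_ge: "0 < n \<Longrightarrow> 64 \<le> Aof n"
proof -
  assume "0 < n" then have "1 \<le> n * n" by (simp add: Suc_le_eq one_le_mult_iff)
  then show ?thesis unfolding Aof_def by simp
qed

lemma Lof_le: "0 < n \<Longrightarrow> Lof n + 2 * n \<le> Aof n"
proof -
  assume n: "0 < n"
  have "n \<le> n * n" using n by simp
  moreover have "1 \<le> n * n" using n by (simp add: Suc_le_eq one_le_mult_iff)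
  ultimately show ?thesis unfolding Lof_def Aof_def by linarith
qed

lemma mult_lt_bound: "(i::nat) < (n::nat) \<Longrightarrow> c < C \<Longrightarrow> i * C + c < n * C"
proof -
  assume "i < n" "c < C"
  then have "Suc i * C \<le> n * C" by (intro mult_right_mono) auto
  then show ?thesis using \<open>c < C\<close> by simp
qed

lemma mult_idx_eq: "(i::nat) * C + c = i' * C + c' \<Longrightarrow> c < (C::nat) \<Longrightarrow> c' < C \<Longrightarrow> i = i' \<and> c = c'"
proof -
  assume e: "i * C + c = i' * C + c'" and c: "c < C" "c' < C"
  have "(i * C + c) div C = i" "(i' * C + c') div C = i'" using c by auto
  with e have "i = i'" by simp
  with e show ?thesis by simp
qed

lemma rowM_lt_Sb: "i < n \<Longrightarrow> c < 2*n \<Longrightarrow> rowM n i + c < Sb n"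
  unfolding rowM_def Sb_def using mult_lt_bound[of i n c "2*n"] by simp

lemma rowM_ge: "0 < n \<Longrightarrow> Lof n + 2*n + Aof n \<le> rowM n i"
  unfolding rowM_def Wof_def using Lof_le[of n] by simp

lemma rowM_inj: "rowM n i + c = rowM n i' + c' \<Longrightarrow> c < 2*n \<Longrightarrow> c' < 2*n \<Longrightarrow> i = i' \<and> c = c'"
  unfolding rowM_def using mult_idx_eq[of i "2*n" c i' c'] by simp

lemma vb_inj: "vb n k + j = vb n k' + j' \<Longrightarrow> j < n \<Longrightarrow> j' < n \<Longrightarrow> k = k' \<and> j = j'"
  unfolding vb_def using mult_idx_eq[of k n j k' j'] by simp

lemma vb_ge: "Sb n \<le> vb n k + j" unfolding vb_def by simp
lemma vb_lt_Qb: "k < 6 \<Longrightarrow> j < n \<Longrightarrow> vb n k + j < Qb n"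
proof -
  assume "k < 6" "j < n"
  then have "k * n + j < 6 * n" using mult_lt_bound[of k 6 j n] by (simp add: mult.commute)
  then show ?thesis unfolding vb_def Qb_def by simp
qed
lemma Sb_ge: "0 < n \<Longrightarrow> 2 * Aof n \<le> Sb n" unfolding Sb_def Wof_def by simp

definition Base :: "nat \<Rightarrow> real \<Rightarrow> (nat \<Rightarrow> nat \<Rightarrow> real) \<Rightarrow> (nat \<Rightarrow> real) \<Rightarrow> (nat \<Rightarrow> real) \<Rightarrow> (nat \<Rightarrow> real) \<Rightarrow> mem \<Rightarrow> bool" where
  "Base n k w w0 v0 theta m \<longleftrightarrow> m 0 = real (Aof n) \<and> m 1 = real n \<and>
     (\<forall>a<Lof n. m (Aof n + a) = init_mem n k w w0 v0 theta a)"

definition rowsM :: "nat \<Rightarrow> nat \<Rightarrow> mem \<Rightarrow> (nat \<Rightarrow> nat \<Rightarrow> real) \<Rightarrow> bool" where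
  "rowsM n R m F \<longleftrightarrow> (\<forall>i<R. \<forall>c<2*n. m (rowM n i + c) = F i c)"

definition vr :: "nat \<Rightarrow> nat \<Rightarrow> nat \<Rightarrow> mem \<Rightarrow> (nat \<Rightarrow> real) \<Rightarrow> bool" where
  "vr n k J m f \<longleftrightarrow> (\<forall>j<J. m (vb n k + j) = f j)"

lemma Base_upd_reg[simp]: "0 < n \<Longrightarrow> 2 \<le> r \<Longrightarrow> r < 64 \<Longrightarrow> Base n k w w0 v0 theta (m(r := v)) = Base n k w w0 v0 theta m"
proof -
  assume a: "0 < n" "2 \<le> r" "r < 64"
  have ne: "Aof n + x \<noteq> r" for x using Aof_ge[of n] a by linarith
  have r0: "0 \<noteq> r" "1 \<noteq> r" using a by auto
  show ?thesis unfolding Base_def using ne r0 by simp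
qed

lemma Base_upd_hi: "0 < n \<Longrightarrow> Aof n + Lof n \<le> p \<Longrightarrow> Base n k w w0 v0 theta (m(p := v)) = Base n k w w0 v0 theta m"
proof -
  assume a: "0 < n" "Aof n + Lof n \<le> p"
  have ne: "x < Lof n \<Longrightarrow> Aof n + x \<noteq> p" for x using a by linarith
  have r0: "0 \<noteq> p" "1 \<noteq> p" using a Aof_ge[of n] by auto
  show ?thesis unfolding Base_def using ne r0 by simp
qed

lemma Base_upd_M[simp]: "0 < n \<Longrightarrow> Base n k w w0 v0 theta (m(rowM n i + c := v)) = Base n k w w0 v0 theta m"
  by (rule Base_upd_hi) (use rowM_ge[of n i] in auto)

lemma Base_upd_vb[simp]: "0 < n \<Longrightarrow> Base n k w w0 v0 theta (m(vb n q + j := v)) = Base n k w w0 v0 theta m"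
  by (rule Base_upd_hi) (use vb_ge[of n q j] Sb_ge[of n] Lof_le[of n] in auto)

lemma Base_upd_Qb[simp]: "0 < n \<Longrightarrow> Base n k w w0 v0 theta (m(Qb n + j := v)) = Base n k w w0 v0 theta m"
  by (rule Base_upd_hi) (use Sb_ge[of n] Lof_le[of n] in \<open>auto simp: Qb_def\<close>)

lemma rowsM_upd_reg[simp]: "0 < n \<Longrightarrow> r < 64 \<Longrightarrow> rowsM n R (m(r := v)) F = rowsM n R m F"
proof -
  assume a: "0 < n" "r < 64"
  have ne: "rowM n ia + ca \<noteq> r" for ia ca
    using rowM_ge[of n ia] Aof_ge[of n] a by linarith
  show ?thesis unfolding rowsM_def using ne by auto
qed

lemma rowsM_upd_hi: "Sb n \<le> p \<Longrightarrow> R \<le> n \<Longrightarrow> rowsM n R (m(p := v)) F = rowsM n R m F"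
proof -
  assume a: "Sb n \<le> p" "R \<le> n"
  have ne: "ia < R \<Longrightarrow> ca < 2*n \<Longrightarrow> rowM n ia + ca \<noteq> p" for ia ca
    using rowM_lt_Sb[of ia n ca] a by linarith
  show ?thesis unfolding rowsM_def using ne by simp
qed

lemma rowsM_upd_vb[simp]: "R \<le> n \<Longrightarrow> rowsM n R (m(vb n q + j := v)) F = rowsM n R m F"
  by (rule rowsM_upd_hi) (auto simp: vb_ge)

lemma rowsM_upd_Qb[simp]: "R \<le> n \<Longrightarrow> rowsM n R (m(Qb n + j := v)) F = rowsM n R m F"
  by (rule rowsM_upd_hi) (auto simp: Qb_def)

lemma rowsM_upd_row[simp]: "R \<le> i \<Longrightarrow> c < 2*n \<Longrightarrow> rowsM n R (m(rowM n i + c := v)) F = rowsM n R m F"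
proof -
  assume a: "R \<le> i" "c < 2*n"
  have ne: "rowM n ia + ca \<noteq> rowM n i + c" if "ia < R" "ca < 2*n" for ia ca
    using rowM_inj[of n ia ca i c] a that by auto
  show ?thesis unfolding rowsM_def using ne by auto
qed

lemma vr_upd_reg[simp]: "0 < n \<Longrightarrow> r < 64 \<Longrightarrow> vr n q J (m(r := v)) f = vr n q J m f"
proof -
  assume a: "0 < n" "r < 64"
  have ne: "vb n q + ja \<noteq> r" for ja
    using vb_ge[of n q ja] Sb_ge[of n] Aof_ge[of n] a by linarith
  show ?thesis unfolding vr_def using ne by auto
qed

lemma vr_upd_M[simp]: "i < n \<Longrightarrow> c < 2*n \<Longrightarrow> vr n q J (m(rowM n i + c := v)) f = vr n q J m f"
proof -
  assume a: "i < n" "c < 2*n"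
  have ne: "vb n q + ja \<noteq> rowM n i + c" for ja
    using vb_ge[of n q ja] rowM_lt_Sb[of i n c] a by linarith
  show ?thesis unfolding vr_def using ne by auto
qed

lemma vr_upd_vb[simp]: "q \<noteq> q' \<Longrightarrow> j < n \<Longrightarrow> J \<le> n \<Longrightarrow> vr n q J (m(vb n q' + j := v)) f = vr n q J m f"
proof -
  assume a: "q \<noteq> q'" "j < n" "J \<le> n"
  have ne: "vb n q + ja \<noteq> vb n q' + j" if "ja < J" for ja
    using vb_inj[of n q ja q' j] a that by auto
  show ?thesis unfolding vr_def using ne by auto
qed

lemma vr_upd_Qb[simp]: "q < 6 \<Longrightarrow> J \<le> n \<Longrightarrow> vr n q J (m(Qb n + j := v)) f = vr n q J m f"
proof -
  assume a: "q < 6" "J \<le> n"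
  have ne: "vb n q + ja \<noteq> Qb n + j" if "ja < J" for ja
    using vb_lt_Qb[of q ja n] a that by auto
  show ?thesis unfolding vr_def using ne by auto
qed

lemma vr_snoc: "vr n q J m f \<Longrightarrow> vr n q (Suc J) (m(vb n q + J := f J)) f"
  unfolding vr_def
proof (intro allI impI)
  fix j assume H: "\<forall>j<J. m (vb n q + j) = f j" and j: "j < Suc J"
  show "(m(vb n q + J := f J)) (vb n q + j) = f j"
    using H j by (cases "j = J") auto
qed

lemma rowsM_snoc: "rowsM n R m F \<Longrightarrow> (\<forall>c<2*n. m (rowM n R + c) = F R c) \<Longrightarrow> rowsM n (Suc R) m F"
  unfolding rowsM_def
proof (intro allI impI)
  fix i c assume H: "\<forall>i<R. \<forall>c<2 * n. m (rowM n i + c) = F i c" and H2: "\<forall>c<2*n. m (rowM n R + c) = F R c"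
    and i: "i < Suc R" and c: "c < 2 * n"
  show "m (rowM n i + c) = F i c" using H H2 i c by (cases "i = R") auto
qed

lemma init_w: "i < n \<Longrightarrow> c < n \<Longrightarrow> init_mem n k w w0 v0 theta (2 + 3*n + i*n + c) = w i c"
proof -
  assume ic: "i < n" "c < n"
  have "i * n + c < n * n" using mult_lt_bound[OF ic] .
  then show ?thesis using ic unfolding init_mem_def by auto
qed

lemma Base_w: "Base n k w w0 v0 theta m \<Longrightarrow> i < n \<Longrightarrow> c < n \<Longrightarrow> m (inW n i + c) = w i c"
proof -
  assume B: "Base n k w w0 v0 theta m" and ic: "i < n" "c < n"
  have lt: "2 + 3*n + i*n + c < Lof n" using mult_lt_bound[OF ic] unfolding Lof_def by simp
  have "m (Aof n + (2 + 3*n + i*n + c)) = w i c" using B lt init_w[OF ic] unfolding Base_def by auto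
  then show ?thesis unfolding inW_def by (simp add: add.assoc)
qed

lemma Base_at: "Base n k w w0 v0 theta m \<Longrightarrow> a < Lof n \<Longrightarrow> m (Aof n + a) = init_mem n k w w0 v0 theta a"
  unfolding Base_def by auto

lemma Base_v0: "Base n k w w0 v0 theta m \<Longrightarrow> i < n \<Longrightarrow> m (V0b n + i) = v0 i"
proof -
  assume B: "Base n k w w0 v0 theta m" and i: "i < n"
  have "m (Aof n + (2 + i)) = init_mem n k w w0 v0 theta (2 + i)" by (rule Base_at[OF B]) (use i in \<open>simp add: Lof_def\<close>)
  also have "\<dots> = v0 i" using i by (simp add: init_mem_def)
  finally show ?thesis by (simp add: V0b_def add.assoc)
qed

lemma Base_w0: "Base n k w w0 v0 theta m \<Longrightarrow> i < n \<Longrightarrow> m (W0b n + i) = w0 i"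
proof -
  assume B: "Base n k w w0 v0 theta m" and i: "i < n"
  have "m (Aof n + (2 + n + i)) = init_mem n k w w0 v0 theta (2 + n + i)" by (rule Base_at[OF B]) (use i in \<open>simp add: Lof_def\<close>)
  also have "\<dots> = w0 i" using i by (simp add: init_mem_def)
  finally show ?thesis by (simp add: W0b_def add.assoc)
qed

lemma Base_th: "Base n k w w0 v0 theta m \<Longrightarrow> i < n \<Longrightarrow> m (THb n + i) = theta i"
proof -
  assume B: "Base n k w w0 v0 theta m" and i: "i < n"
  have "m (Aof n + (2 + 2*n + i)) = init_mem n k w w0 v0 theta (2 + 2*n + i)" by (rule Base_at[OF B]) (use i in \<open>simp add: Lof_def\<close>)
  also have "\<dots> = theta i" using i by (simp add: init_mem_def)
  finally show ?thesis by (simp add: THb_def add.assoc)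
qed

lemma Base_k: "Base n k w w0 v0 theta m \<Longrightarrow> m (Aof n + 1) = k"
proof -
  assume B: "Base n k w w0 v0 theta m"
  have "m (Aof n + 1) = init_mem n k w w0 v0 theta 1" by (rule Base_at[OF B]) (simp add: Lof_def)
  then show ?thesis by (simp add: init_mem_def)
qed

lemma rf_add: "real a + real b = real (a + b)" by simp
lemma rf_mult: "real a * real b = real (a * b)" by simp
lemma rf_one: "real a + 1 = real (Suc a)" by simp
lemma rf_num: "real a + numeral x = real (a + numeral x)" by simp
lemma rf_Nats: "real a \<in> \<nat>" by simp
lemma rf_floor: "nat \<lfloor>real a\<rfloor> = a" by simp
lemma rf_zero: "real 0 = 0" by simp

lemmas rf = rf_add rf_mult rf_one rf_num rf_Nats rf_floor


lemma Lof_ge6: "0 < n \<Longrightarrow> 6 \<le> Lof n"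
proof -
  assume "0 < n" then have "1 \<le> n * n" by (simp add: Suc_le_eq one_le_mult_iff)
  then show ?thesis using \<open>0 < n\<close> unfolding Lof_def by linarith
qed

lemma inW_ne_reg[simp]: "0 < n \<Longrightarrow> r < 64 \<Longrightarrow> (inW n i + c = r) = False" "0 < n \<Longrightarrow> r < 64 \<Longrightarrow> (r = inW n i + c) = False"
  using Aof_ge[of n] unfolding inW_def by auto
lemma rowM_ne_reg[simp]: "0 < n \<Longrightarrow> r < 64 \<Longrightarrow> (rowM n i + c = r) = False" "0 < n \<Longrightarrow> r < 64 \<Longrightarrow> (r = rowM n i + c) = False"
  using rowM_ge[of n i] Aof_ge[of n] by auto
lemma vb_ne_reg[simp]: "0 < n \<Longrightarrow> r < 64 \<Longrightarrow> (vb n k + c = r) = False" "0 < n \<Longrightarrow> r < 64 \<Longrightarrow> (r = vb n k + c) = False"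
  "0 < n \<Longrightarrow> r < 64 \<Longrightarrow> (vb n k = r) = False" "0 < n \<Longrightarrow> r < 64 \<Longrightarrow> (r = vb n k) = False"
  using vb_ge[of n k c] vb_ge[of n k 0] Sb_ge[of n] Aof_ge[of n] by auto
lemma base_ne_reg[simp]:
  "0 < n \<Longrightarrow> r < 64 \<Longrightarrow> (V0b n + c = r) = False" "0 < n \<Longrightarrow> r < 64 \<Longrightarrow> (r = V0b n + c) = False"
  "0 < n \<Longrightarrow> r < 64 \<Longrightarrow> (W0b n + c = r) = False" "0 < n \<Longrightarrow> r < 64 \<Longrightarrow> (r = W0b n + c) = False"
  "0 < n \<Longrightarrow> r < 64 \<Longrightarrow> (THb n + c = r) = False" "0 < n \<Longrightarrow> r < 64 \<Longrightarrow> (r = THb n + c) = False"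
  "0 < n \<Longrightarrow> r < 64 \<Longrightarrow> (Qb n + c = r) = False" "0 < n \<Longrightarrow> r < 64 \<Longrightarrow> (r = Qb n + c) = False"
  "0 < n \<Longrightarrow> r < 64 \<Longrightarrow> (Aof n + c = r) = False" "0 < n \<Longrightarrow> r < 64 \<Longrightarrow> (r = Aof n + c) = False"
  using Aof_ge[of n] Sb_ge[of n] unfolding V0b_def W0b_def THb_def Qb_def by auto
lemma addr_ne0[simp]: "0 < n \<Longrightarrow> (rowM n i = 0) = False" "0 < n \<Longrightarrow> (inW n i = 0) = False"
  "0 < n \<Longrightarrow> (vb n k = 0) = False" "0 < n \<Longrightarrow> (V0b n = 0) = False" "0 < n \<Longrightarrow> (W0b n = 0) = False"
  "0 < n \<Longrightarrow> (THb n = 0) = False" "0 < n \<Longrightarrow> (Qb n = 0) = False" "0 < n \<Longrightarrow> (Aof n = 0) = False"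
  using rowM_ge[of n i] Aof_ge[of n] vb_ge[of n k 0] Sb_ge[of n] by (auto simp: inW_def V0b_def W0b_def THb_def Qb_def)

lemma vb_eq_vb[simp]: "0 < n \<Longrightarrow> (vb n k = vb n k') = (k = k')"
  unfolding vb_def by auto

lemma in_lt_Sb: "0 < n \<Longrightarrow> x < n \<Longrightarrow> Aof n + 2 + 2*n + x < Sb n"
  using Lof_le[of n] Sb_ge[of n] unfolding Lof_def by linarith

lemma in_ne_vb[simp]:
  "0 < n \<Longrightarrow> (V0b n = vb n k) = False" "0 < n \<Longrightarrow> (vb n k = V0b n) = False"
  "0 < n \<Longrightarrow> (W0b n = vb n k) = False" "0 < n \<Longrightarrow> (vb n k = W0b n) = False"
  "0 < n \<Longrightarrow> (THb n = vb n k) = False" "0 < n \<Longrightarrow> (vb n k = THb n) = False"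
  using in_lt_Sb[of n 0] vb_ge[of n k 0] unfolding V0b_def W0b_def THb_def by auto

lemma rowsM_cell:
  assumes "rowsM n R m F" "i < R" "c < 2*n" "v = F' i c"
    "\<And>r c'. r < R \<Longrightarrow> c' < 2*n \<Longrightarrow> \<not> (r = i \<and> c' = c) \<Longrightarrow> F' r c' = F r c'"
  shows "rowsM n R (m(rowM n i + c := v)) F'"
  unfolding rowsM_def
proof (intro allI impI)
  fix r c' assume rc: "r < R" "c' < 2*n"
  show "(m(rowM n i + c := v)) (rowM n r + c') = F' r c'"
  proof (cases "r = i \<and> c' = c")
    case True then show ?thesis using assms by simp
  next
    case False
    then have "rowM n r + c' \<noteq> rowM n i + c" using rowM_inj[of n r c' i c] rc assms(3) by auto
    moreover have "F' r c' = F r c'" using assms(5)[OF rc False] .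
    ultimately show ?thesis using assms(1) rc unfolding rowsM_def by simp
  qed
qed

lemma rowsM_ext: "rowsM n R m F \<Longrightarrow> (\<And>r c. r < R \<Longrightarrow> c < 2*n \<Longrightarrow> F r c = F' r c) \<Longrightarrow> rowsM n R m F'"
  unfolding rowsM_def by simp

lemma vr_ext: "vr n q J m f \<Longrightarrow> (\<And>j. j < J \<Longrightarrow> f j = f' j) \<Longrightarrow> vr n q J m f'"
  unfolding vr_def by simp

lemma vr_get: "vr n q J m f \<Longrightarrow> j < J \<Longrightarrow> m (vb n q + j) = f j"
  unfolding vr_def by simp

lemma rowsM_get: "rowsM n R m F \<Longrightarrow> i < R \<Longrightarrow> c < 2*n \<Longrightarrow> m (rowM n i + c) = F i c"
  unfolding rowsM_def by simp

lemma vr_0[simp]: "vr n q 0 m f" unfolding vr_def by simp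
lemma rowsM_0[simp]: "rowsM n 0 m F" unfolding rowsM_def by simp

lemma rowM_Suc: "rowM n i + 2 * n = rowM n (Suc i)" unfolding rowM_def by simp
lemma inW_Suc: "inW n i + n = inW n (Suc i)" unfolding inW_def by simp

lemma real_lt_2[simp]: "(real a < 2 * real b) = (a < 2 * b)"
proof -
  have "2 * real b = real (2 * b)" by simp
  then show ?thesis by (simp only: of_nat_less_iff)
qed

lemma ht_while_count:
  assumes "\<And>i. i < N \<Longrightarrow> ht (\<lambda>m. I i m \<and> m a < m b) c (I (Suc i)) Tb"
    and "\<And>i m. i \<le> N \<Longrightarrow> I i m \<Longrightarrow> (m a < m b \<longleftrightarrow> i < N)"
    and "N * (Tb + 2) + 2 \<le> T"
  shows "ht (I 0) (While a b c) (I N) T"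
proof -
  have "ht (I 0) (While a b c) (I N) (N * (Tb + 2) + 2)"
    by (rule ht_for) (use assms(1,2) in auto)
  then show ?thesis by (rule ht_conseq) (use assms(3) in auto)
qed


definition "p1a = [Const 2 0, Const 5 1, Add 6 1 1, Add 7 0 0, Const 12 2, Add 8 0 12, Add 8 8 1, Add 8 8 1, Add 8 8 1, Const 11 0]"
definition "p1inner = [Add 9 8 3, Load 10 9, Sub 10 11 10, Add 9 7 3, Store 10 9, Add 13 1 3, Add 9 7 13, Store 11 9, Add 3 3 5]"
definition "p1post = [Add 9 7 2, Load 10 9, Add 10 10 5, Add 13 1 2, Add 14 7 13, Store 10 9, Store 5 14, Add 7 7 6, Add 8 8 1, Add 2 2 5]"
definition "P1 = Seq (block p1a) (While 2 1 (Seq (block [Const 3 0]) (Seq (While 3 1 (block p1inner)) (block p1post))))"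

definition "BI n k w w0 v0 theta m \<longleftrightarrow> Base n k w w0 v0 theta m \<and> m 0 = real (Aof n) \<and> m 1 = real n"

definition "p1row n i c (m::mem) w \<longleftrightarrow> (\<forall>c'<c. m (rowM n i + c') = - w i c' \<and> m (rowM n i + (n + c')) = 0)"

lemma p1row_reg[simp]: "0 < n \<Longrightarrow> r < 64 \<Longrightarrow> p1row n i c (m(r := v)) w = p1row n i c m w"
  unfolding p1row_def by simp

lemma p1row_Suc[simp]: "p1row n i (Suc c) m w \<longleftrightarrow> p1row n i c m w \<and> m (rowM n i + c) = - w i c \<and> m (rowM n i + (n + c)) = 0"
  unfolding p1row_def by (auto simp: less_Suc_eq)

lemma p1row_0[simp]: "p1row n i 0 m w" unfolding p1row_def by simp

lemma p1row_upd: "(c \<le> x \<and> x < n) \<or> n + c \<le> x \<Longrightarrow> p1row n i c (m(rowM n i + x := v)) w = p1row n i c m w"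
proof -
  assume a: "(c \<le> x \<and> x < n) \<or> n + c \<le> x"
  have ne: "c' < c \<Longrightarrow> rowM n i + c' \<noteq> rowM n i + x \<and> rowM n i + (n + c') \<noteq> rowM n i + x" for c'
    using a by auto
  show ?thesis unfolding p1row_def using ne by simp
qed

lemma p1row_upd1[simp]: "c < n \<Longrightarrow> p1row n i c (m(rowM n i + c := v)) w = p1row n i c m w" "p1row n i c (m(rowM n i + (n + c) := v)) w = p1row n i c m w"
  by (rule p1row_upd, simp)+

definition "I1 n k w w0 v0 theta i m \<longleftrightarrow> Base n k w w0 v0 theta m \<and> m 0 = real (Aof n) \<and> m 1 = real n \<and> m 2 = real i \<and> m 5 = 1 \<and>
   m 6 = real (2*n) \<and> m 7 = real (rowM n i) \<and> m 8 = real (inW n i) \<and> m 11 = 0 \<and> rowsM n i m (G0 n w)"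

definition "J1 n k w w0 v0 theta i c m \<longleftrightarrow> I1 n k w w0 v0 theta i m \<and> m 3 = real c \<and> p1row n i c m w"

lemma p1_inner: "0 < n \<Longrightarrow> i < n \<Longrightarrow> ht (\<lambda>m. J1 n k w w0 v0 theta i c m \<and> m 3 < m 1)
  (block p1inner) (J1 n k w w0 v0 theta i (Suc c)) 9"
  unfolding p1inner_def
proof (rule ht_block')
  fix m assume n: "0 < n" and i: "i < n" and H: "J1 n k w w0 v0 theta i c m \<and> m 3 < m 1"
  then have B: "Base n k w w0 v0 theta m" and c: "c < n" by (auto simp: J1_def I1_def)
  show "\<exists>m'. sl [Add 9 8 3, Load 10 9, Sub 10 11 10, Add 9 7 3, Store 10 9, Add 13 1 3, Add 9 7 13, Store 11 9, Add 3 3 5] m = Some m' \<and> J1 n k w w0 v0 theta i (Suc c) m'"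
    using H n i c by (simp del: of_nat_add of_nat_mult of_nat_Suc add: rf J1_def I1_def Base_w[OF B])
qed simp

lemma p1_innerloop: "0 < n \<Longrightarrow> i < n \<Longrightarrow> ht (J1 n k w w0 v0 theta i 0) (While 3 1 (block p1inner)) (J1 n k w w0 v0 theta i n) (n * 11 + 2)"
  apply (rule ht_while_count[where Tb = 9])
    apply (rule p1_inner; simp)
   apply (simp add: J1_def I1_def)
  apply simp
  done

lemma p1_prerow: "ht (\<lambda>m. I1 n k w w0 v0 theta i m \<and> m 2 < m 1) (block [Const 3 0]) (J1 n k w w0 v0 theta i 0) 1"
  by (rule ht_block') (auto simp: J1_def I1_def)

definition "rowok n i (m::mem) w \<longleftrightarrow> (\<forall>c<2*n. m (rowM n i + c) = G0 n w i c)"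

lemma rowok_reg[simp]: "0 < n \<Longrightarrow> r < 64 \<Longrightarrow> rowok n i (m(r := v)) w = rowok n i m w"
  unfolding rowok_def by simp

lemma rowok_fin:
  assumes "p1row n i n M w" "i < n" "v = 1 - w i i"
  shows "rowok n i (M(rowM n i + i := v, rowM n i + (n + i) := 1)) w"
  unfolding rowok_def
proof (intro allI impI)
  fix c assume c: "c < 2*n"
  show "(M(rowM n i + i := v, rowM n i + (n + i) := 1)) (rowM n i + c) = G0 n w i c"
  proof (cases "c < n")
    case True
    then have "M (rowM n i + c) = - w i c" using assms(1) unfolding p1row_def by auto
    then show ?thesis using True assms(2,3) by (auto simp: G0_def A0_def)
  next
    case False
    then obtain c' where c': "c = n + c'" "c' < n" using c by (metis add_less_cancel_left le_add_diff_inverse not_less mult_2)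
    then have "M (rowM n i + (n + c')) = 0" using assms(1) unfolding p1row_def by auto
    then show ?thesis using c' assms(2,3) by (auto simp: G0_def A0_def)
  qed
qed

lemma p1_post: "0 < n \<Longrightarrow> i < n \<Longrightarrow> ht (J1 n k w w0 v0 theta i n) (block p1post) (I1 n k w w0 v0 theta (Suc i)) 10"
  unfolding p1post_def
proof (rule ht_block')
  fix m assume n: "0 < n" and i: "i < n" and H: "J1 n k w w0 v0 theta i n m"
  then have P: "p1row n i n m w" and R: "rowsM n i m (G0 n w)" by (auto simp: J1_def I1_def)
  have g: "m (rowM n i + i) = - w i i" using P i unfolding p1row_def by auto
  let ?M = "m(9 := real (rowM n i + i), 10 := - w i i + 1, 13 := real (n + i), 14 := real (rowM n i + (n + i)))"
  have rs: "rowsM n (Suc i) (?M(rowM n i + i := - w i i + 1, rowM n i + (n + i) := 1)) (G0 n w)"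
  proof (rule rowsM_snoc)
    show "rowsM n i (?M(rowM n i + i := - w i i + 1, rowM n i + (n + i) := 1)) (G0 n w)" using R n i by simp
    have "rowok n i (?M(rowM n i + i := - w i i + 1, rowM n i + (n + i) := 1)) w"
      by (rule rowok_fin) (use P n i in auto)
    then show "\<forall>c<2 * n. (?M(rowM n i + i := - w i i + 1, rowM n i + (n + i) := 1)) (rowM n i + c) = G0 n w i c"
      unfolding rowok_def .
  qed
  show "\<exists>m'. sl [Add 9 7 2, Load 10 9, Add 10 10 5, Add 13 1 2, Add 14 7 13, Store 10 9, Store 5 14, Add 7 7 6, Add 8 8 1, Add 2 2 5] m = Some m' \<and> I1 n k w w0 v0 theta (Suc i) m'"
    using H n i rs g by (simp del: of_nat_add of_nat_mult of_nat_Suc add: rf J1_def I1_def rowM_Suc inW_Suc)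
qed simp

lemma p1_body: assumes "0 < n" "i < n" shows "ht (\<lambda>m. I1 n k w w0 v0 theta i m \<and> m 2 < m 1)
   (Seq (block [Const 3 0]) (Seq (While 3 1 (block p1inner)) (block p1post))) (I1 n k w w0 v0 theta (Suc i)) (1 + (n * 11 + 2 + 10))"
  using ht_seq[OF p1_prerow ht_seq[OF p1_innerloop[OF assms] p1_post[OF assms]]] .

lemma p1_pre: "0 < n \<Longrightarrow> ht (BI n k w w0 v0 theta) (block p1a) (I1 n k w w0 v0 theta 0) 10"
  unfolding p1a_def
  by (rule ht_block') (auto simp del: of_nat_add of_nat_mult of_nat_Suc simp add: rf BI_def I1_def rowM_def Wof_def inW_def)

lemma P1_ht: "0 < n \<Longrightarrow> ht (BI n k w w0 v0 theta) P1 (I1 n k w w0 v0 theta n) (10 + (n * (n * 11 + 15 + 2) + 2))"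
  unfolding P1_def
  apply (rule ht_seq[OF p1_pre], assumption)
  apply (rule ht_while_count[where Tb = "1 + (n * 11 + 2 + 10)"])
    apply (rule p1_body; simp)
   apply (simp add: I1_def)
  apply simp
  done


definition "p2a = [Const 2 0, Const 5 1, Add 6 1 1, Add 7 0 0]"
definition "p2b = [Add 9 7 2, Load 12 9, Const 3 0]"
definition "p2norm = [Add 9 7 3, Load 10 9, Div 10 10 12, Store 10 9, Add 3 3 5]"
definition "p2c = [Const 4 0, Add 8 0 0]"
definition "e1 = [Add 9 8 2, Load 13 9]"
definition "eIf = IfLess 4 2 Skip (IfLess 2 4 Skip (block [Const 13 0]))"
definition "e2 = [Add 9 7 3, Load 10 9, Mul 10 10 13, Add 9 8 3, Load 14 9, Sub 14 14 10, Store 14 9, Add 3 3 5]"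
definition "e3 = [Add 8 8 6, Add 4 4 5]"
definition "p2d = [Add 7 7 6, Add 2 2 5]"
definition "ELIM = Seq (block e1) (Seq eIf (Seq (block [Const 3 0]) (Seq (While 3 6 (block e2)) (block e3))))"
definition "P2 = Seq (block p2a) (While 2 1 (Seq (block p2b) (Seq (While 3 6 (block p2norm)) (Seq (block p2c) (Seq (While 4 1 ELIM) (block p2d))))))"

definition "I2 n k w w0 v0 theta j m \<longleftrightarrow> Base n k w w0 v0 theta m \<and> m 0 = real (Aof n) \<and> m 1 = real n \<and> m 2 = real j \<and> m 5 = 1 \<and>
   m 6 = real (2*n) \<and> m 7 = real (rowM n j) \<and> rowsM n n m (gj n w j)"

definition "Fn n w j c = (\<lambda>r c'. if r = j \<and> c' < c then gj n w j j c' / gj n w j j j else gj n w j r c')"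

definition "N2 n k w w0 v0 theta j c m \<longleftrightarrow> Base n k w w0 v0 theta m \<and> m 0 = real (Aof n) \<and> m 1 = real n \<and> m 2 = real j \<and> m 5 = 1 \<and>
   m 6 = real (2*n) \<and> m 7 = real (rowM n j) \<and> m 12 = gj n w j j j \<and> m 3 = real c \<and> rowsM n n m (Fn n w j c)"

definition "Fe n w j i = (\<lambda>r c. if r < i \<or> r = j then gstep j (gj n w j) r c else gj n w j r c)"

definition "E2 n k w w0 v0 theta j i m \<longleftrightarrow> Base n k w w0 v0 theta m \<and> m 0 = real (Aof n) \<and> m 1 = real n \<and> m 2 = real j \<and> m 5 = 1 \<and>
   m 6 = real (2*n) \<and> m 7 = real (rowM n j) \<and> m 4 = real i \<and> m 8 = real (rowM n i) \<and> rowsM n n m (Fe n w j i)"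

definition "fval n w j i = (if i = j then 0 else gj n w j i j)"

definition "Fc n w j i c = (\<lambda>r c'. if r = i \<and> c' < c then gstep j (gj n w j) r c' else Fe n w j i r c')"

definition "EC n k w w0 v0 theta j i c m \<longleftrightarrow> Base n k w w0 v0 theta m \<and> m 0 = real (Aof n) \<and> m 1 = real n \<and> m 2 = real j \<and> m 5 = 1 \<and>
   m 6 = real (2*n) \<and> m 7 = real (rowM n j) \<and> m 4 = real i \<and> m 8 = real (rowM n i) \<and> m 13 = fval n w j i \<and> m 3 = real c \<and>
   rowsM n n m (Fc n w j i c)"

abbreviation "Wc n w \<equiv> (\<forall>i<n. (\<Sum>j<n. \<bar>w i j\<bar>) < 1)"

lemma p2_norm: assumes n: "0 < n" and j: "j < n" and W: "Wc n w"
  shows "ht (\<lambda>m. N2 n k w w0 v0 theta j c m \<and> m 3 < m 6) (block p2norm) (N2 n k w w0 v0 theta j (Suc c)) 5"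
  unfolding p2norm_def
proof (rule ht_block')
  fix m assume H: "N2 n k w w0 v0 theta j c m \<and> m 3 < m 6"
  then have R: "rowsM n n m (Fn n w j c)" and c: "c < 2*n" by (auto simp: N2_def)
  have piv: "gj n w j j j \<noteq> 0" using gj_piv[OF W j] .
  have g: "m (rowM n j + c) = gj n w j j c" using rowsM_get[OF R j c] by (simp add: Fn_def)
  let ?M = "m(9 := real (rowM n j + c), 10 := gj n w j j c / gj n w j j j)"
  have rs: "rowsM n n (?M(rowM n j + c := gj n w j j c / gj n w j j j)) (Fn n w j (Suc c))"
    by (rule rowsM_cell[where F = "Fn n w j c"]) (use R j c n in \<open>auto simp: Fn_def\<close>)
  show "\<exists>m'. sl [Add 9 7 3, Load 10 9, Div 10 10 12, Store 10 9, Add 3 3 5] m = Some m' \<and> N2 n k w w0 v0 theta j (Suc c) m'"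
    using H n j rs g piv by (simp del: of_nat_add of_nat_mult of_nat_Suc add: rf N2_def)
qed simp

lemma p2_normloop: "0 < n \<Longrightarrow> j < n \<Longrightarrow> Wc n w \<Longrightarrow>
   ht (N2 n k w w0 v0 theta j 0) (While 3 6 (block p2norm)) (N2 n k w w0 v0 theta j (2*n)) (2 * n * (5 + 2) + 2)"
  apply (rule ht_for)
   apply (rule p2_norm; simp)
  apply (simp add: N2_def)
  done

lemma p2_pre_norm: "0 < n \<Longrightarrow> j < n \<Longrightarrow> ht (\<lambda>m. I2 n k w w0 v0 theta j m \<and> m 2 < m 1) (block p2b) (N2 n k w w0 v0 theta j 0) 3"
  unfolding p2b_def
proof (rule ht_block')
  fix m assume n: "0 < n" and j: "j < n" and H: "I2 n k w w0 v0 theta j m \<and> m 2 < m 1"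
  then have R: "rowsM n n m (gj n w j)" by (auto simp: I2_def)
  have g: "m (rowM n j + j) = gj n w j j j" using rowsM_get[OF R j] j by simp
  have R0: "rowsM n n m (Fn n w j 0)" using R by (simp add: Fn_def)
  show "\<exists>m'. sl [Add 9 7 2, Load 12 9, Const 3 0] m = Some m' \<and> N2 n k w w0 v0 theta j 0 m'"
    using H n j g R0 by (simp del: of_nat_add of_nat_mult of_nat_Suc add: rf N2_def I2_def)
qed simp

lemma p2_pre_elim: "0 < n \<Longrightarrow> j < n \<Longrightarrow> ht (N2 n k w w0 v0 theta j (2*n)) (block p2c) (E2 n k w w0 v0 theta j 0) 2"
  unfolding p2c_def
proof (rule ht_block')
  fix m assume n: "0 < n" and j: "j < n" and H: "N2 n k w w0 v0 theta j (2*n) m"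
  then have R: "rowsM n n m (Fn n w j (2*n))" by (auto simp: N2_def)
  have R0: "rowsM n n m (Fe n w j 0)" by (rule rowsM_ext[OF R]) (auto simp: Fn_def Fe_def gstep_def)
  show "\<exists>m'. sl [Const 4 0, Add 8 0 0] m = Some m' \<and> E2 n k w w0 v0 theta j 0 m'"
    using H n j R0 by (simp del: of_nat_add of_nat_mult of_nat_Suc add: rf N2_def E2_def rowM_def Wof_def)
qed simp

lemma p2_e2: assumes n: "0 < n" and j: "j < n" and i: "i < n"
  shows "ht (\<lambda>m. EC n k w w0 v0 theta j i c m \<and> m 3 < m 6) (block e2) (EC n k w w0 v0 theta j i (Suc c)) 8"
  unfolding e2_def
proof (rule ht_block')
  fix m assume H: "EC n k w w0 v0 theta j i c m \<and> m 3 < m 6"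
  then have R: "rowsM n n m (Fc n w j i c)" and c: "c < 2*n" by (auto simp: EC_def)
  let ?G = "gj n w j"
  have gj: "m (rowM n j + c) = gstep j ?G j c" using rowsM_get[OF R j c] by (simp add: Fc_def Fe_def)
  have gi: "m (rowM n i + c) = Fe n w j i i c" using rowsM_get[OF R i c] by (simp add: Fc_def)
  let ?v = "Fe n w j i i c - gstep j ?G j c * fval n w j i"
  have vv: "?v = gstep j ?G i c"
    by (cases "i = j") (auto simp: Fe_def fval_def gstep_def algebra_simps)
  let ?M = "m(10 := gstep j ?G j c * fval n w j i, 9 := real (rowM n i + c), 14 := ?v)"
  have rs: "rowsM n n (?M(rowM n i + c := ?v)) (Fc n w j i (Suc c))"
    by (rule rowsM_cell[where F = "Fc n w j i c"]) (use R i c n vv in \<open>auto simp: Fc_def\<close>)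
  show "\<exists>m'. sl [Add 9 7 3, Load 10 9, Mul 10 10 13, Add 9 8 3, Load 14 9, Sub 14 14 10, Store 14 9, Add 3 3 5] m = Some m' \<and>
     EC n k w w0 v0 theta j i (Suc c) m'"
    using H n j i rs gj gi by (simp del: of_nat_add of_nat_mult of_nat_Suc add: rf EC_def)
qed simp

lemma p2_e2loop: "0 < n \<Longrightarrow> j < n \<Longrightarrow> i < n \<Longrightarrow>
   ht (EC n k w w0 v0 theta j i 0) (While 3 6 (block e2)) (EC n k w w0 v0 theta j i (2*n)) (2 * n * (8 + 2) + 2)"
  apply (rule ht_for)
   apply (rule p2_e2; simp)
  apply (simp add: EC_def)
  done

definition "X2 n k w w0 v0 theta j i m \<longleftrightarrow> E2 n k w w0 v0 theta j i m \<and> m 13 = Fe n w j i i j"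
definition "Y2 n k w w0 v0 theta j i m \<longleftrightarrow> E2 n k w w0 v0 theta j i m \<and> m 13 = fval n w j i"

lemma p2_e1: assumes n: "0 < n" and j: "j < n" and i: "i < n"
  shows "ht (\<lambda>m. E2 n k w w0 v0 theta j i m \<and> m 4 < m 1) (block e1) (X2 n k w w0 v0 theta j i) 2"
  unfolding e1_def
proof (rule ht_block')
  fix m assume H: "E2 n k w w0 v0 theta j i m \<and> m 4 < m 1"
  then have R: "rowsM n n m (Fe n w j i)" by (auto simp: E2_def)
  have g: "m (rowM n i + j) = Fe n w j i i j" using rowsM_get[OF R i] j by simp
  show "\<exists>m'. sl [Add 9 8 2, Load 13 9] m = Some m' \<and> X2 n k w w0 v0 theta j i m'"
    using H n j i g by (simp del: of_nat_add of_nat_mult of_nat_Suc add: rf E2_def X2_def)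
qed simp

lemma p2_eIf: assumes n: "0 < n" and j: "j < n" and i: "i < n"
  shows "ht (X2 n k w w0 v0 theta j i) eIf (Y2 n k w w0 v0 theta j i) 5"
proof -
  have t1: "ht (\<lambda>m. X2 n k w w0 v0 theta j i m \<and> m 4 < m 2) Skip (Y2 n k w w0 v0 theta j i) 0"
    by (rule ht_conseq[OF ht_skip]) (auto simp: X2_def Y2_def E2_def Fe_def fval_def)
  have t2: "ht (\<lambda>m. (X2 n k w w0 v0 theta j i m \<and> \<not> m 4 < m 2) \<and> m 2 < m 4) Skip (Y2 n k w w0 v0 theta j i) 0"
    by (rule ht_conseq[OF ht_skip]) (auto simp: X2_def Y2_def E2_def Fe_def fval_def)
  have t3: "ht (\<lambda>m. (X2 n k w w0 v0 theta j i m \<and> \<not> m 4 < m 2) \<and> \<not> m 2 < m 4) (block [Const 13 0]) (Y2 n k w w0 v0 theta j i) 1"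
    by (rule ht_block') (use n in \<open>auto simp: X2_def Y2_def E2_def fval_def\<close>)
  have "ht (X2 n k w w0 v0 theta j i) eIf (Y2 n k w w0 v0 theta j i) (max 0 (max 0 1 + 2) + 2)"
    unfolding eIf_def by (intro ht_if t1 t2 t3)
  then show ?thesis by (rule ht_conseq) auto
qed

lemma p2_pre_e2: "0 < n \<Longrightarrow> ht (Y2 n k w w0 v0 theta j i) (block [Const 3 0]) (EC n k w w0 v0 theta j i 0) 1"
  by (rule ht_block') (auto simp: Y2_def E2_def EC_def Fc_def)

lemma p2_e3: assumes n: "0 < n" and j: "j < n" and i: "i < n"
  shows "ht (EC n k w w0 v0 theta j i (2*n)) (block e3) (E2 n k w w0 v0 theta j (Suc i)) 2"
  unfolding e3_def
proof (rule ht_block')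
  fix m assume H: "EC n k w w0 v0 theta j i (2*n) m"
  then have R: "rowsM n n m (Fc n w j i (2*n))" by (auto simp: EC_def)
  have R1: "rowsM n n m (Fe n w j (Suc i))" by (rule rowsM_ext[OF R]) (auto simp: Fc_def Fe_def)
  show "\<exists>m'. sl [Add 8 8 6, Add 4 4 5] m = Some m' \<and> E2 n k w w0 v0 theta j (Suc i) m'"
    using H n j i R1 by (simp del: of_nat_add of_nat_mult of_nat_Suc add: rf EC_def E2_def rowM_Suc)
qed simp

lemma p2_elimbody: assumes n: "0 < n" and j: "j < n" and i: "i < n"
  shows "ht (\<lambda>m. E2 n k w w0 v0 theta j i m \<and> m 4 < m 1) ELIM (E2 n k w w0 v0 theta j (Suc i)) (2 + (5 + (1 + ((2 * n * (8 + 2) + 2) + 2))))"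
  unfolding ELIM_def
  using ht_seq[OF p2_e1[OF assms] ht_seq[OF p2_eIf[OF assms] ht_seq[OF p2_pre_e2[OF n] ht_seq[OF p2_e2loop[OF assms] p2_e3[OF assms]]]]] .

lemma p2_elimloop: "0 < n \<Longrightarrow> j < n \<Longrightarrow>
   ht (E2 n k w w0 v0 theta j 0) (While 4 1 ELIM) (E2 n k w w0 v0 theta j n) (n * ((2 + (5 + (1 + ((2 * n * (8 + 2) + 2) + 2)))) + 2) + 2)"
  apply (rule ht_for)
   apply (rule p2_elimbody; simp)
  apply (simp add: E2_def)
  done

lemma p2_post: assumes n: "0 < n" and j: "j < n"
  shows "ht (E2 n k w w0 v0 theta j n) (block p2d) (I2 n k w w0 v0 theta (Suc j)) 2"
  unfolding p2d_def
proof (rule ht_block')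
  fix m assume H: "E2 n k w w0 v0 theta j n m"
  then have R: "rowsM n n m (Fe n w j n)" by (auto simp: E2_def)
  have R1: "rowsM n n m (gj n w (Suc j))" by (rule rowsM_ext[OF R]) (auto simp: Fe_def)
  show "\<exists>m'. sl [Add 7 7 6, Add 2 2 5] m = Some m' \<and> I2 n k w w0 v0 theta (Suc j) m'"
    using H n j R1 by (simp del: of_nat_add of_nat_mult of_nat_Suc add: rf E2_def I2_def rowM_Suc)
qed simp

definition "T2body n = 3 + ((2 * n * (5 + 2) + 2) + (2 + ((n * ((2 + (5 + (1 + ((2 * n * (8 + 2) + 2) + 2)))) + 2) + 2) + 2)))"

lemma p2_body: assumes n: "0 < n" and j: "j < n" and W: "Wc n w"
  shows "ht (\<lambda>m. I2 n k w w0 v0 theta j m \<and> m 2 < m 1)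
    (Seq (block p2b) (Seq (While 3 6 (block p2norm)) (Seq (block p2c) (Seq (While 4 1 ELIM) (block p2d)))))
    (I2 n k w w0 v0 theta (Suc j)) (T2body n)"
  unfolding T2body_def
  using ht_seq[OF p2_pre_norm[OF n j] ht_seq[OF p2_normloop[OF n j W] ht_seq[OF p2_pre_elim[OF n j] ht_seq[OF p2_elimloop[OF n j] p2_post[OF n j]]]]] .

lemma p2_pre: "0 < n \<Longrightarrow> ht (I1 n k w w0 v0 theta n) (block p2a) (I2 n k w w0 v0 theta 0) 4"
  unfolding p2a_def
  by (rule ht_block') (auto simp del: of_nat_add of_nat_mult of_nat_Suc simp add: rf I1_def I2_def rowM_def Wof_def)

lemma P2_ht: "0 < n \<Longrightarrow> Wc n w \<Longrightarrow> ht (I1 n k w w0 v0 theta n) P2 (I2 n k w w0 v0 theta n) (4 + (n * (T2body n + 2) + 2))"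
  unfolding P2_def
  apply (rule ht_seq[OF p2_pre], assumption)
  apply (rule ht_for)
   apply (rule p2_body; simp)
  apply (simp add: I2_def)
  done


lemma vr_snoc'[simp]: "vr n q J m f \<Longrightarrow> v = f J \<Longrightarrow> vr n q (Suc J) (m(vb n q + J := v)) f"
  using vr_snoc by blast

abbreviation "Gf n w \<equiv> gj n w n"

definition "Sv n w j = (\<Sum>i<n. gj n w n i (n + j))"
definition "Pv n w w0 v0 i = (\<Sum>j<n. gj n w n i (n + j) * w0 j * v0 j)"
definition "Gv w0 v0 theta a = theta a * (w0 a * v0 a + 1) / 2"
definition "Zv n w w0 a = (\<Sum>j<n. Sv n w j * w0 j * gj n w n j (n + a))"
definition "ALv n w w0 v0 theta a = Gv w0 v0 theta a * Zv n w w0 a"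
definition "BEv n w w0 v0 theta a = Sv n w a * (theta a * (w0 a * Pv n w w0 v0 a + 1)) / 2"
definition "CCv n w w0 theta a = Sv n w a * theta a * w0 a / 2"

section \<open>Phase 3: column sums\<close>

definition "p3a = [Const 2 0, Const 5 1, Add 6 1 1, Const 11 0, Add 7 1 11, Add 12 0 0, Mul 13 1 6, Add 12 12 13]"
definition "p3pre = [Const 3 0, Const 10 0, Add 8 0 0]"
definition "p3inner = [Add 9 8 7, Load 11 9, Add 10 10 11, Add 8 8 6, Add 3 3 5]"
definition "p3post = [Add 9 12 2, Store 10 9, Add 7 7 5, Add 2 2 5]"
definition "P3 = Seq (block p3a) (While 2 1 (Seq (block p3pre) (Seq (While 3 1 (block p3inner)) (block p3post))))"

definition "I3 n k w w0 v0 theta j m \<longleftrightarrow> Base n k w w0 v0 theta m \<and> m 0 = real (Aof n) \<and> m 1 = real n \<and> m 2 = real j \<and> m 5 = 1 \<and>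
   m 6 = real (2*n) \<and> m 7 = real (n + j) \<and> m 12 = real (vb n 0) \<and> rowsM n n m (gj n w n) \<and> vr n 0 j m (Sv n w)"

definition "K3 n k w w0 v0 theta j i m \<longleftrightarrow> I3 n k w w0 v0 theta j m \<and> m 3 = real i \<and> m 8 = real (rowM n i) \<and>
   m 10 = (\<Sum>i'<i. gj n w n i' (n + j))"

lemma p3_inner: assumes n: "0 < n" and j: "j < n"
  shows "ht (\<lambda>m. K3 n k w w0 v0 theta j i m \<and> m 3 < m 1) (block p3inner) (K3 n k w w0 v0 theta j (Suc i)) 5"
  unfolding p3inner_def
proof (rule ht_block')
  fix m assume H: "K3 n k w w0 v0 theta j i m \<and> m 3 < m 1"
  then have R: "rowsM n n m (gj n w n)" and i: "i < n" by (auto simp: K3_def I3_def)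
  have g: "m (rowM n i + (n + j)) = gj n w n i (n + j)" using rowsM_get[OF R i] j by simp
  show "\<exists>m'. sl [Add 9 8 7, Load 11 9, Add 10 10 11, Add 8 8 6, Add 3 3 5] m = Some m' \<and> K3 n k w w0 v0 theta j (Suc i) m'"
    using H n j i g by (simp del: of_nat_add of_nat_mult of_nat_Suc add: rf K3_def I3_def rowM_Suc)
qed simp

lemma p3_innerloop: "0 < n \<Longrightarrow> j < n \<Longrightarrow>
   ht (K3 n k w w0 v0 theta j 0) (While 3 1 (block p3inner)) (K3 n k w w0 v0 theta j n) (n * (5 + 2) + 2)"
  apply (rule ht_for)
   apply (rule p3_inner; simp)
  apply (simp add: K3_def I3_def)
  done

lemma p3_pre: "0 < n \<Longrightarrow> ht (\<lambda>m. I3 n k w w0 v0 theta j m \<and> m 2 < m 1) (block p3pre) (K3 n k w w0 v0 theta j 0) 3"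
  unfolding p3pre_def
  by (rule ht_block') (auto simp del: of_nat_add of_nat_mult of_nat_Suc simp add: rf K3_def I3_def rowM_def Wof_def)

lemma p3_post: assumes n: "0 < n" and j: "j < n"
  shows "ht (K3 n k w w0 v0 theta j n) (block p3post) (I3 n k w w0 v0 theta (Suc j)) 4"
  unfolding p3post_def
  by (rule ht_block') (use n j in \<open>auto simp del: of_nat_add of_nat_mult of_nat_Suc simp add: rf K3_def I3_def Sv_def\<close>)

lemma p3_start: "0 < n \<Longrightarrow> ht (I2 n k w w0 v0 theta n) (block p3a) (I3 n k w w0 v0 theta 0) 8"
  unfolding p3a_def
  by (rule ht_block') (auto simp del: of_nat_add of_nat_mult of_nat_Suc simp add: rf I2_def I3_def vb_def Sb_def Wof_def)

lemma P3_ht: assumes n: "0 < n"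
  shows "ht (I2 n k w w0 v0 theta n) P3 (I3 n k w w0 v0 theta n) (8 + (n * ((3 + ((n * (5 + 2) + 2) + 4)) + 2) + 2))"
  unfolding P3_def
  apply (rule ht_seq[OF p3_start[OF n]])
  apply (rule ht_for)
   apply (rule ht_seq[OF p3_pre[OF n] ht_seq[OF p3_innerloop p3_post]]; (simp add: n)?)
  apply (simp add: I3_def)
  done

section \<open>Phase 4: p = Delta (w0 o v0)\<close>

definition "p4a = [Const 2 0, Const 5 1, Add 6 1 1, Add 7 0 0, Add 12 0 0, Mul 13 1 6, Add 12 12 13, Add 12 12 1, Const 14 2, Add 15 0 14, Add 16 15 1]"
definition "p4pre = [Const 3 0, Const 10 0, Const 19 0, Add 19 1 19]"
definition "p4inner = [Add 9 7 19, Load 11 9, Add 9 16 3, Load 18 9, Mul 11 11 18, Add 9 15 3, Load 18 9, Mul 11 11 18, Add 10 10 11, Add 19 19 5, Add 3 3 5]"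
definition "p4post = [Add 9 12 2, Store 10 9, Add 7 7 6, Add 2 2 5]"
definition "P4 = Seq (block p4a) (While 2 1 (Seq (block p4pre) (Seq (While 3 1 (block p4inner)) (block p4post))))"

definition "I4 n k w w0 v0 theta i m \<longleftrightarrow> Base n k w w0 v0 theta m \<and> m 0 = real (Aof n) \<and> m 1 = real n \<and> m 2 = real i \<and> m 5 = 1 \<and>
   m 6 = real (2*n) \<and> m 7 = real (rowM n i) \<and> m 12 = real (vb n 1) \<and> m 15 = real (V0b n) \<and> m 16 = real (W0b n) \<and>
   rowsM n n m (gj n w n) \<and> vr n 0 n m (Sv n w) \<and> vr n 1 i m (Pv n w w0 v0)"

definition "K4 n k w w0 v0 theta i j m \<longleftrightarrow> I4 n k w w0 v0 theta i m \<and> m 3 = real j \<and> m 19 = real (n + j) \<and>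
   m 10 = (\<Sum>j'<j. gj n w n i (n + j') * w0 j' * v0 j')"

lemma p4_inner: assumes n: "0 < n" and i: "i < n"
  shows "ht (\<lambda>m. K4 n k w w0 v0 theta i j m \<and> m 3 < m 1) (block p4inner) (K4 n k w w0 v0 theta i (Suc j)) 11"
  unfolding p4inner_def
proof (rule ht_block')
  fix m assume H: "K4 n k w w0 v0 theta i j m \<and> m 3 < m 1"
  then have R: "rowsM n n m (gj n w n)" and B: "Base n k w w0 v0 theta m" and j: "j < n" by (auto simp: K4_def I4_def)
  have g: "m (rowM n i + (n + j)) = gj n w n i (n + j)" using rowsM_get[OF R i] j by simp
  show "\<exists>m'. sl [Add 9 7 19, Load 11 9, Add 9 16 3, Load 18 9, Mul 11 11 18, Add 9 15 3, Load 18 9, Mul 11 11 18, Add 10 10 11, Add 19 19 5, Add 3 3 5] m = Some m' \<and> K4 n k w w0 v0 theta i (Suc j) m'"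
    using H n j i g by (simp del: of_nat_add of_nat_mult of_nat_Suc add: rf K4_def I4_def Base_w0[OF B] Base_v0[OF B])
qed simp

lemma p4_innerloop: "0 < n \<Longrightarrow> i < n \<Longrightarrow>
   ht (K4 n k w w0 v0 theta i 0) (While 3 1 (block p4inner)) (K4 n k w w0 v0 theta i n) (n * (11 + 2) + 2)"
  apply (rule ht_for)
   apply (rule p4_inner; simp)
  apply (simp add: K4_def I4_def)
  done

lemma p4_pre: "0 < n \<Longrightarrow> ht (\<lambda>m. I4 n k w w0 v0 theta i m \<and> m 2 < m 1) (block p4pre) (K4 n k w w0 v0 theta i 0) 4"
  unfolding p4pre_def
  by (rule ht_block') (auto simp del: of_nat_add of_nat_mult of_nat_Suc simp add: rf K4_def I4_def)

lemma p4_post: assumes n: "0 < n" and i: "i < n"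
  shows "ht (K4 n k w w0 v0 theta i n) (block p4post) (I4 n k w w0 v0 theta (Suc i)) 4"
  unfolding p4post_def
  by (rule ht_block') (use n i in \<open>auto simp del: of_nat_add of_nat_mult of_nat_Suc simp add: rf K4_def I4_def Pv_def rowM_Suc\<close>)

lemma p4_start: "0 < n \<Longrightarrow> ht (I3 n k w w0 v0 theta n) (block p4a) (I4 n k w w0 v0 theta 0) 11"
  unfolding p4a_def
  by (rule ht_block') (auto simp del: of_nat_add of_nat_mult of_nat_Suc simp add: rf I3_def I4_def vb_def Sb_def Wof_def rowM_def V0b_def W0b_def)

lemma P4_ht: assumes n: "0 < n"
  shows "ht (I3 n k w w0 v0 theta n) P4 (I4 n k w w0 v0 theta n) (11 + (n * ((4 + ((n * (11 + 2) + 2) + 4)) + 2) + 2))"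
  unfolding P4_def
  apply (rule ht_seq[OF p4_start[OF n]])
  apply (rule ht_for)
   apply (rule ht_seq[OF p4_pre[OF n] ht_seq[OF p4_innerloop p4_post]]; (simp add: n)?)
  apply (simp add: I4_def)
  done

section \<open>Phase 5: per-node coefficients\<close>

definition "p5a = [Const 2 0, Const 5 1, Add 6 1 1, Const 20 2, Const 31 0, Add 7 1 31, Add 12 0 0, Mul 13 1 6, Add 12 12 13,
   Add 22 12 1, Add 23 22 1, Add 24 23 1, Add 25 24 1, Add 26 25 1, Const 14 2, Add 15 0 14, Add 16 15 1, Add 17 16 1]"
definition "p5pre = [Const 3 0, Const 10 0, Add 8 0 0]"
definition "p5inner = [Add 9 12 3, Load 11 9, Add 9 16 3, Load 18 9, Mul 11 11 18, Add 9 8 7, Load 18 9, Mul 11 11 18, Add 10 10 11, Add 8 8 6, Add 3 3 5]"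
definition "p5post = [Add 9 17 2, Load 11 9, Add 9 16 2, Load 18 9, Add 9 15 2, Load 19 9, Mul 19 18 19, Add 19 19 5, Mul 19 11 19, Div 19 19 20, Add 9 23 2, Store 19 9,
          Mul 10 19 10, Add 9 24 2, Store 10 9,
          Add 9 12 2, Load 27 9, Add 9 22 2, Load 28 9, Mul 28 18 28, Add 28 28 5, Mul 28 11 28, Mul 28 27 28, Div 28 28 20, Add 9 25 2, Store 28 9,
          Mul 29 27 11, Mul 29 29 18, Div 29 29 20, Add 9 26 2, Store 29 9,
          Add 7 7 5, Add 2 2 5]"
definition "P5 = Seq (block p5a) (While 2 1 (Seq (block p5pre) (Seq (While 3 1 (block p5inner)) (block p5post))))"

definition "R5 n k w w0 v0 theta m \<longleftrightarrow> Base n k w w0 v0 theta m \<and> m 0 = real (Aof n) \<and> m 1 = real n \<and> m 5 = 1 \<and>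
   m 6 = real (2*n) \<and> m 20 = 2 \<and> m 12 = real (vb n 0) \<and> m 22 = real (vb n 1) \<and> m 23 = real (vb n 2) \<and> m 24 = real (vb n 3) \<and>
   m 25 = real (vb n 4) \<and> m 26 = real (vb n 5) \<and> m 15 = real (V0b n) \<and> m 16 = real (W0b n) \<and> m 17 = real (THb n) \<and>
   rowsM n n m (gj n w n) \<and> vr n 0 n m (Sv n w) \<and> vr n 1 n m (Pv n w w0 v0)"

definition "I5 n k w w0 v0 theta a m \<longleftrightarrow> R5 n k w w0 v0 theta m \<and> m 2 = real a \<and> m 7 = real (n + a) \<and>
   vr n 2 a m (Gv w0 v0 theta) \<and> vr n 3 a m (ALv n w w0 v0 theta) \<and> vr n 4 a m (BEv n w w0 v0 theta) \<and> vr n 5 a m (CCv n w w0 theta)"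

definition "K5 n k w w0 v0 theta a j m \<longleftrightarrow> I5 n k w w0 v0 theta a m \<and> m 3 = real j \<and> m 8 = real (rowM n j) \<and>
   m 10 = (\<Sum>j'<j. Sv n w j' * w0 j' * gj n w n j' (n + a))"

lemma p5_inner: assumes n: "0 < n" and a: "a < n"
  shows "ht (\<lambda>m. K5 n k w w0 v0 theta a j m \<and> m 3 < m 1) (block p5inner) (K5 n k w w0 v0 theta a (Suc j)) 11"
  unfolding p5inner_def
proof (rule ht_block')
  fix m assume H: "K5 n k w w0 v0 theta a j m \<and> m 3 < m 1"
  then have R: "rowsM n n m (gj n w n)" and B: "Base n k w w0 v0 theta m" and j: "j < n" and S: "vr n 0 n m (Sv n w)"
    by (auto simp: K5_def I5_def R5_def)
  have g: "m (rowM n j + (n + a)) = gj n w n j (n + a)" using rowsM_get[OF R j] a by simp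
  have s: "m (vb n 0 + j) = Sv n w j" using vr_get[OF S j] .
  show "\<exists>m'. sl [Add 9 12 3, Load 11 9, Add 9 16 3, Load 18 9, Mul 11 11 18, Add 9 8 7, Load 18 9, Mul 11 11 18, Add 10 10 11, Add 8 8 6, Add 3 3 5] m = Some m' \<and> K5 n k w w0 v0 theta a (Suc j) m'"
    using H n j a g s by (simp del: of_nat_add of_nat_mult of_nat_Suc add: rf K5_def I5_def R5_def Base_w0[OF B] rowM_Suc)
qed simp

lemma p5_innerloop: "0 < n \<Longrightarrow> a < n \<Longrightarrow>
   ht (K5 n k w w0 v0 theta a 0) (While 3 1 (block p5inner)) (K5 n k w w0 v0 theta a n) (n * (11 + 2) + 2)"
  apply (rule ht_for)
   apply (rule p5_inner; simp)
  apply (simp add: K5_def I5_def R5_def)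
  done

lemma p5_pre: "0 < n \<Longrightarrow> ht (\<lambda>m. I5 n k w w0 v0 theta a m \<and> m 2 < m 1) (block p5pre) (K5 n k w w0 v0 theta a 0) 3"
  unfolding p5pre_def
  by (rule ht_block') (auto simp del: of_nat_add of_nat_mult of_nat_Suc simp add: rf K5_def I5_def R5_def rowM_def Wof_def)

lemma p5_post: assumes n: "0 < n" and a: "a < n"
  shows "ht (K5 n k w w0 v0 theta a n) (block p5post) (I5 n k w w0 v0 theta (Suc a)) 33"
  unfolding p5post_def
proof (rule ht_block')
  fix m assume H: "K5 n k w w0 v0 theta a n m"
  then have B: "Base n k w w0 v0 theta m" and S: "vr n 0 n m (Sv n w)" and P: "vr n 1 n m (Pv n w w0 v0)"
    by (auto simp: K5_def I5_def R5_def)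
  have s: "m (vb n 0 + a) = Sv n w a" using vr_get[OF S a] .
  have p: "m (vb n 1 + a) = Pv n w w0 v0 a" using vr_get[OF P a] .
  show "\<exists>m'. sl [Add 9 17 2, Load 11 9, Add 9 16 2, Load 18 9, Add 9 15 2, Load 19 9, Mul 19 18 19, Add 19 19 5, Mul 19 11 19, Div 19 19 20, Add 9 23 2, Store 19 9,
          Mul 10 19 10, Add 9 24 2, Store 10 9,
          Add 9 12 2, Load 27 9, Add 9 22 2, Load 28 9, Mul 28 18 28, Add 28 28 5, Mul 28 11 28, Mul 28 27 28, Div 28 28 20, Add 9 25 2, Store 28 9,
          Mul 29 27 11, Mul 29 29 18, Div 29 29 20, Add 9 26 2, Store 29 9,
          Add 7 7 5, Add 2 2 5] m = Some m' \<and> I5 n k w w0 v0 theta (Suc a) m'"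
    using H n a s p by (simp del: of_nat_add of_nat_mult of_nat_Suc add: rf K5_def I5_def R5_def Base_w0[OF B] Base_v0[OF B] Base_th[OF B]
       Gv_def ALv_def BEv_def CCv_def Zv_def)
qed simp

lemma p5_start: "0 < n \<Longrightarrow> ht (I4 n k w w0 v0 theta n) (block p5a) (I5 n k w w0 v0 theta 0) 18"
  unfolding p5a_def
  by (rule ht_block') (auto simp del: of_nat_add of_nat_mult of_nat_Suc simp add: rf I4_def I5_def R5_def vb_def Sb_def Wof_def V0b_def W0b_def THb_def)

lemma P5_ht: assumes n: "0 < n"
  shows "ht (I4 n k w w0 v0 theta n) P5 (I5 n k w w0 v0 theta n) (18 + (n * ((3 + ((n * (11 + 2) + 2) + 33)) + 2) + 2))"
  unfolding P5_def
  apply (rule ht_seq[OF p5_start[OF n]])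
  apply (rule ht_for)
   apply (rule ht_seq[OF p5_pre[OF n] ht_seq[OF p5_innerloop p5_post]]; (simp add: n)?)
  apply (simp add: I5_def R5_def)
  done


definition "GAv n w w0 v0 theta a b = CCv n w w0 theta b * gj n w n b (n + a) * Gv w0 v0 theta a"
definition "phi n w w0 v0 theta a b t r = ALv n w w0 v0 theta a * t + BEv n w w0 v0 theta b * r + GAv n w w0 v0 theta a b * t * r"
definition "TS n w w0 v0 theta k a b = (ALv n w w0 v0 theta a - BEv n w w0 v0 theta b + GAv n w w0 v0 theta a b * k) / (2 * GAv n w w0 v0 theta a b)"
definition "VAL n w w0 v0 theta k a b = ALv n w w0 v0 theta a * TS n w w0 v0 theta k a b + BEv n w w0 v0 theta b * (k - TS n w w0 v0 theta k a b)
   + GAv n w w0 v0 theta a b * TS n w w0 v0 theta k a b * (k - TS n w w0 v0 theta k a b)"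
definition "cand_ok n w w0 v0 theta k a b V \<longleftrightarrow> ALv n w w0 v0 theta a * k \<le> V \<and> BEv n w w0 v0 theta b * k \<le> V \<and>
   (0 < GAv n w w0 v0 theta a b \<longrightarrow> 0 < TS n w w0 v0 theta k a b \<longrightarrow> TS n w w0 v0 theta k a b < k \<longrightarrow> VAL n w w0 v0 theta k a b \<le> V)"

lemma cand_mono: "cand_ok n w w0 v0 theta k a b V \<Longrightarrow> V \<le> V' \<Longrightarrow> cand_ok n w w0 v0 theta k a b V'"
  unfolding cand_ok_def by auto

definition "Done n w w0 v0 theta k a b V \<longleftrightarrow> (\<forall>a'<a. \<forall>b'<n. cand_ok n w w0 v0 theta k a' b' V) \<and> (\<forall>b'<b. cand_ok n w w0 v0 theta k a b' V)"

lemma Done_mono: "Done n w w0 v0 theta k a b V \<Longrightarrow> V \<le> V' \<Longrightarrow> Done n w w0 v0 theta k a b V'"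
  unfolding Done_def using cand_mono by blast

definition "good n k w w0 v0 theta (m::mem) \<longleftrightarrow> (\<exists>ba bb. ba < n \<and> bb < n \<and> m 41 = real ba \<and> m 42 = real bb \<and>
   0 \<le> m 43 \<and> 0 \<le> m 44 \<and> m 43 + m 44 \<le> k \<and> m 40 = phi n w w0 v0 theta ba bb (m 43) (m 44) \<and> 0 \<le> m 40)"

lemma good_reg[simp]: "r < 40 \<or> 44 < r \<Longrightarrow> good n k w w0 v0 theta (m(r := v)) = good n k w w0 v0 theta m"
  unfolding good_def by auto

lemma good_new:
  assumes "good n k w w0 v0 theta m" "a < n" "b < n" "0 \<le> t" "0 \<le> r" "t + r \<le> k" "V' = phi n w w0 v0 theta a b t r" "m 40 < V'"
  shows "good n k w w0 v0 theta (m(40 := V', 41 := real a, 42 := real b, 43 := t, 44 := r))"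
proof -
  have "0 \<le> m 40" using assms(1) unfolding good_def by auto
  then show ?thesis using assms unfolding good_def by auto
qed

definition "C6o n k w w0 v0 theta a m \<longleftrightarrow> Base n k w w0 v0 theta m \<and> m 0 = real (Aof n) \<and> m 1 = real n \<and> m 2 = real a \<and> m 5 = 1 \<and>
   m 6 = real (2*n) \<and> m 7 = real (n + a) \<and> m 20 = 2 \<and> m 23 = real (vb n 2) \<and> m 24 = real (vb n 3) \<and>
   m 25 = real (vb n 4) \<and> m 26 = real (vb n 5) \<and> m 30 = k \<and> m 31 = 0 \<and>
   rowsM n n m (gj n w n) \<and> vr n 2 n m (Gv w0 v0 theta) \<and> vr n 3 n m (ALv n w w0 v0 theta) \<and> vr n 4 n m (BEv n w w0 v0 theta) \<and>
   vr n 5 n m (CCv n w w0 theta)"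

definition "C6 n k w w0 v0 theta a b m \<longleftrightarrow> C6o n k w w0 v0 theta a m \<and> m 3 = real b \<and> m 8 = real (rowM n b) \<and>
   m 33 = ALv n w w0 v0 theta a \<and> m 34 = Gv w0 v0 theta a"

lemma C6o_upd[simp]: "0 < n \<Longrightarrow> 32 < r \<Longrightarrow> r < 64 \<Longrightarrow> C6o n k w w0 v0 theta a (m(r := v)) = C6o n k w w0 v0 theta a m"
  unfolding C6o_def by simp

lemma C6_upd[simp]: "0 < n \<Longrightarrow> 34 < r \<Longrightarrow> r < 64 \<Longrightarrow> C6 n k w w0 v0 theta a b (m(r := v)) = C6 n k w w0 v0 theta a b m"
  unfolding C6_def by simp

definition "K6 n k w w0 v0 theta a b m \<longleftrightarrow> C6 n k w w0 v0 theta a b m \<and> good n k w w0 v0 theta m \<and> Done n w w0 v0 theta k a b (m 40)"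

definition "p6s1 = [Add 9 25 3, Load 35 9, Add 9 26 3, Load 36 9, Add 9 8 7, Load 37 9, Mul 36 36 37, Mul 36 36 34, Mul 38 33 30]"
definition "p6c1 = IfLess 40 38 (block [Add 40 38 31, Add 41 2 31, Add 42 3 31, Add 43 30 31, Const 44 0]) Skip"
definition "p6s2 = [Mul 38 35 30]"
definition "p6c2 = IfLess 40 38 (block [Add 40 38 31, Add 41 2 31, Add 42 3 31, Const 43 0, Add 44 30 31]) Skip"
definition "p6ts = [Sub 45 33 35, Mul 46 36 30, Add 45 45 46, Mul 46 20 36, Div 45 45 46]"
definition "p6val = [Sub 47 30 45, Mul 38 33 45, Mul 46 35 47, Add 38 38 46, Mul 46 36 45, Mul 46 46 47, Add 38 38 46]"
definition "p6u3 = [Add 40 38 31, Add 41 2 31, Add 42 3 31, Add 43 45 31, Add 44 47 31]"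
definition "p6c3 = IfLess 31 36 (Seq (block p6ts) (IfLess 31 45 (IfLess 45 30 (Seq (block p6val) (IfLess 40 38 (block p6u3) Skip)) Skip) Skip)) Skip"
definition "p6ipost = [Add 8 8 6, Add 3 3 5]"
definition "P6inner = Seq (block p6s1) (Seq p6c1 (Seq (block p6s2) (Seq p6c2 (Seq p6c3 (block p6ipost)))))"

abbreviation "AL' n w w0 v0 theta a \<equiv> ALv n w w0 v0 theta a"

definition "A1 n k w w0 v0 theta a b m \<longleftrightarrow> C6 n k w w0 v0 theta a b m \<and> good n k w w0 v0 theta m \<and> Done n w w0 v0 theta k a b (m 40) \<and>
   m 35 = BEv n w w0 v0 theta b \<and> m 36 = GAv n w w0 v0 theta a b"

lemma p6_s1: assumes n: "0 < n" and a: "a < n"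
  shows "ht (\<lambda>m. K6 n k w w0 v0 theta a b m \<and> m 3 < m 1) (block p6s1)
     (\<lambda>m. A1 n k w w0 v0 theta a b m \<and> m 38 = ALv n w w0 v0 theta a * k) 9"
  unfolding p6s1_def
proof (rule ht_block')
  fix m assume H: "K6 n k w w0 v0 theta a b m \<and> m 3 < m 1"
  then have R: "rowsM n n m (gj n w n)" and b: "b < n" and B4: "vr n 4 n m (BEv n w w0 v0 theta)" and B5: "vr n 5 n m (CCv n w w0 theta)"
    by (auto simp: K6_def C6_def C6o_def)
  have g: "m (rowM n b + (n + a)) = gj n w n b (n + a)" using rowsM_get[OF R b] a by simp
  have s4: "m (vb n 4 + b) = BEv n w w0 v0 theta b" using vr_get[OF B4 b] .
  have s5: "m (vb n 5 + b) = CCv n w w0 theta b" using vr_get[OF B5 b] .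
  show "\<exists>m'. sl [Add 9 25 3, Load 35 9, Add 9 26 3, Load 36 9, Add 9 8 7, Load 37 9, Mul 36 36 37, Mul 36 36 34, Mul 38 33 30] m = Some m' \<and>
      A1 n k w w0 v0 theta a b m' \<and> m' 38 = ALv n w w0 v0 theta a * k"
    using H n a b g s4 s5 by (simp del: of_nat_add of_nat_mult of_nat_Suc add: rf K6_def A1_def C6_def C6o_def GAv_def)
qed simp

lemma p6_c1: assumes n: "0 < n" and a: "a < n" and b: "b < n"
  shows "ht (\<lambda>m. A1 n k w w0 v0 theta a b m \<and> m 38 = ALv n w w0 v0 theta a * k) p6c1
     (\<lambda>m. A1 n k w w0 v0 theta a b m \<and> ALv n w w0 v0 theta a * k \<le> m 40) 7"
proof -
  have t1: "ht (\<lambda>m. (A1 n k w w0 v0 theta a b m \<and> m 38 = ALv n w w0 v0 theta a * k) \<and> m 40 < m 38)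
     (block [Add 40 38 31, Add 41 2 31, Add 42 3 31, Add 43 30 31, Const 44 0])
     (\<lambda>m. A1 n k w w0 v0 theta a b m \<and> ALv n w w0 v0 theta a * k \<le> m 40) 5"
  proof (rule ht_block')
    fix m assume H: "(A1 n k w w0 v0 theta a b m \<and> m 38 = ALv n w w0 v0 theta a * k) \<and> m 40 < m 38"
    then have G: "good n k w w0 v0 theta m" and D: "Done n w w0 v0 theta k a b (m 40)" and k0: "0 \<le> k"
      and r: "m 2 = real a" "m 3 = real b" "m 30 = k" "m 31 = 0"
      by (auto simp: A1_def C6_def C6o_def good_def)
    have G': "good n k w w0 v0 theta (m(40 := ALv n w w0 v0 theta a * k, 41 := real a, 42 := real b, 43 := k, 44 := 0))"
      by (rule good_new[OF G a b k0]) (use H in \<open>auto simp: phi_def\<close>)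
    have D': "Done n w w0 v0 theta k a b (ALv n w w0 v0 theta a * k)" using D H Done_mono by fastforce
    show "\<exists>m'. sl [Add 40 38 31, Add 41 2 31, Add 42 3 31, Add 43 30 31, Const 44 0] m = Some m' \<and>
        A1 n k w w0 v0 theta a b m' \<and> ALv n w w0 v0 theta a * k \<le> m' 40"
      using H n G' D' r by (simp add: A1_def)
  qed simp
  have t2: "ht (\<lambda>m. (A1 n k w w0 v0 theta a b m \<and> m 38 = ALv n w w0 v0 theta a * k) \<and> \<not> m 40 < m 38) Skip
     (\<lambda>m. A1 n k w w0 v0 theta a b m \<and> ALv n w w0 v0 theta a * k \<le> m 40) 0"
    by (rule ht_conseq[OF ht_skip]) auto
  show ?thesis unfolding p6c1_def using ht_if[OF t1 t2] by simp
qed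


definition "A2 n k w w0 v0 theta a b m \<longleftrightarrow> A1 n k w w0 v0 theta a b m \<and> ALv n w w0 v0 theta a * k \<le> m 40"

lemma p6_s2: assumes n: "0 < n"
  shows "ht (\<lambda>m. A1 n k w w0 v0 theta a b m \<and> ALv n w w0 v0 theta a * k \<le> m 40) (block p6s2)
     (\<lambda>m. A2 n k w w0 v0 theta a b m \<and> m 38 = BEv n w w0 v0 theta b * k) 1"
  unfolding p6s2_def
  by (rule ht_block') (use n in \<open>auto simp: A1_def A2_def C6_def C6o_def\<close>)

definition "A3 n k w w0 v0 theta a b m \<longleftrightarrow> A2 n k w w0 v0 theta a b m \<and> BEv n w w0 v0 theta b * k \<le> m 40"

lemma p6_c2: assumes n: "0 < n" and a: "a < n" and b: "b < n"
  shows "ht (\<lambda>m. A2 n k w w0 v0 theta a b m \<and> m 38 = BEv n w w0 v0 theta b * k) p6c2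
     (A3 n k w w0 v0 theta a b) 7"
proof -
  have t1: "ht (\<lambda>m. (A2 n k w w0 v0 theta a b m \<and> m 38 = BEv n w w0 v0 theta b * k) \<and> m 40 < m 38)
     (block [Add 40 38 31, Add 41 2 31, Add 42 3 31, Const 43 0, Add 44 30 31])
     (A3 n k w w0 v0 theta a b) 5"
  proof (rule ht_block')
    fix m assume H: "(A2 n k w w0 v0 theta a b m \<and> m 38 = BEv n w w0 v0 theta b * k) \<and> m 40 < m 38"
    then have G: "good n k w w0 v0 theta m" and D: "Done n w w0 v0 theta k a b (m 40)" and k0: "0 \<le> k"
      and r: "m 2 = real a" "m 3 = real b" "m 30 = k" "m 31 = 0" and al: "ALv n w w0 v0 theta a * k \<le> m 40"
      by (auto simp: A2_def A1_def C6_def C6o_def good_def)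
    have G': "good n k w w0 v0 theta (m(40 := BEv n w w0 v0 theta b * k, 41 := real a, 42 := real b, 43 := 0, 44 := k))"
      by (rule good_new[OF G a b]) (use H k0 in \<open>auto simp: phi_def\<close>)
    have D': "Done n w w0 v0 theta k a b (BEv n w w0 v0 theta b * k)" using D H Done_mono by fastforce
    show "\<exists>m'. sl [Add 40 38 31, Add 41 2 31, Add 42 3 31, Const 43 0, Add 44 30 31] m = Some m' \<and>
        A3 n k w w0 v0 theta a b m'"
      using H n G' D' r al by (simp add: A3_def A2_def A1_def)
  qed simp
  have t2: "ht (\<lambda>m. (A2 n k w w0 v0 theta a b m \<and> m 38 = BEv n w w0 v0 theta b * k) \<and> \<not> m 40 < m 38) Skip
     (A3 n k w w0 v0 theta a b) 0"
    by (rule ht_conseq[OF ht_skip]) (auto simp: A3_def)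
  show ?thesis unfolding p6c2_def using ht_if[OF t1 t2] by simp
qed

definition "A4 n k w w0 v0 theta a b m \<longleftrightarrow> C6 n k w w0 v0 theta a b m \<and> good n k w w0 v0 theta m \<and> Done n w w0 v0 theta k a b (m 40) \<and>
   cand_ok n w w0 v0 theta k a b (m 40)"

lemma p6_c3: assumes n: "0 < n" and a: "a < n" and b: "b < n"
  shows "ht (A3 n k w w0 v0 theta a b) p6c3 (A4 n k w w0 v0 theta a b) 30"
proof -
  let ?al = "ALv n w w0 v0 theta a" and ?be = "BEv n w w0 v0 theta b" and ?ga = "GAv n w w0 v0 theta a b"
  let ?ts = "TS n w w0 v0 theta k a b" and ?val = "VAL n w w0 v0 theta k a b"
  define B3 where "B3 m \<longleftrightarrow> A3 n k w w0 v0 theta a b m \<and> 0 < ?ga \<and> m 45 = ?ts" for m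
  define B4 where "B4 m \<longleftrightarrow> B3 m \<and> 0 < ?ts \<and> ?ts < k \<and> m 47 = k - ?ts \<and> m 38 = ?val" for m
  have ts: "ht (\<lambda>m. A3 n k w w0 v0 theta a b m \<and> m 31 < m 36) (block p6ts) B3 5"
    unfolding p6ts_def
    by (rule ht_block') (use n in \<open>auto simp: B3_def A3_def A2_def A1_def C6_def C6o_def TS_def\<close>)
  have val: "ht (\<lambda>m. (B3 m \<and> m 31 < m 45) \<and> m 45 < m 30) (block p6val) B4 7"
    unfolding p6val_def
    by (rule ht_block') (use n in \<open>auto simp: B4_def B3_def A3_def A2_def A1_def C6_def C6o_def VAL_def\<close>)
  have u3: "ht (\<lambda>m. B4 m \<and> m 40 < m 38) (block p6u3) (A4 n k w w0 v0 theta a b) 5"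
    unfolding p6u3_def
  proof (rule ht_block')
    fix m assume H: "B4 m \<and> m 40 < m 38"
    then have G: "good n k w w0 v0 theta m" and D: "Done n w w0 v0 theta k a b (m 40)"
      and r: "m 2 = real a" "m 3 = real b" "m 30 = k" "m 31 = 0" "m 45 = ?ts" "m 47 = k - ?ts" "m 38 = ?val"
      and al: "?al * k \<le> m 40" and be: "?be * k \<le> m 40" and tsb: "0 < ?ts" "?ts < k" and C: "C6 n k w w0 v0 theta a b m"
      by (auto simp: B4_def B3_def A3_def A2_def A1_def C6_def C6o_def)
    have G': "good n k w w0 v0 theta (m(40 := ?val, 41 := real a, 42 := real b, 43 := ?ts, 44 := k - ?ts))"
      by (rule good_new[OF G a b]) (use H tsb r in \<open>auto simp: phi_def VAL_def\<close>)
    have D': "Done n w w0 v0 theta k a b ?val" using D H r Done_mono by fastforce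
    have c': "cand_ok n w w0 v0 theta k a b ?val" using al be H r unfolding cand_ok_def by auto
    show "\<exists>m'. sl [Add 40 38 31, Add 41 2 31, Add 42 3 31, Add 43 45 31, Add 44 47 31] m = Some m' \<and> A4 n k w w0 v0 theta a b m'"
      using n G' D' c' r C by (simp add: A4_def)
  qed simp
  have s3: "ht (\<lambda>m. B4 m \<and> \<not> m 40 < m 38) Skip (A4 n k w w0 v0 theta a b) 0"
    by (rule ht_conseq[OF ht_skip]) (auto simp: A4_def B4_def B3_def A3_def A2_def A1_def cand_ok_def)
  have i3: "ht B4 (IfLess 40 38 (block p6u3) Skip) (A4 n k w w0 v0 theta a b) 7"
    using ht_if[OF u3 s3] by simp
  have i2: "ht (\<lambda>m. B3 m \<and> m 31 < m 45) (IfLess 45 30 (Seq (block p6val) (IfLess 40 38 (block p6u3) Skip)) Skip) (A4 n k w w0 v0 theta a b) 16"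
  proof -
    have t: "ht (\<lambda>m. (B3 m \<and> m 31 < m 45) \<and> m 45 < m 30) (Seq (block p6val) (IfLess 40 38 (block p6u3) Skip)) (A4 n k w w0 v0 theta a b) 14"
      using ht_seq[OF val i3] by simp
    have f: "ht (\<lambda>m. (B3 m \<and> m 31 < m 45) \<and> \<not> m 45 < m 30) Skip (A4 n k w w0 v0 theta a b) 0"
      by (rule ht_conseq[OF ht_skip]) (auto simp: A4_def B3_def A3_def A2_def A1_def C6_def C6o_def cand_ok_def)
    show ?thesis using ht_if[OF t f] by simp
  qed
  have i1: "ht B3 (IfLess 31 45 (IfLess 45 30 (Seq (block p6val) (IfLess 40 38 (block p6u3) Skip)) Skip) Skip) (A4 n k w w0 v0 theta a b) 18"
  proof -
    have f: "ht (\<lambda>m. B3 m \<and> \<not> m 31 < m 45) Skip (A4 n k w w0 v0 theta a b) 0"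
      by (rule ht_conseq[OF ht_skip]) (auto simp: A4_def B3_def A3_def A2_def A1_def C6_def C6o_def cand_ok_def)
    show ?thesis using ht_if[OF i2 f] by simp
  qed
  have t0: "ht (\<lambda>m. A3 n k w w0 v0 theta a b m \<and> m 31 < m 36) (Seq (block p6ts) (IfLess 31 45 (IfLess 45 30 (Seq (block p6val) (IfLess 40 38 (block p6u3) Skip)) Skip) Skip)) (A4 n k w w0 v0 theta a b) 23"
    using ht_seq[OF ts i1] by simp
  have f0: "ht (\<lambda>m. A3 n k w w0 v0 theta a b m \<and> \<not> m 31 < m 36) Skip (A4 n k w w0 v0 theta a b) 0"
    by (rule ht_conseq[OF ht_skip]) (auto simp: A4_def A3_def A2_def A1_def C6_def C6o_def cand_ok_def)
  show ?thesis unfolding p6c3_def using ht_if[OF t0 f0] by (rule ht_conseq) auto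
qed

lemma p6_ipost: assumes n: "0 < n" and a: "a < n" and b: "b < n"
  shows "ht (A4 n k w w0 v0 theta a b) (block p6ipost) (K6 n k w w0 v0 theta a (Suc b)) 2"
  unfolding p6ipost_def
proof (rule ht_block')
  fix m assume H: "A4 n k w w0 v0 theta a b m"
  then have D: "Done n w w0 v0 theta k a (Suc b) (m 40)"
    by (auto simp: A4_def Done_def less_Suc_eq)
  show "\<exists>m'. sl [Add 8 8 6, Add 3 3 5] m = Some m' \<and> K6 n k w w0 v0 theta a (Suc b) m'"
    using H n D by (simp del: of_nat_add of_nat_mult of_nat_Suc add: rf A4_def K6_def C6_def C6o_def rowM_Suc)
qed simp

lemma p6_inner: assumes n: "0 < n" and a: "a < n" and b: "b < n"
  shows "ht (\<lambda>m. K6 n k w w0 v0 theta a b m \<and> m 3 < m 1) P6inner (K6 n k w w0 v0 theta a (Suc b)) (9 + (7 + (1 + (7 + (30 + 2)))))"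
  unfolding P6inner_def
  using ht_seq[OF p6_s1[OF n a] ht_seq[OF p6_c1[OF n a b] ht_seq[OF p6_s2[OF n] ht_seq[OF p6_c2[OF n a b]
     ht_seq[OF p6_c3[OF n a b] p6_ipost[OF n a b]]]]]] unfolding A2_def .


lemma p6_innerloop: "0 < n \<Longrightarrow> a < n \<Longrightarrow>
   ht (K6 n k w w0 v0 theta a 0) (While 3 1 P6inner) (K6 n k w w0 v0 theta a n) (n * ((9 + (7 + (1 + (7 + (30 + 2))))) + 2) + 2)"
  apply (rule ht_for)
   apply (rule p6_inner; simp)
  apply (simp add: K6_def C6_def C6o_def)
  done

definition "p6a = [Const 2 0, Const 31 0, Const 40 0, Const 41 0, Const 42 0, Const 43 0, Const 44 0, Add 7 1 31, Const 32 1, Add 9 0 32, Load 30 9]"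
definition "p6opre = [Const 3 0, Add 8 0 0, Add 9 24 2, Load 33 9, Add 9 23 2, Load 34 9]"
definition "p6opost = [Add 7 7 5, Add 2 2 5]"
definition "P6 = Seq (block p6a) (While 2 1 (Seq (block p6opre) (Seq (While 3 1 P6inner) (block p6opost))))"

definition "I6 n k w w0 v0 theta a m \<longleftrightarrow> C6o n k w w0 v0 theta a m \<and> good n k w w0 v0 theta m \<and> Done n w w0 v0 theta k a 0 (m 40)"

lemma p6_opre: assumes n: "0 < n" and a: "a < n"
  shows "ht (\<lambda>m. I6 n k w w0 v0 theta a m \<and> m 2 < m 1) (block p6opre) (K6 n k w w0 v0 theta a 0) 6"
  unfolding p6opre_def
proof (rule ht_block')
  fix m assume H: "I6 n k w w0 v0 theta a m \<and> m 2 < m 1"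
  then have V2: "vr n 2 n m (Gv w0 v0 theta)" and V3: "vr n 3 n m (ALv n w w0 v0 theta)" by (auto simp: I6_def C6o_def)
  have s2: "m (vb n 2 + a) = Gv w0 v0 theta a" using vr_get[OF V2 a] .
  have s3: "m (vb n 3 + a) = ALv n w w0 v0 theta a" using vr_get[OF V3 a] .
  show "\<exists>m'. sl [Const 3 0, Add 8 0 0, Add 9 24 2, Load 33 9, Add 9 23 2, Load 34 9] m = Some m' \<and> K6 n k w w0 v0 theta a 0 m'"
    using H n a s2 s3 by (simp del: of_nat_add of_nat_mult of_nat_Suc add: rf I6_def K6_def C6_def C6o_def rowM_def Wof_def)
qed simp

lemma p6_opost: assumes n: "0 < n" and a: "a < n"
  shows "ht (K6 n k w w0 v0 theta a n) (block p6opost) (I6 n k w w0 v0 theta (Suc a)) 2"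
  unfolding p6opost_def
proof (rule ht_block')
  fix m assume H: "K6 n k w w0 v0 theta a n m"
  then have D: "Done n w w0 v0 theta k (Suc a) 0 (m 40)"
    by (auto simp: K6_def Done_def less_Suc_eq)
  show "\<exists>m'. sl [Add 7 7 5, Add 2 2 5] m = Some m' \<and> I6 n k w w0 v0 theta (Suc a) m'"
    using H n D by (simp del: of_nat_add of_nat_mult of_nat_Suc add: rf I6_def K6_def C6_def C6o_def)
qed simp

lemma Aof_ne_small[simp]: "0 < n \<Longrightarrow> r < 64 \<Longrightarrow> (Aof n = r) = False"
  using Aof_ge[of n] by auto

lemma Base_k': "Base n k w w0 v0 theta m \<Longrightarrow> m (Suc (Aof n)) = k"
  using Base_k[of n k w w0 v0 theta m] by simp

lemma p6_start: assumes n: "0 < n" and k0: "0 \<le> k"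
  shows "ht (I5 n k w w0 v0 theta n) (block p6a) (I6 n k w w0 v0 theta 0) 11"
  unfolding p6a_def
proof (rule ht_block')
  fix m assume H: "I5 n k w w0 v0 theta n m"
  then have B: "Base n k w w0 v0 theta m" by (auto simp: I5_def R5_def)
  have G: "good n k w w0 v0 theta (m(2 := 0, 31 := 0, 40 := 0, 41 := 0, 42 := 0, 43 := 0, 44 := 0, 7 := real n, 32 := 1, 9 := real (Suc (Aof n)), 30 := k))"
    unfolding good_def using n k0 by (intro exI[of _ 0]) (simp add: phi_def)
  have D: "Done n w w0 v0 theta k 0 0 V" for V by (simp add: Done_def)
  show "\<exists>m'. sl [Const 2 0, Const 31 0, Const 40 0, Const 41 0, Const 42 0, Const 43 0, Const 44 0, Add 7 1 31, Const 32 1, Add 9 0 32, Load 30 9] m = Some m' \<and>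
     I6 n k w w0 v0 theta 0 m'"
    using H n G D Base_k'[OF B] by (simp del: of_nat_add of_nat_mult of_nat_Suc add: rf I5_def R5_def I6_def C6o_def)
qed simp

definition "T6in n = n * ((9 + (7 + (1 + (7 + (30 + 2))))) + 2) + 2"

lemma P6_ht: assumes n: "0 < n" and k0: "0 \<le> k"
  shows "ht (I5 n k w w0 v0 theta n) P6 (I6 n k w w0 v0 theta n) (11 + (n * ((6 + (T6in n + 2)) + 2) + 2))"
  unfolding P6_def T6in_def
  apply (rule ht_seq[OF p6_start[OF n k0]])
  apply (rule ht_for)
   apply (rule ht_seq[OF p6_opre[OF n] ht_seq[OF p6_innerloop p6_opost]]; (simp add: n)?)
  apply (simp add: I6_def C6o_def)
  done


definition "Fin n k w w0 v0 theta ba bb bt br \<longleftrightarrow> ba < n \<and> bb < n \<and> 0 \<le> bt \<and> 0 \<le> br \<and> bt + br \<le> k \<and>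
   0 \<le> phi n w w0 v0 theta ba bb bt br \<and> (\<forall>a'<n. \<forall>b'<n. cand_ok n w w0 v0 theta k a' b' (phi n w w0 v0 theta ba bb bt br))"

definition "S7 n ba bb bt br m \<longleftrightarrow> m 0 = real (Aof n) \<and> m 1 = real n \<and> m 5 = 1 \<and> m 26 = real (vb n 5) \<and> m 31 = 0 \<and>
   m 41 = real ba \<and> m 42 = real bb \<and> m 43 = bt \<and> m 44 = br"

lemma I6_S7: "I6 n k w w0 v0 theta n m \<Longrightarrow> \<exists>ba bb bt br. Fin n k w w0 v0 theta ba bb bt br \<and> S7 n ba bb bt br m"
proof -
  assume H: "I6 n k w w0 v0 theta n m"
  then obtain ba bb where g: "ba < n" "bb < n" "m 41 = real ba" "m 42 = real bb" "0 \<le> m 43" "0 \<le> m 44" "m 43 + m 44 \<le> k"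
     "m 40 = phi n w w0 v0 theta ba bb (m 43) (m 44)" "0 \<le> m 40"
    unfolding I6_def good_def by blast
  have D: "Done n w w0 v0 theta k n 0 (m 40)" using H by (simp add: I6_def)
  show ?thesis
    using g D H by (intro exI[of _ ba] exI[of _ bb] exI[of _ "m 43"] exI[of _ "m 44"])
      (auto simp: Fin_def S7_def Done_def I6_def C6o_def)
qed

definition "Q7 n ba bb bt br m \<longleftrightarrow> m 0 = real (Aof n) \<and> m 1 = real n \<and> m (Qb n) = real ba \<and> m (Suc (Qb n)) = bt \<and>
   m (Suc (Suc (Qb n))) = real bb \<and> m (Suc (Suc (Suc (Qb n)))) = br"

lemma Qb_ne_small[simp]: "0 < n \<Longrightarrow> r < 64 \<Longrightarrow> (Qb n = r) = False" "0 < n \<Longrightarrow> r < 64 \<Longrightarrow> (r = Qb n) = False"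
  using base_ne_reg(7)[of n r 0] base_ne_reg(8)[of n r 0] by simp_all

lemma vb5_Qb[simp]: "vb n 5 + n = Qb n" unfolding vb_def Qb_def by simp

definition "p7a = [Add 48 26 1, Add 9 48 31, Store 41 9, Add 9 9 5, Store 43 9, Add 9 9 5, Store 42 9, Add 9 9 5, Store 44 9]"

lemma p7_a: "0 < n \<Longrightarrow> ht (S7 n ba bb bt br) (block p7a) (Q7 n ba bb bt br) 9"
  unfolding p7a_def
  by (rule ht_block') (auto simp del: of_nat_add of_nat_mult of_nat_Suc simp add: rf S7_def Q7_def)

lemma Lof_ne_reg[simp]: "0 < n \<Longrightarrow> r < 6 \<Longrightarrow> (Lof n + z = r) = False" "0 < n \<Longrightarrow> r < 6 \<Longrightarrow> (r = Lof n + z) = False"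
  using Lof_ge6[of n] by auto

lemma Lof_ne_reg2[simp]: "0 < n \<Longrightarrow> r < 6 \<Longrightarrow> (z + Lof n = r) = False" "0 < n \<Longrightarrow> r < 6 \<Longrightarrow> (r = z + Lof n) = False"
  using Lof_ge6[of n] by auto

lemma Qb_big: "0 < n \<Longrightarrow> Lof n + 2 * n + 4 \<le> Qb n"
  using Lof_le[of n] Sb_ge[of n] Aof_ge[of n] unfolding Qb_def by linarith

lemma Qb_ne_out[simp]: "0 < n \<Longrightarrow> z < 2 * n \<Longrightarrow> (Qb n = Lof n + z) = False"
  "0 < n \<Longrightarrow> z < 2 * n \<Longrightarrow> (Suc (Qb n) = Lof n + z) = False"
  "0 < n \<Longrightarrow> z < 2 * n \<Longrightarrow> (Suc (Suc (Qb n)) = Lof n + z) = False"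
  "0 < n \<Longrightarrow> z < 2 * n \<Longrightarrow> (Suc (Suc (Suc (Qb n))) = Lof n + z) = False"
  using Qb_big[of n] by auto

definition "Z7 n ba bb bt br z m \<longleftrightarrow> Q7 n ba bb bt br m \<and> m 2 = real (Lof n + z) \<and> m 3 = real (Lof n + 2 * n) \<and> m 4 = 1 \<and> m 5 = 0 \<and>
   (\<forall>x<z. m (Lof n + x) = 0)"

definition "p7z = [Mul 2 1 1, Add 2 2 1, Add 2 2 1, Add 2 2 1, Const 4 2, Add 2 2 4, Add 3 2 1, Add 3 3 1, Const 4 1, Const 5 0]"

lemma p7_z: "0 < n \<Longrightarrow> ht (Q7 n ba bb bt br) (block p7z) (Z7 n ba bb bt br 0) 10"
  unfolding p7z_def
  by (rule ht_block') (auto simp del: of_nat_add of_nat_mult of_nat_Suc simp add: rf Q7_def Z7_def Lof_def)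

lemma p7_zb: assumes n: "0 < n" and z: "z < 2 * n"
  shows "ht (\<lambda>m. Z7 n ba bb bt br z m \<and> m 2 < m 3) (block [Store 5 2, Add 2 2 4]) (Z7 n ba bb bt br (Suc z)) 2"
proof (rule ht_block')
  fix m assume H: "Z7 n ba bb bt br z m \<and> m 2 < m 3"
  then have Zs: "\<forall>x<z. m (Lof n + x) = 0" and r5: "m 5 = 0" by (auto simp: Z7_def)
  have Zs': "\<forall>x<Suc z. (m(Lof n + z := 0)) (Lof n + x) = 0"
    using Zs by (auto simp: less_Suc_eq)
  show "\<exists>m'. sl [Store 5 2, Add 2 2 4] m = Some m' \<and> Z7 n ba bb bt br (Suc z) m'"
    using H n z Zs' Lof_ge6[OF n] by (simp del: of_nat_add of_nat_mult of_nat_Suc add: rf Z7_def Q7_def)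
qed simp

lemma p7_zloop: "0 < n \<Longrightarrow> ht (Z7 n ba bb bt br 0) (While 2 3 (block [Store 5 2, Add 2 2 4])) (Z7 n ba bb bt br (2 * n)) (2 * n * (2 + 2) + 2)"
  apply (rule ht_for)
   apply (rule p7_zb; simp)
  apply (simp add: Z7_def)
  done

definition "p7f1 = [Add 3 0 0, Add 4 1 1, Mul 4 1 4, Add 3 3 4, Add 3 3 1, Add 3 3 1, Add 3 3 1, Add 3 3 1, Add 3 3 1, Add 3 3 1,
   Mul 2 1 1, Add 2 2 1, Add 2 2 1, Add 2 2 1, Const 4 2, Add 2 2 4]"

definition "F7 n ba bb bt br m \<longleftrightarrow> Q7 n ba bb bt br m \<and> m 3 = real (Qb n) \<and> m 2 = real (Lof n) \<and> (\<forall>x<2*n. m (Lof n + x) = 0)"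

lemma p7_f1: "0 < n \<Longrightarrow> ht (Z7 n ba bb bt br (2 * n)) (block p7f1) (F7 n ba bb bt br) 16"
  unfolding p7f1_def
  by (rule ht_block') (auto simp del: of_nat_add of_nat_mult of_nat_Suc simp add: rf Z7_def F7_def Q7_def Lof_def Qb_def Sb_def Wof_def)

definition "p7f2 = [Load 4 3, Add 4 4 2, Const 5 1, Add 3 3 5, Load 0 3, Add 3 3 5, Add 2 2 1, Load 1 3, Add 1 1 2, Add 3 3 5, Load 3 3, Store 0 4, Store 3 1]"

definition "Out n ba bb bt br (m::mem) \<longleftrightarrow> (\<forall>i<n. m (out1 n i) = (if i = ba then bt else 0) \<and> m (out2 n i) = (if i = bb then br else 0))"

lemma out_fin:
  assumes n: "0 < n" and Z: "\<forall>x<2*n. M (Lof n + x) = 0" and ab: "ba < n" "bb < n"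
  shows "Out n ba bb bt br (M(ba + Lof n := bt, bb + (Lof n + n) := br))"
  unfolding Out_def
proof (intro allI impI conjI)
  fix i assume i: "i < n"
  have o1: "out1 n i = Lof n + i" "out2 n i = Lof n + (n + i)" unfolding out1_def out2_def Lof_def by simp_all
  have z1: "M (Lof n + i) = 0" "M (Lof n + (n + i)) = 0" using Z i by auto
  show "(M(ba + Lof n := bt, bb + (Lof n + n) := br)) (out1 n i) = (if i = ba then bt else 0)"
    unfolding o1 using z1 i ab by auto
  show "(M(ba + Lof n := bt, bb + (Lof n + n) := br)) (out2 n i) = (if i = bb then br else 0)"
    unfolding o1 using z1 i ab by auto
qed

lemma p7_f2: assumes n: "0 < n" and ab: "ba < n" "bb < n"
  shows "ht (F7 n ba bb bt br) (block p7f2) (Out n ba bb bt br) 13"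
  unfolding p7f2_def
proof (rule ht_block')
  fix m assume H: "F7 n ba bb bt br m"
  then have Z: "\<forall>x<2*n. m (Lof n + x) = 0" and Q: "m (Qb n) = real ba" "m (Suc (Qb n)) = bt" "m (Suc (Suc (Qb n))) = real bb"
    "m (Suc (Suc (Suc (Qb n)))) = br" and r: "m 0 = real (Aof n)" "m 1 = real n" "m 3 = real (Qb n)" "m 2 = real (Lof n)"
    by (auto simp: F7_def Q7_def)
  show "\<exists>m'. sl [Load 4 3, Add 4 4 2, Const 5 1, Add 3 3 5, Load 0 3, Add 3 3 5, Add 2 2 1, Load 1 3, Add 1 1 2, Add 3 3 5, Load 3 3, Store 0 4, Store 3 1] m = Some m' \<and> Out n ba bb bt br m'"
    using n r Q apply (simp del: of_nat_add of_nat_mult of_nat_Suc add: rf)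
    apply (rule out_fin[OF n _ ab])
    using Z n Lof_ge6[OF n] by simp
qed simp

definition "P7 = Seq (block p7a) (Seq (block p7z) (Seq (While 2 3 (block [Store 5 2, Add 2 2 4])) (Seq (block p7f1) (block p7f2))))"

definition "Post7 n k w w0 v0 theta m \<longleftrightarrow> (\<exists>ba bb bt br. Fin n k w w0 v0 theta ba bb bt br \<and> Out n ba bb bt br m)"

lemma P7_fixed: assumes n: "0 < n" and F: "Fin n k w w0 v0 theta ba bb bt br"
  shows "ht (S7 n ba bb bt br) P7 (Post7 n k w w0 v0 theta) (9 + (10 + ((2 * n * (2 + 2) + 2) + (16 + 13))))"
proof -
  have ab: "ba < n" "bb < n" using F by (auto simp: Fin_def)
  have "ht (S7 n ba bb bt br) P7 (Out n ba bb bt br) (9 + (10 + ((2 * n * (2 + 2) + 2) + (16 + 13))))"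
    unfolding P7_def
    using ht_seq[OF p7_a[OF n] ht_seq[OF p7_z[OF n] ht_seq[OF p7_zloop[OF n] ht_seq[OF p7_f1[OF n] p7_f2[OF n ab]]]]] .
  then show ?thesis by (rule ht_conseq) (use F in \<open>auto simp: Post7_def\<close>)
qed

lemma P7_ht: assumes n: "0 < n"
  shows "ht (I6 n k w w0 v0 theta n) P7 (Post7 n k w w0 v0 theta) (9 + (10 + ((2 * n * (2 + 2) + 2) + (16 + 13))))"
proof -
  have "ht (\<lambda>m. \<exists>ba bb bt br. Fin n k w w0 v0 theta ba bb bt br \<and> S7 n ba bb bt br m) P7 (Post7 n k w w0 v0 theta)
      (9 + (10 + ((2 * n * (2 + 2) + 2) + (16 + 13))))"
    by (intro ht_ex ht_pre_conj P7_fixed[OF n])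
  then show ?thesis by (rule ht_conseq) (use I6_S7 in auto)
qed


lemma sl_append: "sl (xs @ ys) m = (case sl xs m of None \<Rightarrow> None | Some m' \<Rightarrow> sl ys m')"
  by (induction xs arbitrary: m) (auto split: option.splits)

lemma rf_mult_num: "real a * numeral x = real (a * numeral x)" by simp

definition "b0 = [Add 0 0 0, Add 0 0 0, Add 0 0 0, Mul 0 0 0, Mul 1 1 0, Store 1 0, Const 1 1]"

definition "B0 n k w w0 v0 theta m \<longleftrightarrow> m 0 = real (Aof n) \<and> m 1 = 1 \<and> (\<forall>x. 2 \<le> x \<longrightarrow> x \<noteq> Aof n \<longrightarrow> m x = init_mem n k w w0 v0 theta x) \<and>
   m (Aof n) = k * real (Aof n)"

lemma Aof_sq: "(n + n + (n + n) + (n + n + (n + n))) * (n + n + (n + n) + (n + n + (n + n))) = Aof n"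
  unfolding Aof_def by (simp add: algebra_simps)

lemma b0_ht: "ht (\<lambda>m. m = init_mem n k w w0 v0 theta) (block b0) (B0 n k w w0 v0 theta) 7"
  unfolding b0_def
proof (rule ht_block')
  fix m assume m: "m = init_mem n k w w0 v0 theta"
  have m0: "m 0 = real n" and m1: "m 1 = k" unfolding m init_mem_def by simp_all
  show "\<exists>m'. sl [Add 0 0 0, Add 0 0 0, Add 0 0 0, Mul 0 0 0, Mul 1 1 0, Store 1 0, Const 1 1] m = Some m' \<and> B0 n k w w0 v0 theta m'"
  proof (cases "n = 0")
    case True
    then show ?thesis using m0 m1 by (simp del: of_nat_add of_nat_mult of_nat_Suc add: rf B0_def Aof_def m)
  next
    case False
    then have A: "64 \<le> Aof n" using Aof_ge by auto
    have ne: "(Aof n = 0) = False" "(Aof n = 1) = False" "(0 = Aof n) = False" "(1 = Aof n) = False" using A by auto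
    have X: "\<forall>x. 2 \<le> x \<longrightarrow> x \<noteq> Aof n \<longrightarrow> (m(0 := a0, 1 := a1, Aof n := a2, 1 := a3)) x = init_mem n k w w0 v0 theta x"
      for a0 a1 a2 a3 unfolding m by auto
    show ?thesis using m0 m1 A X by (simp del: of_nat_add of_nat_mult of_nat_Suc add: rf B0_def Aof_sq ne)
  qed
qed simp

definition "save (a::nat) = [Const 1 (int a), Add 1 1 0, Store a 1]"
definition "bsave = concat (map save [2..<32])"

lemma sl_save: assumes "m 0 = real A" "2 \<le> a" "a < 32" "32 \<le> A"
  shows "sl (save a) m = Some (m(1 := real (a + A), a + A := m a))"
  using assms by (simp del: of_nat_add of_nat_mult of_nat_Suc add: rf save_def)

definition "SV A mb j m \<longleftrightarrow> m 0 = real A \<and> (\<forall>x. 2 \<le> x \<longrightarrow> x < 32 \<longrightarrow> m x = mb x) \<and>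
   (\<forall>x. 32 \<le> x \<longrightarrow> \<not> (A + 2 \<le> x \<and> x < A + j) \<longrightarrow> m x = mb x) \<and> (\<forall>a. 2 \<le> a \<longrightarrow> a < j \<longrightarrow> m (A + a) = mb a)"

lemma sl_bsave_aux: assumes "SV A mb 2 m" "32 \<le> A" "2 \<le> j" "j \<le> 32"
  shows "\<exists>m'. sl (concat (map save [2..<j])) m = Some m' \<and> SV A mb j m'"
  using assms(3,4)
proof (induction j rule: dec_induct)
  case base then show ?case using assms(1) by simp
next
  case (step j)
  then obtain m' where m': "sl (concat (map save [2..<j])) m = Some m'" "SV A mb j m'" by auto
  have e: "[2..<Suc j] = [2..<j] @ [j]" using step by simp
  have S: "sl (save j) m' = Some (m'(1 := real (j + A), j + A := m' j))"
    by (rule sl_save) (use m'(2) step assms(2) in \<open>auto simp: SV_def\<close>)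
  have "SV A mb (Suc j) (m'(1 := real (j + A), j + A := m' j))"
    using m'(2) step assms(2) unfolding SV_def
    by (auto simp: less_Suc_eq add.commute)
  then show ?case using m' S e by (simp add: sl_append)
qed

lemma bsave_ht: assumes n: "0 < n"
  shows "ht (\<lambda>m. B0 n k w w0 v0 theta m \<and> \<not> m 0 < m 1) (block bsave)
    (\<lambda>m. SV (Aof n) (\<lambda>x. if x = Aof n then k * real (Aof n) else init_mem n k w w0 v0 theta x) 32 m) (length bsave)"
proof (rule ht_block')
  fix m assume H: "B0 n k w w0 v0 theta m \<and> \<not> m 0 < m 1"
  have A: "64 \<le> Aof n" using Aof_ge[OF n] .
  have S2: "SV (Aof n) m 2 m" unfolding SV_def using H by (auto simp: B0_def)
  obtain m' where m': "sl (concat (map save [2..<32])) m = Some m'" "SV (Aof n) m 32 m'"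
    using sl_bsave_aux[OF S2, of 32] A by auto
  have "SV (Aof n) (\<lambda>x. if x = Aof n then k * real (Aof n) else init_mem n k w w0 v0 theta x) 32 m'"
    using m'(2) H A unfolding SV_def B0_def by auto
  then show "\<exists>m'. sl bsave m = Some m' \<and> SV (Aof n) (\<lambda>x. if x = Aof n then k * real (Aof n) else init_mem n k w w0 v0 theta x) 32 m'"
    using m'(1) unfolding bsave_def by blast
qed simp


definition "D0 n k w w0 v0 theta m \<longleftrightarrow> m 0 = real (Aof n) \<and> (\<forall>x. 32 \<le> x \<longrightarrow> x < Aof n \<longrightarrow> m x = init_mem n k w w0 v0 theta x) \<and>
   m (Aof n) = k * real (Aof n) \<and> (\<forall>a. 2 \<le> a \<longrightarrow> a < 32 \<longrightarrow> m (Aof n + a) = init_mem n k w w0 v0 theta a)"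

lemma D0_reg[simp]: "0 < n \<Longrightarrow> 0 < r \<Longrightarrow> r < 32 \<Longrightarrow> D0 n k w w0 v0 theta (m(r := v)) = D0 n k w w0 v0 theta m"
proof -
  assume a: "0 < n" "0 < r" "r < 32"
  have A: "64 \<le> Aof n" using Aof_ge[OF a(1)] .
  have ne: "Aof n + x \<noteq> r" "Aof n \<noteq> r" "0 \<noteq> r" for x :: nat using A a by auto
  have ne2: "32 \<le> x \<Longrightarrow> x \<noteq> r" for x :: nat using a by auto
  show ?thesis unfolding D0_def using ne ne2 by auto
qed

lemma SV_D0: "0 < n \<Longrightarrow> SV (Aof n) (\<lambda>x. if x = Aof n then k * real (Aof n) else init_mem n k w w0 v0 theta x) 32 m \<Longrightarrow> D0 n k w w0 v0 theta m"
proof -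
  assume n: "0 < n" and S: "SV (Aof n) (\<lambda>x. if x = Aof n then k * real (Aof n) else init_mem n k w w0 v0 theta x) 32 m"
  have A: "64 \<le> Aof n" using Aof_ge[OF n] .
  show ?thesis unfolding D0_def
  proof (intro conjI allI impI)
    show "m 0 = real (Aof n)" using S by (simp add: SV_def)
  next
    fix x :: nat assume "32 \<le> x" "x < Aof n" then show "m x = init_mem n k w w0 v0 theta x" using S by (auto simp: SV_def)
  next
    show "m (Aof n) = k * real (Aof n)" using S A by (auto simp: SV_def)
  next
    fix a :: nat assume "2 \<le> a" "a < 32" then show "m (Aof n + a) = init_mem n k w w0 v0 theta a" using S A by (auto simp: SV_def)
  qed
qed

definition "brec0 = [Const 2 0, Const 3 0, Const 4 1, Const 5 64]"
definition "brecb = [Add 2 2 4, Mul 3 2 2, Mul 3 3 5]"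

definition "RC n k w w0 v0 theta i m \<longleftrightarrow> D0 n k w w0 v0 theta m \<and> m 2 = real i \<and> m 3 = real (64 * i * i) \<and> m 4 = 1 \<and> m 5 = 64"

lemma sq_less: "((i::nat) * i < n * n) = (i < n)"
  by (metis mult_less_mono1 mult_strict_mono' not_less_eq_eq mult_le_mono le0 not_le mult_less_cancel2 zero_less_iff_neq_zero)

lemma sq_less_real: "(real i * real i < real n * real n) = (i < n)"
  by (metis of_nat_mult of_nat_less_iff sq_less)

lemma rec0_ht: "0 < n \<Longrightarrow> ht (D0 n k w w0 v0 theta) (block brec0) (RC n k w w0 v0 theta 0) 4"
  unfolding brec0_def by (rule ht_block') (auto simp: RC_def)

lemma recb_ht: "0 < n \<Longrightarrow> ht (\<lambda>m. RC n k w w0 v0 theta i m \<and> m 3 < m 0) (block brecb) (RC n k w w0 v0 theta (Suc i)) 3"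
  unfolding brecb_def
  by (rule ht_block') (auto simp del: of_nat_add of_nat_mult of_nat_Suc simp add: rf rf_mult_num RC_def algebra_simps)

lemma recloop_ht: "0 < n \<Longrightarrow> ht (RC n k w w0 v0 theta 0) (While 3 0 (block brecb)) (RC n k w w0 v0 theta n) (n * (3 + 2) + 2)"
  apply (rule ht_for)
   apply (rule recb_ht; simp)
  apply (simp add: RC_def D0_def Aof_def mult.assoc sq_less_real)
  done

definition "b2 = [Const 6 0, Add 1 2 6, Load 3 0, Div 3 3 0, Const 4 1, Add 4 0 4, Store 3 4, Store 1 0]"

definition "E0 n k w w0 v0 theta m \<longleftrightarrow> m 0 = real (Aof n) \<and> m 1 = real n \<and> (\<forall>x. 32 \<le> x \<longrightarrow> x < Aof n \<longrightarrow> m x = init_mem n k w w0 v0 theta x) \<and>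
   (\<forall>a<32. m (Aof n + a) = init_mem n k w w0 v0 theta a)"

lemma b2_ht: assumes n: "0 < n" shows "ht (RC n k w w0 v0 theta n) (block b2) (E0 n k w w0 v0 theta) 8"
  unfolding b2_def
proof (rule ht_block')
  fix m assume H: "RC n k w w0 v0 theta n m"
  have A: "64 \<le> Aof n" using Aof_ge[OF n] .
  then have A0: "real (Aof n) \<noteq> 0" by simp
  have D: "D0 n k w w0 v0 theta m" and r: "m 2 = real n" using H by (auto simp: RC_def)
  let ?M = "m(6 := 0, 1 := real n, 3 := k, 4 := real (Suc (Aof n)), Suc (Aof n) := k, Aof n := real n)"
  have E: "E0 n k w w0 v0 theta ?M"
    unfolding E0_def
  proof (intro conjI allI impI)
    show "?M 0 = real (Aof n)" using D A by (simp add: D0_def)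
    show "?M 1 = real n" using A by simp
  next
    fix x assume x: "32 \<le> x" "x < Aof n"
    then show "?M x = init_mem n k w w0 v0 theta x" using D by (simp add: D0_def)
  next
    fix a assume a: "a < (32::nat)"
    show "?M (Aof n + a) = init_mem n k w w0 v0 theta a"
    proof (cases "a = 0 \<or> a = 1")
      case True then show ?thesis by (auto simp: init_mem_def)
    next
      case False then show ?thesis using D a n by (simp add: D0_def)
    qed
  qed
  have c: "k * real (Aof n) / real (Aof n) = k" using A0 by simp
  show "\<exists>m'. sl [Const 6 0, Add 1 2 6, Load 3 0, Div 3 3 0, Const 4 1, Add 4 0 4, Store 3 4, Store 1 0] m = Some m' \<and> E0 n k w w0 v0 theta m'"
    using D r n A0 E c by (simp del: of_nat_add of_nat_mult of_nat_Suc add: rf D0_def)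
qed simp

definition "bcopy0 = [Mul 3 1 1, Add 3 3 1, Add 3 3 1, Add 3 3 1, Const 4 2, Add 3 3 4, Const 2 32, Const 4 1]"
definition "bcopyb = [Load 6 2, Add 5 0 2, Store 6 5, Add 2 2 4]"

definition "CP n k w w0 v0 theta t m \<longleftrightarrow> m 0 = real (Aof n) \<and> m 1 = real n \<and> m 2 = real (32 + t) \<and> m 3 = real (Lof n) \<and> m 4 = 1 \<and>
   (\<forall>x. 32 \<le> x \<longrightarrow> x < Aof n \<longrightarrow> m x = init_mem n k w w0 v0 theta x) \<and> (\<forall>a < 32 + t. m (Aof n + a) = init_mem n k w w0 v0 theta a)"

lemma copy0_ht: assumes n: "0 < n" shows "ht (E0 n k w w0 v0 theta) (block bcopy0) (CP n k w w0 v0 theta 0) 8"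
  unfolding bcopy0_def
proof (rule ht_block')
  fix m assume H: "E0 n k w w0 v0 theta m"
  have A: "64 \<le> Aof n" using Aof_ge[OF n] .
  have ne: "Aof n + x \<noteq> r" if "r < 32" for x r :: nat using A that by auto
  have ne2: "32 \<le> x \<Longrightarrow> x \<noteq> r" if "r < 32" for x r :: nat using that by auto
  show "\<exists>m'. sl [Mul 3 1 1, Add 3 3 1, Add 3 3 1, Add 3 3 1, Const 4 2, Add 3 3 4, Const 2 32, Const 4 1] m = Some m' \<and> CP n k w w0 v0 theta 0 m'"
    using H n A ne ne2 by (simp del: of_nat_add of_nat_mult of_nat_Suc add: rf E0_def CP_def Lof_def)
qed simp

lemma copyb_ht: assumes n: "0 < n" and t: "t < Lof n - 32"
  shows "ht (\<lambda>m. CP n k w w0 v0 theta t m \<and> m 2 < m 3) (block bcopyb) (CP n k w w0 v0 theta (Suc t)) 4"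
  unfolding bcopyb_def
proof (rule ht_block')
  fix m assume H: "CP n k w w0 v0 theta t m \<and> m 2 < m 3"
  have A: "64 \<le> Aof n" using Aof_ge[OF n] .
  have L: "Lof n + 2 * n \<le> Aof n" using Lof_le[OF n] .
  have tl: "32 + t < Lof n" using t by simp
  have X: "\<forall>x. 32 \<le> x \<longrightarrow> x < Aof n \<longrightarrow> m x = init_mem n k w w0 v0 theta x" and Y: "\<forall>a < 32 + t. m (Aof n + a) = init_mem n k w w0 v0 theta a"
    using H by (auto simp: CP_def)
  have g: "m (32 + t) = init_mem n k w w0 v0 theta (32 + t)" using X tl L by auto
  let ?M = "m(6 := init_mem n k w w0 v0 theta (32 + t), 5 := real (Aof n + (32 + t)), Aof n + (32 + t) := init_mem n k w w0 v0 theta (32 + t),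
     2 := real (Suc (32 + t)))"
  have C: "CP n k w w0 v0 theta (Suc t) ?M"
    unfolding CP_def
  proof (intro conjI allI impI)
    show "?M 0 = real (Aof n)" "?M 1 = real n" "?M 3 = real (Lof n)" "?M 4 = 1" using H A by (auto simp: CP_def)
    show "?M 2 = real (32 + Suc t)" by simp
  next
    fix x assume x: "32 \<le> x" "x < Aof n"
    then show "?M x = init_mem n k w w0 v0 theta x" using X by auto
  next
    fix a assume a: "a < 32 + Suc t"
    show "?M (Aof n + a) = init_mem n k w w0 v0 theta a"
      using Y a A by (cases "a = 32 + t") auto
  qed
  show "\<exists>m'. sl [Load 6 2, Add 5 0 2, Store 6 5, Add 2 2 4] m = Some m' \<and> CP n k w w0 v0 theta (Suc t) m'"
    using H n A g C by (simp del: of_nat_add of_nat_mult of_nat_Suc add: rf CP_def)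
qed simp

lemma copyloop_ht: assumes n: "0 < n"
  shows "ht (CP n k w w0 v0 theta 0) (While 2 3 (block bcopyb)) (CP n k w w0 v0 theta (Lof n - 32)) ((Lof n - 32) * (4 + 2) + 2)"
  apply (rule ht_for)
   apply (rule copyb_ht[OF n]; simp)
  apply (auto simp: CP_def)
  done

lemma CP_BI: assumes n: "0 < n" shows "CP n k w w0 v0 theta (Lof n - 32) m \<Longrightarrow> BI n k w w0 v0 theta m"
  unfolding CP_def BI_def Base_def by auto

definition "REST = Seq (block bsave) (Seq (block brec0) (Seq (While 3 0 (block brecb)) (Seq (block b2) (Seq (block bcopy0) (While 2 3 (block bcopyb))))))"

lemma REST_ht: assumes n: "0 < n"
  shows "ht (\<lambda>m. B0 n k w w0 v0 theta m \<and> \<not> m 0 < m 1) REST (BI n k w w0 v0 theta)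
    (length bsave + (4 + ((n * (3 + 2) + 2) + (8 + (8 + ((Lof n - 32) * (4 + 2) + 2))))))"
proof -
  have s: "ht (\<lambda>m. B0 n k w w0 v0 theta m \<and> \<not> m 0 < m 1) (block bsave) (D0 n k w w0 v0 theta) (length bsave)"
    by (rule ht_conseq[OF bsave_ht[OF n]]) (use SV_D0[OF n] in auto)
  have c: "ht (CP n k w w0 v0 theta 0) (While 2 3 (block bcopyb)) (BI n k w w0 v0 theta) ((Lof n - 32) * (4 + 2) + 2)"
    by (rule ht_conseq[OF copyloop_ht[OF n]]) (use CP_BI[OF n] in auto)
  show ?thesis unfolding REST_def
    using ht_seq[OF s ht_seq[OF rec0_ht[OF n] ht_seq[OF recloop_ht[OF n] ht_seq[OF b2_ht[OF n] ht_seq[OF copy0_ht[OF n] c]]]]] .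
qed


section \<open>Connecting computed quantities to the mathematical coefficients\<close>

lemma Delta_eq: "Wc n w \<Longrightarrow> i < n \<Longrightarrow> j < n \<Longrightarrow> Delta n w i j = gj n w n i (n + j)"
  using Delta_gj[of n w] by simp

lemma sv_eq: "Wc n w \<Longrightarrow> j < n \<Longrightarrow> sv n w j = Sv n w j"
  unfolding sv_def Sv_def by (intro sum.cong refl) (simp add: Delta_eq)

lemma pv_eq: "Wc n w \<Longrightarrow> i < n \<Longrightarrow> pv n w w0 v0 i = Pv n w w0 v0 i"
  unfolding pv_def Pv_def by (intro sum.cong refl) (simp add: Delta_eq mult.assoc)

lemma g1_eq: fixes w0 v0 theta :: "nat \<Rightarrow> real" shows "g1 w0 v0 theta a = Gv w0 v0 theta a"
  unfolding g1_def Gv_def by (simp add: add.commute)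

lemma zv_eq: "Wc n w \<Longrightarrow> a < n \<Longrightarrow> zv n w w0 a = Zv n w w0 a"
  unfolding zv_def Zv_def by (intro sum.cong refl) (simp add: Delta_eq sv_eq)

lemma al_eq: "Wc n w \<Longrightarrow> a < n \<Longrightarrow> al n w w0 v0 theta a = ALv n w w0 v0 theta a"
  unfolding al_def ALv_def by (simp add: g1_eq zv_eq)

lemma be_eq: "Wc n w \<Longrightarrow> b < n \<Longrightarrow> be n w w0 v0 theta b = BEv n w w0 v0 theta b"
  unfolding be_def BEv_def by (simp add: sv_eq pv_eq algebra_simps)

lemma cc_eq: "Wc n w \<Longrightarrow> b < n \<Longrightarrow> cc n w w0 theta b = CCv n w w0 theta b"
  unfolding cc_def CCv_def by (simp add: sv_eq)

lemma ga_eq: "Wc n w \<Longrightarrow> a < n \<Longrightarrow> b < n \<Longrightarrow> ga n w w0 v0 theta a b = GAv n w w0 v0 theta a b"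
  unfolding ga_def GAv_def by (simp add: cc_eq Delta_eq g1_eq)

lemma Post7_optimal:
  assumes n: "0 < n" and W: "Wc n w" and P: "Post7 n k w w0 v0 theta m"
  shows "optimal n w w0 v0 theta k (\<lambda>i. m (out1 n i)) (\<lambda>i. m (out2 n i))"
proof -
  obtain ba bb bt br where F: "Fin n k w w0 v0 theta ba bb bt br" and O: "Out n ba bb bt br m"
    using P unfolding Post7_def by blast
  have ab: "ba < n" "bb < n" and t0: "0 \<le> bt" and r0: "0 \<le> br" and tr: "bt + br \<le> k"
    and V0: "0 \<le> phi n w w0 v0 theta ba bb bt br"
    and C: "\<forall>a'<n. \<forall>b'<n. cand_ok n w w0 v0 theta k a' b' (phi n w w0 v0 theta ba bb bt br)"
    using F unfolding Fin_def by auto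
  let ?V = "phi n w w0 v0 theta ba bb bt br"
  show ?thesis
  proof (rule optimal_from_search[OF n ab t0 r0 tr, where V = ?V])
    show "?V = al n w w0 v0 theta ba * bt + be n w w0 v0 theta bb * br + ga n w w0 v0 theta ba bb * bt * br"
      using ab W by (simp add: phi_def al_eq be_eq ga_eq)
  next
    show "\<forall>a'<n. \<forall>b'<n. 0 \<le> ?V \<and> al n w w0 v0 theta a' * k \<le> ?V \<and> be n w w0 v0 theta b' * k \<le> ?V \<and>
      (0 < ga n w w0 v0 theta a' b' \<longrightarrow>
       0 < (al n w w0 v0 theta a' - be n w w0 v0 theta b' + ga n w w0 v0 theta a' b' * k) / (2 * ga n w w0 v0 theta a' b') \<longrightarrow>
       (al n w w0 v0 theta a' - be n w w0 v0 theta b' + ga n w w0 v0 theta a' b' * k) / (2 * ga n w w0 v0 theta a' b') < k \<longrightarrow>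
       al n w w0 v0 theta a' * ((al n w w0 v0 theta a' - be n w w0 v0 theta b' + ga n w w0 v0 theta a' b' * k) / (2 * ga n w w0 v0 theta a' b')) +
       be n w w0 v0 theta b' * (k - (al n w w0 v0 theta a' - be n w w0 v0 theta b' + ga n w w0 v0 theta a' b' * k) / (2 * ga n w w0 v0 theta a' b')) +
       ga n w w0 v0 theta a' b' * ((al n w w0 v0 theta a' - be n w w0 v0 theta b' + ga n w w0 v0 theta a' b' * k) / (2 * ga n w w0 v0 theta a' b')) *
       (k - (al n w w0 v0 theta a' - be n w w0 v0 theta b' + ga n w w0 v0 theta a' b' * k) / (2 * ga n w w0 v0 theta a' b')) \<le> ?V)"
      using C V0 W by (simp add: al_eq be_eq ga_eq cand_ok_def TS_def VAL_def)
  next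
    show "\<forall>i<n. m (out1 n i) = (if i = ba then bt else 0)" using O unfolding Out_def by auto
    show "\<forall>i<n. m (out2 n i) = (if i = bb then br else 0)" using O unfolding Out_def by auto
  qed
qed


definition "ALLP = Seq REST (Seq P1 (Seq P2 (Seq P3 (Seq P4 (Seq P5 (Seq P6 P7))))))"
definition "MAIN = Seq (block b0) (IfLess 0 1 Skip ALLP)"

definition "Trest n = (length bsave + (4 + ((n * (3 + 2) + 2) + (8 + (8 + ((Lof n - 32) * (4 + 2) + 2))))))
  + ((10 + (n * (n * 11 + 15 + 2) + 2))
  + ((4 + (n * (T2body n + 2) + 2))
  + ((8 + (n * ((3 + ((n * (5 + 2) + 2) + 4)) + 2) + 2))
  + ((11 + (n * ((4 + ((n * (11 + 2) + 2) + 4)) + 2) + 2))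
  + ((18 + (n * ((3 + ((n * (11 + 2) + 2) + 33)) + 2) + 2))
  + ((11 + (n * ((6 + (T6in n + 2)) + 2) + 2))
  + (9 + (10 + ((2 * n * (2 + 2) + 2) + (16 + 13))))))))))"

lemma ALLP_ht: assumes n: "0 < n" and W: "Wc n w" and k0: "0 \<le> k"
  shows "ht (\<lambda>m. B0 n k w w0 v0 theta m \<and> \<not> m 0 < m 1) ALLP (Post7 n k w w0 v0 theta) (Trest n)"
  unfolding ALLP_def Trest_def
  using ht_seq[OF REST_ht[OF n] ht_seq[OF P1_ht[OF n] ht_seq[OF P2_ht[OF n W] ht_seq[OF P3_ht[OF n] ht_seq[OF P4_ht[OF n]
    ht_seq[OF P5_ht[OF n] ht_seq[OF P6_ht[OF n k0] P7_ht[OF n]]]]]]]] .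

lemma ht_vac: "(\<And>m. \<not> P m) \<Longrightarrow> ht P c Q T"
  unfolding ht_def by blast

lemma optimal_0: "0 \<le> k \<Longrightarrow> optimal 0 w w0 v0 theta k x1 x2"
  unfolding optimal_def feasible_def objective_def by simp

lemma Aof_0: "(Aof n = 0) = (n = 0)" unfolding Aof_def by simp

lemma MAIN_ht: assumes W: "Wc n w" and k0: "0 \<le> k"
  shows "ht (\<lambda>m. m = init_mem n k w w0 v0 theta) MAIN (\<lambda>m. optimal n w w0 v0 theta k (\<lambda>i. m (out1 n i)) (\<lambda>i. m (out2 n i)))
     (7 + (max 0 (Trest n) + 2))"
proof -
  have t: "ht (\<lambda>m. B0 n k w w0 v0 theta m \<and> m 0 < m 1) Skip (\<lambda>m. optimal n w w0 v0 theta k (\<lambda>i. m (out1 n i)) (\<lambda>i. m (out2 n i))) 0"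
  proof (rule ht_conseq[OF ht_skip])
    fix m assume "B0 n k w w0 v0 theta m \<and> m 0 < m 1"
    then have "real (Aof n) < 1" by (simp add: B0_def)
    then have "n = 0" using Aof_0[of n] by simp
    then show "optimal n w w0 v0 theta k (\<lambda>i. m (out1 n i)) (\<lambda>i. m (out2 n i))" using optimal_0[OF k0] by simp
  qed simp_all
  have f: "ht (\<lambda>m. B0 n k w w0 v0 theta m \<and> \<not> m 0 < m 1) ALLP (\<lambda>m. optimal n w w0 v0 theta k (\<lambda>i. m (out1 n i)) (\<lambda>i. m (out2 n i))) (Trest n)"
  proof (cases "n = 0")
    case True
    show ?thesis by (rule ht_vac) (simp add: B0_def True Aof_def)
  next
    case False
    then have n: "0 < n" by simp
    show ?thesis by (rule ht_conseq[OF ALLP_ht[OF n W k0]]) (use Post7_optimal[OF n W] in auto)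
  qed
  show ?thesis unfolding MAIN_def using ht_seq[OF b0_ht ht_if[OF t f]] .
qed

lemma length_bsave: "length bsave = 90"
  by (simp add: bsave_def save_def)

lemma cube_bounds: "(1::nat) \<le> (n+1)^3" "n \<le> (n+1)^3" "n * n \<le> (n+1)^3" "n * n * n \<le> (n+1)^3"
proof -
  have a: "n * n * n \<le> (n+1)*(n+1)*(n+1)" by (intro mult_mono) auto
  have b: "n * n \<le> (n+1)*(n+1)*(n+1)" by (metis Suc_eq_plus1 le_add2 mult_le_mono order_trans mult_le_mono2 le_add1 mult.commute nat_mult_1 One_nat_def le_refl mult_le_mono1 Suc_le_eq zero_less_Suc mult_Suc_right trans_le_add1)
  have c: "n \<le> (n+1)*(n+1)*(n+1)" using b by (metis le_add2 le_square order_trans mult.commute)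
  have d: "1 \<le> (n+1)*(n+1)*(n+1)" by simp
  show "(1::nat) \<le> (n+1)^3" "n \<le> (n+1)^3" "n * n \<le> (n+1)^3" "n * n * n \<le> (n+1)^3"
    using a b c d by (simp_all add: power3_eq_cube)
qed

lemma Tmain_bound: "7 + (max 0 (Trest n) + 2) \<le> 100000 * (n+1)^3"
proof -
  have L: "Lof n - 32 \<le> 2 + 3 * n + n * n" unfolding Lof_def by simp
  have e: "7 + (max 0 (Trest n) + 2) \<le> 9 + (90 + (4 + ((n * 5 + 2) + (8 + (8 + ((2 + 3 * n + n * n) * 6 + 2))))))
  + ((10 + (n * (n * 11 + 15 + 2) + 2))
  + ((4 + (n * (T2body n + 2) + 2))
  + ((8 + (n * ((3 + ((n * (5 + 2) + 2) + 4)) + 2) + 2))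
  + ((11 + (n * ((4 + ((n * (11 + 2) + 2) + 4)) + 2) + 2))
  + ((18 + (n * ((3 + ((n * (11 + 2) + 2) + 33)) + 2) + 2))
  + ((11 + (n * ((6 + (T6in n + 2)) + 2) + 2))
  + (9 + (10 + ((2 * n * (2 + 2) + 2) + (16 + 13))))))))))"
    unfolding Trest_def length_bsave using L by simp
  also have "\<dots> = 20 * (n * n * n) + 136 * (n * n) + 136 * n + 259"
    unfolding T2body_def T6in_def by (simp add: algebra_simps)
  also have "\<dots> \<le> 100000 * (n+1)^3" using cube_bounds[of n] by linarith
  finally show ?thesis .
qed

theorem mainTheorem3:
  shows "\<exists>(P::instr list) (c::nat) (d::nat).
    \<forall>(n::nat) (k::real) (w::nat \<Rightarrow> nat \<Rightarrow> real) (w0::nat \<Rightarrow> real) (v0::nat \<Rightarrow> real) (theta::nat \<Rightarrow> real).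
      (\<forall>i<n. (\<Sum>j<n. \<bar>w i j\<bar>) < 1) \<and> 0 \<le> k \<longrightarrow>
      (\<exists>m. halts_within P (init_mem n k w w0 v0 theta) (c * (n + 1) ^ d) m
           \<and> optimal n w w0 v0 theta k (\<lambda>i. m (out1 n i)) (\<lambda>i. m (out2 n i)))"
proof (rule exI[of _ "prog MAIN"], rule exI[of _ 100000], rule exI[of _ 3], intro allI impI)
  fix n :: nat and k :: real and w :: "nat \<Rightarrow> nat \<Rightarrow> real" and w0 v0 theta :: "nat \<Rightarrow> real"
  assume H: "(\<forall>i<n. (\<Sum>j<n. \<bar>w i j\<bar>) < 1) \<and> 0 \<le> k"
  have h: "ht (\<lambda>m. m = init_mem n k w w0 v0 theta) MAIN (\<lambda>m. optimal n w w0 v0 theta k (\<lambda>i. m (out1 n i)) (\<lambda>i. m (out2 n i)))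
     (100000 * (n + 1) ^ 3)"
  proof -
    have W: "Wc n w" and k0: "0 \<le> k" using H by auto
    show ?thesis by (rule ht_conseq[OF MAIN_ht[OF W k0]]) (use Tmain_bound[of n] in auto)
  qed
  show "\<exists>m. halts_within (prog MAIN) (init_mem n k w w0 v0 theta) (100000 * (n + 1) ^ 3) m
           \<and> optimal n w w0 v0 theta k (\<lambda>i. m (out1 n i)) (\<lambda>i. m (out2 n i))"
    using ht_halts[OF h] by simp
qed


end
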